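(* Let $H$ be a weak Hopf algebra, let $E_h=[h_1][S(h_2)]\in{H_{par}^w}$ for $h\in H$, and let ${A_{par}^w}$ be the subalgebra of ${H_{par}^w}$ generated by $\{E_h: h\in H\}$. Then the linear map $H\otimes{A_{par}^w}\to{A_{par}^w}$, $h\otimes a\mapsto h\cdot a=[h_1]\,a\,[S(h_2)]$, is well defined and makes ${A_{par}^w}$ a symmetric partial $H$-module algebra.
   Context: All algebras are associative and unital over a field $\Bbbk$; Sweedler notation $\Delta(h)=h_1\otimes h_2$. A weak Hopf algebra is $(H,m,u,\Delta,\varepsilon,S)$ with $H$ an algebra, $(H,\Delta,\varepsilon)$ a coalgebra, and for all $g,h,k$: $\Delta(kh)=\Delta(k)\Delta(h)$; $\varepsilon(kh_1)\varepsilon(h_2g)=\varepsilon(khg)=\varepsilon(kh_2)\varepsilon(h_1g)$; $(1\otimes\Delta(1))(\Delta(1)\otimes1)=\Delta^2(1)=(\Delta(1)\otimes1)(1\otimes\Delta(1))$; $h_1S(h_2)=\varepsilon(1_1h)1_2$; $S(h_1)h_2=1_1\varepsilon(h1_2)$; $S(h)=S(h_1)h_2S(h_3)$, where $\Delta(1)=1_1\otimes1_2$. ${H_{par}^w}=T(H)/I$, where $T(H)$ is the tensor algebra of the vector space $H$ and $I$ is the ideal generated by, for all $h,k\in H$: $1_H-1_{T(H)}$; $h\otimes k_1\otimes S(k_2)-hk_1\otimes S(k_2)$; $h\otimes S(k_1)\otimes k_2-hS(k_1)\otimes k_2$; $h_1\otimes S(h_2)\otimes k-h_1\otimes S(h_2)k$;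 $S(h_1)\otimes h_2\otimes k-S(h_1)\otimes h_2k$; $h-h_1\otimes S(h_2)\otimes h_3$; $[h]$ denotes the class of $h$. A symmetric partial $H$-module algebra is an algebra $A$ with a linear map $h\otimes a\mapsto h\cdot a$ such that for all $h,k\in H$, $a,b\in A$: $h\cdot(ab)=(h_1\cdot a)(h_2\cdot b)$; $1_H\cdot a=a$; $h\cdot(k\cdot a)=(h_1\cdot1_A)((h_2k)\cdot a)$; $h\cdot(k\cdot a)=((h_1k)\cdot a)(h_2\cdot1_A)$. *)

theory Defs
  imports Complex_Main "HOL-Library.Poly_Mapping"
begin

text \<open>An element sum_i x_i (x) y_i of H (x) H is
  represented by the list of pairs (x_i, y_i); two such lists denote the same tensor iff all
  bilinear forms H x H -> k take the same value on them (over a field this is exactly equality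
  in the tensor product). Likewise for three-fold tensors with trilinear forms.\<close>

definition bilinear_form :: "('k::field \<Rightarrow> 'h::ab_group_add \<Rightarrow> 'h) \<Rightarrow> ('h \<Rightarrow> 'h \<Rightarrow> 'k) \<Rightarrow> bool" where
  "bilinear_form sc \<beta> \<longleftrightarrow>
     (\<forall>x x' y. \<beta> (x + x') y = \<beta> x y + \<beta> x' y) \<and>
     (\<forall>x y y'. \<beta> x (y + y') = \<beta> x y + \<beta> x y') \<and>
     (\<forall>c x y. \<beta> (sc c x) y = c * \<beta> x y) \<and>
     (\<forall>c x y. \<beta> x (sc c y) = c * \<beta> x y)"

definition trilinear_form :: "('k::field \<Rightarrow> 'h::ab_group_add \<Rightarrow> 'h) \<Rightarrow> ('h \<Rightarrow> 'h \<Rightarrow> 'h \<Rightarrow> 'k) \<Rightarrow> bool" where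
  "trilinear_form sc \<tau> \<longleftrightarrow>
     (\<forall>x x' y z. \<tau> (x + x') y z = \<tau> x y z + \<tau> x' y z) \<and>
     (\<forall>x y y' z. \<tau> x (y + y') z = \<tau> x y z + \<tau> x y' z) \<and>
     (\<forall>x y z z'. \<tau> x y (z + z') = \<tau> x y z + \<tau> x y z') \<and>
     (\<forall>c x y z. \<tau> (sc c x) y z = c * \<tau> x y z) \<and>
     (\<forall>c x y z. \<tau> x (sc c y) z = c * \<tau> x y z) \<and>
     (\<forall>c x y z. \<tau> x y (sc c z) = c * \<tau> x y z)"

definition teq2 :: "('k::field \<Rightarrow> 'h::ab_group_add \<Rightarrow> 'h) \<Rightarrow> ('h \<times> 'h) list \<Rightarrow> ('h \<times> 'h) list \<Rightarrow> bool" where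
  "teq2 sc t u \<longleftrightarrow> (\<forall>\<beta>. bilinear_form sc \<beta> \<longrightarrow>
     (\<Sum>(x,y)\<leftarrow>t. \<beta> x y) = (\<Sum>(x,y)\<leftarrow>u. \<beta> x y))"

definition teq3 :: "('k::field \<Rightarrow> 'h::ab_group_add \<Rightarrow> 'h) \<Rightarrow> ('h \<times> 'h \<times> 'h) list \<Rightarrow> ('h \<times> 'h \<times> 'h) list \<Rightarrow> bool" where
  "teq3 sc t u \<longleftrightarrow> (\<forall>\<tau>. trilinear_form sc \<tau> \<longrightarrow>
     (\<Sum>(x,y,z)\<leftarrow>t. \<tau> x y z) = (\<Sum>(x,y,z)\<leftarrow>u. \<tau> x y z))"

definition tmul2 :: "('h::times \<times> 'h) list \<Rightarrow> ('h \<times> 'h) list \<Rightarrow> ('h \<times> 'h) list" where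
  "tmul2 t u = concat (map (\<lambda>(a,b). map (\<lambda>(c,d). (a * c, b * d)) u) t)"

definition tmul3 :: "('h::times \<times> 'h \<times> 'h) list \<Rightarrow> ('h \<times> 'h \<times> 'h) list \<Rightarrow> ('h \<times> 'h \<times> 'h) list" where
  "tmul3 t u = concat (map (\<lambda>(a,b,c). map (\<lambda>(a',b',c'). (a * a', b * b', c * c')) u) t)"

definition delta2L :: "('h \<Rightarrow> ('h \<times> 'h) list) \<Rightarrow> 'h \<Rightarrow> ('h \<times> 'h \<times> 'h) list" where
  "delta2L \<Delta> h = concat (map (\<lambda>(x,y). map (\<lambda>(a,b). (a, b, y)) (\<Delta> x)) (\<Delta> h))"

definition delta2R :: "('h \<Rightarrow> ('h \<times> 'h) list) \<Rightarrow> 'h \<Rightarrow> ('h \<times> 'h \<times> 'h) list" where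
  "delta2R \<Delta> h = concat (map (\<lambda>(x,y). map (\<lambda>(b,c). (x, b, c)) (\<Delta> y)) (\<Delta> h))"

definition weak_hopf_algebra ::
  "('k::field \<Rightarrow> 'h::{ring,monoid_mult} \<Rightarrow> 'h) \<Rightarrow> ('h \<Rightarrow> ('h \<times> 'h) list) \<Rightarrow> ('h \<Rightarrow> 'k) \<Rightarrow> ('h \<Rightarrow> 'h) \<Rightarrow> bool" where
  "weak_hopf_algebra sc \<Delta> \<epsilon> S \<longleftrightarrow>
     \<comment> \<open>H is a k-algebra\<close>
     vector_space sc \<and>
     (\<forall>c x y. sc c (x * y) = sc c x * y) \<and>
     (\<forall>c x y. sc c (x * y) = x * sc c y) \<and>
     \<comment> \<open>Delta, epsilon, S are linear\<close>
     (\<forall>x y. teq2 sc (\<Delta> (x + y)) (\<Delta> x @ \<Delta> y)) \<and>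
     (\<forall>c x. teq2 sc (\<Delta> (sc c x)) (map (\<lambda>(a,b). (sc c a, b)) (\<Delta> x))) \<and>
     (\<forall>x y. \<epsilon> (x + y) = \<epsilon> x + \<epsilon> y) \<and>
     (\<forall>c x. \<epsilon> (sc c x) = c * \<epsilon> x) \<and>
     (\<forall>x y. S (x + y) = S x + S y) \<and>
     (\<forall>c x. S (sc c x) = sc c (S x)) \<and>
     \<comment> \<open>(H, Delta, epsilon) is a coalgebra\<close>
     (\<forall>h. teq3 sc (delta2L \<Delta> h) (delta2R \<Delta> h)) \<and>
     (\<forall>h. (\<Sum>(x,y)\<leftarrow>\<Delta> h. sc (\<epsilon> x) y) = h) \<and>
     (\<forall>h. (\<Sum>(x,y)\<leftarrow>\<Delta> h. sc (\<epsilon> y) x) = h) \<and>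
     \<comment> \<open>Delta(kh) = Delta(k) Delta(h)\<close>
     (\<forall>k h. teq2 sc (\<Delta> (k * h)) (tmul2 (\<Delta> k) (\<Delta> h))) \<and>
     \<comment> \<open>weak multiplicativity of the counit\<close>
     (\<forall>k h g. (\<Sum>(x,y)\<leftarrow>\<Delta> h. \<epsilon> (k * x) * \<epsilon> (y * g)) = \<epsilon> (k * h * g)) \<and>
     (\<forall>k h g. (\<Sum>(x,y)\<leftarrow>\<Delta> h. \<epsilon> (k * y) * \<epsilon> (x * g)) = \<epsilon> (k * h * g)) \<and>
     \<comment> \<open>weak comultiplicativity of the unit\<close>
     teq3 sc (tmul3 (map (\<lambda>(a,b). (1, a, b)) (\<Delta> 1)) (map (\<lambda>(a,b). (a, b, 1)) (\<Delta> 1)))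
             (delta2L \<Delta> 1) \<and>
     teq3 sc (tmul3 (map (\<lambda>(a,b). (a, b, 1)) (\<Delta> 1)) (map (\<lambda>(a,b). (1, a, b)) (\<Delta> 1)))
             (delta2L \<Delta> 1) \<and>
     \<comment> \<open>antipode axioms\<close>
     (\<forall>h. (\<Sum>(x,y)\<leftarrow>\<Delta> h. x * S y) = (\<Sum>(a,b)\<leftarrow>\<Delta> 1. sc (\<epsilon> (a * h)) b)) \<and>
     (\<forall>h. (\<Sum>(x,y)\<leftarrow>\<Delta> h. S x * y) = (\<Sum>(a,b)\<leftarrow>\<Delta> 1. sc (\<epsilon> (h * b)) a)) \<and>
     (\<forall>h. S h = (\<Sum>(x,y,z)\<leftarrow>delta2L \<Delta> h. S x * y * S z))"

text \<open>Elements of the free (noncommutative) k-algebra on the set H are finitely supported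
  k-valued functions on words over H. T(H) is its quotient by the linearity relations
  [h + h'] = [h] + [h'], [c h] = c [h]; hence H_par^w = T(H)/I is the quotient of the free
  algebra by the ideal generated by the linearity relations together with the relations of I.\<close>

type_synonym ('h, 'k) free_alg = "'h list \<Rightarrow>\<^sub>0 'k"

definition fmul :: "('h, 'k::field) free_alg \<Rightarrow> ('h, 'k) free_alg \<Rightarrow> ('h, 'k) free_alg" where
  "fmul p q = (\<Sum>u\<in>Poly_Mapping.keys p. \<Sum>v\<in>Poly_Mapping.keys q. Poly_Mapping.single (u @ v) (Poly_Mapping.lookup p u * Poly_Mapping.lookup q v))"

definition fsc :: "'k::field \<Rightarrow> ('h, 'k) free_alg \<Rightarrow> ('h, 'k) free_alg" where
  "fsc c p = Poly_Mapping.map (\<lambda>v. c * v) p"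

definition funit :: "('h, 'k::field) free_alg" where
  "funit = Poly_Mapping.single [] 1"

definition gen :: "'h \<Rightarrow> ('h, 'k::field) free_alg" where
  "gen h = Poly_Mapping.single [h] 1"

definition par_rels ::
  "('k::field \<Rightarrow> 'h::{ring,monoid_mult} \<Rightarrow> 'h) \<Rightarrow> ('h \<Rightarrow> ('h \<times> 'h) list) \<Rightarrow> ('h \<Rightarrow> 'h) \<Rightarrow> ('h, 'k) free_alg set" where
  "par_rels sc \<Delta> S =
     {gen (h + h') - gen h - gen h' | h h'. True} \<union>
     {gen (sc c h) - fsc c (gen h) | c h. True} \<union>
     {gen 1 - funit} \<union>
     {(\<Sum>(x,y)\<leftarrow>\<Delta> k. fmul (fmul (gen h) (gen x)) (gen (S y)) - fmul (gen (h * x)) (gen (S y))) | h k. True} \<union>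
     {(\<Sum>(x,y)\<leftarrow>\<Delta> k. fmul (fmul (gen h) (gen (S x))) (gen y) - fmul (gen (h * S x)) (gen y)) | h k. True} \<union>
     {(\<Sum>(x,y)\<leftarrow>\<Delta> h. fmul (fmul (gen x) (gen (S y))) (gen k) - fmul (gen x) (gen (S y * k))) | h k. True} \<union>
     {(\<Sum>(x,y)\<leftarrow>\<Delta> h. fmul (fmul (gen (S x)) (gen y)) (gen k) - fmul (gen (S x)) (gen (y * k))) | h k. True} \<union>
     {gen h - (\<Sum>(x,y,z)\<leftarrow>delta2L \<Delta> h. fmul (fmul (gen x) (gen (S y))) (gen z)) | h. True}"

inductive_set fideal :: "('h, 'k::field) free_alg set \<Rightarrow> ('h, 'k) free_alg set"
  for R :: "('h, 'k) free_alg set" where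
  zero: "0 \<in> fideal R"
| gen: "r \<in> R \<Longrightarrow> fmul (fmul (Poly_Mapping.single u c) r) (Poly_Mapping.single v 1) \<in> fideal R"
| add: "p \<in> fideal R \<Longrightarrow> q \<in> fideal R \<Longrightarrow> p + q \<in> fideal R"

definition par_eq :: "('k::field \<Rightarrow> 'h::{ring,monoid_mult} \<Rightarrow> 'h) \<Rightarrow> ('h \<Rightarrow> ('h \<times> 'h) list) \<Rightarrow> ('h \<Rightarrow> 'h)
    \<Rightarrow> ('h, 'k) free_alg \<Rightarrow> ('h, 'k) free_alg \<Rightarrow> bool" where
  "par_eq sc \<Delta> S p q \<longleftrightarrow> p - q \<in> fideal (par_rels sc \<Delta> S)"

definition Eh :: "('h::{ring,monoid_mult} \<Rightarrow> ('h \<times> 'h) list) \<Rightarrow> ('h \<Rightarrow> 'h) \<Rightarrow> 'h \<Rightarrow> ('h, 'k::field) free_alg" where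
  "Eh \<Delta> S h = (\<Sum>(x,y)\<leftarrow>\<Delta> h. fmul (gen x) (gen (S y)))"

text \<open>A_par^w: the (unital) subalgebra of H_par^w generated by the E_h, given as the set of all
  representatives (in the free algebra) of its elements.\<close>
inductive_set Apar :: "('k::field \<Rightarrow> 'h::{ring,monoid_mult} \<Rightarrow> 'h) \<Rightarrow> ('h \<Rightarrow> ('h \<times> 'h) list) \<Rightarrow> ('h \<Rightarrow> 'h)
    \<Rightarrow> ('h, 'k) free_alg set"
  for sc \<Delta> S where
  E: "Eh \<Delta> S h \<in> Apar sc \<Delta> S"
| unit: "funit \<in> Apar sc \<Delta> S"
| add: "p \<in> Apar sc \<Delta> S \<Longrightarrow> q \<in> Apar sc \<Delta> S \<Longrightarrow> p + q \<in> Apar sc \<Delta> S"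
| smult: "p \<in> Apar sc \<Delta> S \<Longrightarrow> fsc c p \<in> Apar sc \<Delta> S"
| mult: "p \<in> Apar sc \<Delta> S \<Longrightarrow> q \<in> Apar sc \<Delta> S \<Longrightarrow> fmul p q \<in> Apar sc \<Delta> S"
| cong: "q \<in> Apar sc \<Delta> S \<Longrightarrow> par_eq sc \<Delta> S p q \<Longrightarrow> p \<in> Apar sc \<Delta> S"

definition par_act :: "('h::{ring,monoid_mult} \<Rightarrow> ('h \<times> 'h) list) \<Rightarrow> ('h \<Rightarrow> 'h) \<Rightarrow> 'h
    \<Rightarrow> ('h, 'k::field) free_alg \<Rightarrow> ('h, 'k) free_alg" where
  "par_act \<Delta> S h a = (\<Sum>(x,y)\<leftarrow>\<Delta> h. fmul (fmul (gen x) a) (gen (S y)))"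

text \<open>An algebra A is given by a carrier set of representatives A, an equality relation eq
  (the equality of A, a congruence), addition (+ of the ambient type), a multiplication mul,
  a scalar multiplication smul, a unit one; and an action act.\<close>
definition sym_partial_module_algebra ::
  "('k::field \<Rightarrow> 'h::{ring,monoid_mult} \<Rightarrow> 'h) \<Rightarrow> ('h \<Rightarrow> ('h \<times> 'h) list)
   \<Rightarrow> 'a::monoid_add set \<Rightarrow> ('a \<Rightarrow> 'a \<Rightarrow> bool) \<Rightarrow> ('k \<Rightarrow> 'a \<Rightarrow> 'a) \<Rightarrow> ('a \<Rightarrow> 'a \<Rightarrow> 'a) \<Rightarrow> 'a
   \<Rightarrow> ('h \<Rightarrow> 'a \<Rightarrow> 'a) \<Rightarrow> bool" where
  "sym_partial_module_algebra sc \<Delta> A eq smul mul one act \<longleftrightarrow>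
     \<comment> \<open>the action is a well-defined linear map H (x) A -> A\<close>
     (\<forall>h a. a \<in> A \<longrightarrow> act h a \<in> A) \<and>
     (\<forall>h a a'. a \<in> A \<longrightarrow> a' \<in> A \<longrightarrow> eq a a' \<longrightarrow> eq (act h a) (act h a')) \<and>
     (\<forall>h h' a. a \<in> A \<longrightarrow> eq (act (h + h') a) (act h a + act h' a)) \<and>
     (\<forall>c h a. a \<in> A \<longrightarrow> eq (act (sc c h) a) (smul c (act h a))) \<and>
     (\<forall>h a b. a \<in> A \<longrightarrow> b \<in> A \<longrightarrow> eq (act h (a + b)) (act h a + act h b)) \<and>
     (\<forall>c h a. a \<in> A \<longrightarrow> eq (act h (smul c a)) (smul c (act h a))) \<and>
     \<comment> \<open>h.(ab) = (h_1.a)(h_2.b)\<close>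
     (\<forall>h a b. a \<in> A \<longrightarrow> b \<in> A \<longrightarrow>
        eq (act h (mul a b)) (\<Sum>(x,y)\<leftarrow>\<Delta> h. mul (act x a) (act y b))) \<and>
     \<comment> \<open>1_H.a = a\<close>
     (\<forall>a. a \<in> A \<longrightarrow> eq (act 1 a) a) \<and>
     \<comment> \<open>h.(k.a) = (h_1.1_A)((h_2 k).a)\<close>
     (\<forall>h k a. a \<in> A \<longrightarrow>
        eq (act h (act k a)) (\<Sum>(x,y)\<leftarrow>\<Delta> h. mul (act x one) (act (y * k) a))) \<and>
     \<comment> \<open>h.(k.a) = ((h_1 k).a)(h_2.1_A)\<close>
     (\<forall>h k a. a \<in> A \<longrightarrow>
        eq (act h (act k a)) (\<Sum>(x,y)\<leftarrow>\<Delta> h. mul (act (x * k) a) (act y one)))"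

end

theory Submission
  imports Defs
begin

lemma sep_functional:
  fixes scale :: "'a::field \<Rightarrow> 'b::ab_group_add \<Rightarrow> 'b"
  assumes vs: "vector_space scale"
    and sub: "module.subspace scale I" and v: "v \<notin> I"
  shows "\<exists>f. (\<forall>x y. f (x + y) = f x + f y) \<and> (\<forall>c x. f (scale c x) = c * f x)
           \<and> (\<forall>x\<in>I. f x = 0) \<and> f v = 1"
proof -
  interpret V: vector_space scale by (rule vs)
  interpret P: vector_space_pair scale "(*) :: 'a \<Rightarrow> 'a \<Rightarrow> 'a"
    by unfold_locales (auto simp: algebra_simps)
  obtain B where B: "B \<subseteq> I" "V.independent B" "I \<subseteq> V.span B"
    using V.maximal_independent_subset by blast
  have spanB: "V.span B \<subseteq> I" using B(1) sub by (rule V.span_minimal)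
  have vB: "v \<notin> V.span B" using spanB v by blast
  have ind: "V.independent (insert v B)" using V.independent_insertI[OF vB B(2)] .
  define f where "f = P.construct (insert v B) (\<lambda>b. if b = v then 1 else 0)"
  have lin: "Vector_Spaces.linear scale (*) f" unfolding f_def by (rule P.linear_construct[OF ind])
  have fv: "f v = 1" unfolding f_def by (subst P.construct_basis[OF ind]) auto
  have fB: "f b = 0" if "b \<in> B" for b
    unfolding f_def using that vB V.span_base[OF that]
    by (subst P.construct_basis[OF ind]) auto
  have fI: "f x = 0" if "x \<in> I" for x
  proof -
    interpret L: Vector_Spaces.linear scale "(*) :: 'a \<Rightarrow> 'a \<Rightarrow> 'a" f by (rule lin)
    show ?thesis using L.eq_0_on_span[OF fB] B(3) that by blast
  qed
  show ?thesis
    using lin fv fI unfolding Vector_Spaces.linear_iff by auto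
qed

definition tgt :: "('k::field \<Rightarrow> 'a::ab_group_add \<Rightarrow> 'a) \<Rightarrow> bool" where
  "tgt scl \<longleftrightarrow> vector_space scl \<and>
     (\<forall>a b. (\<forall>\<phi>::'a\<Rightarrow>'k. (\<forall>x y. \<phi> (x + y) = \<phi> x + \<phi> y) \<and> (\<forall>c x. \<phi> (scl c x) = c * \<phi> x) \<longrightarrow> \<phi> a = \<phi> b) \<longrightarrow> a = b)"

lemma tgt_field: "tgt ((*) :: 'k::field \<Rightarrow> 'k \<Rightarrow> 'k)"
  unfolding tgt_def
proof (intro conjI allI impI)
  show "vector_space ((*) :: 'k::field \<Rightarrow> 'k \<Rightarrow> 'k)" by unfold_locales (auto simp: algebra_simps)
  fix a b :: 'k assume "\<forall>\<phi>::'k\<Rightarrow>'k. (\<forall>x y. \<phi> (x + y) = \<phi> x + \<phi> y) \<and> (\<forall>c x. \<phi> (c * x) = c * \<phi> x) \<longrightarrow> \<phi> a = \<phi> b"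
  from this[rule_format, of id] show "a = b" by simp
qed

lemma tgt_vs:
  fixes scl :: "'k::field \<Rightarrow> 'a::ab_group_add \<Rightarrow> 'a"
  shows "vector_space scl \<Longrightarrow> tgt scl"
  unfolding tgt_def
proof (intro conjI allI impI)
  fix a b assume vs: "vector_space scl" and H: "\<forall>\<phi>::'a\<Rightarrow>'k. (\<forall>x y. \<phi> (x + y) = \<phi> x + \<phi> y) \<and> (\<forall>c x. \<phi> (scl c x) = c * \<phi> x) \<longrightarrow> \<phi> a = \<phi> b"
  show "a = b"
  proof (rule ccontr)
    assume "a \<noteq> b"
    hence "a - b \<notin> {0}" by simp
    moreover have "module.subspace scl {0}"
      using vs by (simp add: module.subspace_def[OF vs[unfolded module_iff_vector_space[symmetric]]] vector_space.scale_eq_0_iff)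
    ultimately obtain \<phi> where P: "\<forall>x y. \<phi> (x + y) = \<phi> x + \<phi> y" "\<forall>c x. \<phi> (scl c x) = c * \<phi> x" "\<phi> (a - b) = 1"
      using sep_functional[OF vs] by blast
    have "\<phi> (a - b) + \<phi> b = \<phi> a" using P(1) by (metis diff_add_cancel)
    with H[rule_format, of \<phi>] P show False by simp
  qed
qed (assumption)

locale whopf =
  fixes sc :: "'k::field \<Rightarrow> 'h::{ring,monoid_mult} \<Rightarrow> 'h"
    and \<Delta> :: "'h \<Rightarrow> ('h \<times> 'h) list"
    and \<epsilon> :: "'h \<Rightarrow> 'k"
    and S :: "'h \<Rightarrow> 'h"
  assumes wha: "weak_hopf_algebra sc \<Delta> \<epsilon> S"
begin

lemmas AX = wha[unfolded weak_hopf_algebra_def]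

lemmas vsH = AX[THEN conjunct1, rule_format]
lemmas sc_multL0 = AX[THEN conjunct2, THEN conjunct1, rule_format]
lemmas sc_multR0 = AX[THEN conjunct2, THEN conjunct2, THEN conjunct1, rule_format]
lemmas teq_add = AX[THEN conjunct2, THEN conjunct2, THEN conjunct2, THEN conjunct1, rule_format]
lemmas teq_sc = AX[THEN conjunct2, THEN conjunct2, THEN conjunct2, THEN conjunct2, THEN conjunct1, rule_format]
lemmas eps_add = AX[THEN conjunct2, THEN conjunct2, THEN conjunct2, THEN conjunct2, THEN conjunct2, THEN conjunct1, rule_format]
lemmas eps_sc = AX[THEN conjunct2, THEN conjunct2, THEN conjunct2, THEN conjunct2, THEN conjunct2, THEN conjunct2, THEN conjunct1, rule_format]
lemmas S_add = AX[THEN conjunct2, THEN conjunct2, THEN conjunct2, THEN conjunct2, THEN conjunct2, THEN conjunct2, THEN conjunct2, THEN conjunct1, rule_format]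
lemmas S_sc = AX[THEN conjunct2, THEN conjunct2, THEN conjunct2, THEN conjunct2, THEN conjunct2, THEN conjunct2, THEN conjunct2, THEN conjunct2, THEN conjunct1, rule_format]
lemmas teq_coass = AX[THEN conjunct2, THEN conjunct2, THEN conjunct2, THEN conjunct2, THEN conjunct2, THEN conjunct2, THEN conjunct2, THEN conjunct2, THEN conjunct2, THEN conjunct1, rule_format]
lemmas counitL = AX[THEN conjunct2, THEN conjunct2, THEN conjunct2, THEN conjunct2, THEN conjunct2, THEN conjunct2, THEN conjunct2, THEN conjunct2, THEN conjunct2, THEN conjunct2, THEN conjunct1, rule_format]
lemmas counitR = AX[THEN conjunct2, THEN conjunct2, THEN conjunct2, THEN conjunct2, THEN conjunct2, THEN conjunct2, THEN conjunct2, THEN conjunct2, THEN conjunct2, THEN conjunct2, THEN conjunct2, THEN conjunct1, rule_format]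
lemmas teq_mult = AX[THEN conjunct2, THEN conjunct2, THEN conjunct2, THEN conjunct2, THEN conjunct2, THEN conjunct2, THEN conjunct2, THEN conjunct2, THEN conjunct2, THEN conjunct2, THEN conjunct2, THEN conjunct2, THEN conjunct1, rule_format]
lemmas eps1 = AX[THEN conjunct2, THEN conjunct2, THEN conjunct2, THEN conjunct2, THEN conjunct2, THEN conjunct2, THEN conjunct2, THEN conjunct2, THEN conjunct2, THEN conjunct2, THEN conjunct2, THEN conjunct2, THEN conjunct2, THEN conjunct1, rule_format]
lemmas eps2 = AX[THEN conjunct2, THEN conjunct2, THEN conjunct2, THEN conjunct2, THEN conjunct2, THEN conjunct2, THEN conjunct2, THEN conjunct2, THEN conjunct2, THEN conjunct2, THEN conjunct2, THEN conjunct2, THEN conjunct2, THEN conjunct2, THEN conjunct1, rule_format]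
lemmas teq_U1 = AX[THEN conjunct2, THEN conjunct2, THEN conjunct2, THEN conjunct2, THEN conjunct2, THEN conjunct2, THEN conjunct2, THEN conjunct2, THEN conjunct2, THEN conjunct2, THEN conjunct2, THEN conjunct2, THEN conjunct2, THEN conjunct2, THEN conjunct2, THEN conjunct1, rule_format]
lemmas teq_U2 = AX[THEN conjunct2, THEN conjunct2, THEN conjunct2, THEN conjunct2, THEN conjunct2, THEN conjunct2, THEN conjunct2, THEN conjunct2, THEN conjunct2, THEN conjunct2, THEN conjunct2, THEN conjunct2, THEN conjunct2, THEN conjunct2, THEN conjunct2, THEN conjunct2, THEN conjunct1, rule_format]
lemmas S1 = AX[THEN conjunct2, THEN conjunct2, THEN conjunct2, THEN conjunct2, THEN conjunct2, THEN conjunct2, THEN conjunct2, THEN conjunct2, THEN conjunct2, THEN conjunct2, THEN conjunct2, THEN conjunct2, THEN conjunct2, THEN conjunct2, THEN conjunct2, THEN conjunct2, THEN conjunct2, THEN conjunct1, rule_format]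
lemmas S2 = AX[THEN conjunct2, THEN conjunct2, THEN conjunct2, THEN conjunct2, THEN conjunct2, THEN conjunct2, THEN conjunct2, THEN conjunct2, THEN conjunct2, THEN conjunct2, THEN conjunct2, THEN conjunct2, THEN conjunct2, THEN conjunct2, THEN conjunct2, THEN conjunct2, THEN conjunct2, THEN conjunct2, THEN conjunct1, rule_format]
lemmas S3 = AX[THEN conjunct2, THEN conjunct2, THEN conjunct2, THEN conjunct2, THEN conjunct2, THEN conjunct2, THEN conjunct2, THEN conjunct2, THEN conjunct2, THEN conjunct2, THEN conjunct2, THEN conjunct2, THEN conjunct2, THEN conjunct2, THEN conjunct2, THEN conjunct2, THEN conjunct2, THEN conjunct2, THEN conjunct2, rule_format]
lemma sc_multL: "sc c x * y = sc c (x * y)" using sc_multL0 by simp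
lemma sc_multR: "x * sc c y = sc c (x * y)" using sc_multR0 by simp

interpretation V: vector_space sc by (rule vsH)

lemma sc_add: "sc c (x + y) = sc c x + sc c y" by (rule V.scale_right_distrib)
lemma sc_addL: "sc (a + b) x = sc a x + sc b x" by (rule V.scale_left_distrib)
lemma sc_sc: "sc a (sc b x) = sc (a * b) x" by simp
lemma sc_one: "sc 1 x = x" by simp
lemma sc_zero: "sc 0 x = 0" by simp
lemma sc_zeroR: "sc c 0 = 0" by simp

definition linS :: "('k \<Rightarrow> 'a::ab_group_add \<Rightarrow> 'a) \<Rightarrow> ('h \<Rightarrow> 'a) \<Rightarrow> bool" where
  "linS scl g \<longleftrightarrow> (\<forall>x y. g (x + y) = g x + g y) \<and> (\<forall>c x. g (sc c x) = scl c (g x))"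
definition bilS :: "('k \<Rightarrow> 'a::ab_group_add \<Rightarrow> 'a) \<Rightarrow> ('h \<Rightarrow> 'h \<Rightarrow> 'a) \<Rightarrow> bool" where
  "bilS scl \<beta> \<longleftrightarrow> (\<forall>y. linS scl (\<lambda>x. \<beta> x y)) \<and> (\<forall>x. linS scl (\<beta> x))"
definition triS :: "('k \<Rightarrow> 'a::ab_group_add \<Rightarrow> 'a) \<Rightarrow> ('h \<Rightarrow> 'h \<Rightarrow> 'h \<Rightarrow> 'a) \<Rightarrow> bool" where
  "triS scl \<tau> \<longleftrightarrow> (\<forall>y z. linS scl (\<lambda>x. \<tau> x y z)) \<and> (\<forall>x z. linS scl (\<lambda>y. \<tau> x y z)) \<and> (\<forall>x y. linS scl (\<tau> x y))"

lemma bilinear_form_bilS: "bilinear_form sc \<beta> \<longleftrightarrow> bilS (*) \<beta>"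
  unfolding bilinear_form_def bilS_def linS_def by auto
lemma trilinear_form_triS: "trilinear_form sc \<tau> \<longleftrightarrow> triS (*) \<tau>"
  unfolding trilinear_form_def triS_def linS_def by auto

definition sw :: "('h \<Rightarrow> 'h \<Rightarrow> 'a::comm_monoid_add) \<Rightarrow> 'h \<Rightarrow> 'a" where
  "sw \<beta> h = (\<Sum>(x,y)\<leftarrow>\<Delta> h. \<beta> x y)"

lemma linS_sum_list:
  fixes \<phi> :: "'a::ab_group_add \<Rightarrow> 'b::ab_group_add"
  assumes "\<forall>x y. \<phi> (x + y) = \<phi> x + \<phi> y"
  shows "\<phi> (\<Sum>(x,y)\<leftarrow>t. B x y) = (\<Sum>(x,y)\<leftarrow>t. \<phi> (B x y))"
proof -
  have "\<phi> (0 + 0) = \<phi> 0 + \<phi> 0" using assms by blast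
  hence z: "\<phi> 0 = 0" by simp
  show ?thesis by (induction t) (simp_all add: z assms split_def)
qed

lemma linS_sum_list3:
  fixes \<phi> :: "'a::ab_group_add \<Rightarrow> 'b::ab_group_add"
  assumes "\<forall>x y. \<phi> (x + y) = \<phi> x + \<phi> y"
  shows "\<phi> (\<Sum>(x,y,z)\<leftarrow>t. B x y z) = (\<Sum>(x,y,z)\<leftarrow>t. \<phi> (B x y z))"
proof -
  have "\<phi> (0 + 0) = \<phi> 0 + \<phi> 0" using assms by blast
  hence z: "\<phi> 0 = 0" by simp
  show ?thesis by (induction t) (simp_all add: z assms split_def)
qed

lemma transfer2:
  fixes scl :: "'k \<Rightarrow> 'a::ab_group_add \<Rightarrow> 'a"
  assumes T: "tgt scl" and E: "teq2 sc t u" and B: "bilS scl B"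
  shows "(\<Sum>(x,y)\<leftarrow>t. B x y) = (\<Sum>(x,y)\<leftarrow>u. B x y)"
proof -
  have "\<phi> (\<Sum>(x,y)\<leftarrow>t. B x y) = \<phi> (\<Sum>(x,y)\<leftarrow>u. B x y)"
    if P: "(\<forall>x y. \<phi> (x + y) = \<phi> x + \<phi> y) \<and> (\<forall>c x. \<phi> (scl c x) = c * \<phi> x)" for \<phi> :: "'a \<Rightarrow> 'k"
  proof -
    have "bilinear_form sc (\<lambda>x y. \<phi> (B x y))"
      using B P unfolding bilinear_form_bilS bilS_def linS_def by auto
    hence "(\<Sum>(x,y)\<leftarrow>t. \<phi> (B x y)) = (\<Sum>(x,y)\<leftarrow>u. \<phi> (B x y))"
      using E unfolding teq2_def by blast
    thus ?thesis using linS_sum_list P by metis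
  qed
  thus ?thesis using T unfolding tgt_def by blast
qed

lemma transfer3:
  fixes scl :: "'k \<Rightarrow> 'a::ab_group_add \<Rightarrow> 'a"
  assumes T: "tgt scl" and E: "teq3 sc t u" and B: "triS scl B"
  shows "(\<Sum>(x,y,z)\<leftarrow>t. B x y z) = (\<Sum>(x,y,z)\<leftarrow>u. B x y z)"
proof -
  have "\<phi> (\<Sum>(x,y,z)\<leftarrow>t. B x y z) = \<phi> (\<Sum>(x,y,z)\<leftarrow>u. B x y z)"
    if P: "(\<forall>x y. \<phi> (x + y) = \<phi> x + \<phi> y) \<and> (\<forall>c x. \<phi> (scl c x) = c * \<phi> x)" for \<phi> :: "'a \<Rightarrow> 'k"
  proof -
    have "trilinear_form sc (\<lambda>x y z. \<phi> (B x y z))"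
      using B P unfolding trilinear_form_triS triS_def linS_def by auto
    hence "(\<Sum>(x,y,z)\<leftarrow>t. \<phi> (B x y z)) = (\<Sum>(x,y,z)\<leftarrow>u. \<phi> (B x y z))"
      using E unfolding teq3_def by blast
    thus ?thesis using linS_sum_list3 P by metis
  qed
  thus ?thesis using T unfolding tgt_def by blast
qed

lemma tgtH: "tgt sc" by (rule tgt_vs[OF vsH])

end

context whopf begin

interpretation V: vector_space sc by (rule vsH)

lemma sum_list_map_concat: "(\<Sum>x\<leftarrow>concat xss. f x) = (\<Sum>xs\<leftarrow>xss. \<Sum>x\<leftarrow>xs. f x)"
  by (induction xss) auto

lemma sum_list_sc: "(\<Sum>(x,y)\<leftarrow>t. sc c (A x y)) = sc c (\<Sum>(x,y)\<leftarrow>t. A x y)"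
  by (induction t) (auto simp: sc_add sc_zeroR)

lemma sum_list_scl:
  assumes "vector_space scl"
  shows "(\<Sum>(x,y)\<leftarrow>t. scl c (A x y)) = scl c (\<Sum>(x,y)\<leftarrow>t. A x y)"
proof -
  interpret VA: vector_space scl by fact
  show ?thesis by (induction t) (auto simp: VA.scale_right_distrib)
qed

lemma sw_addf: "sw (\<lambda>x y. A x y + B x y) h = sw A h + sw B h"
  unfolding sw_def by (simp add: split_def sum_list_addf)
lemma sw_zero: "sw (\<lambda>x y. 0) h = 0"
  unfolding sw_def by (simp add: split_def)
lemma sw_cmult: "sw (\<lambda>x y. (c::'k) * A x y) h = c * sw A h"
  unfolding sw_def by (simp add: split_def sum_list_const_mult)
lemma sw_multc: "sw (\<lambda>x y. A x y * (c::'k)) h = sw A h * c"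
  unfolding sw_def by (simp add: split_def sum_list_mult_const)
lemma sw_scH: "sw (\<lambda>x y. sc c (A x y)) h = sc c (sw A h)"
  unfolding sw_def by (rule sum_list_sc)
lemma sw_multR: "sw (\<lambda>x y. A x y * (m::'h)) h = sw A h * m"
  unfolding sw_def by (simp add: split_def sum_list_mult_const)
lemma sw_multL: "sw (\<lambda>x y. (m::'h) * A x y) h = m * sw A h"
  unfolding sw_def by (simp add: split_def sum_list_const_mult)
lemma sw_cong: assumes "\<And>x y. A x y = B x y" shows "sw A h = sw B h"
  using assms by (simp add: sw_def)

lemma bilS_add1: "bilS scl \<beta> \<Longrightarrow> \<beta> (x + x') y = \<beta> x y + \<beta> x' y"
  unfolding bilS_def linS_def by blast
lemma bilS_add2: "bilS scl \<beta> \<Longrightarrow> \<beta> x (y + y') = \<beta> x y + \<beta> x y'"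
  unfolding bilS_def linS_def by blast
lemma bilS_sc1: "bilS scl \<beta> \<Longrightarrow> \<beta> (sc c x) y = scl c (\<beta> x y)"
  unfolding bilS_def linS_def by blast
lemma bilS_sc2: "bilS scl \<beta> \<Longrightarrow> \<beta> x (sc c y) = scl c (\<beta> x y)"
  unfolding bilS_def linS_def by blast
lemmas bilS_rules = bilS_add1 bilS_add2 bilS_sc1 bilS_sc2

lemma triS_add1: "triS scl \<tau> \<Longrightarrow> \<tau> (x + x') y z = \<tau> x y z + \<tau> x' y z"
  unfolding triS_def linS_def by blast
lemma triS_add2: "triS scl \<tau> \<Longrightarrow> \<tau> x (y + y') z = \<tau> x y z + \<tau> x y' z"
  unfolding triS_def linS_def by blast
lemma triS_add3: "triS scl \<tau> \<Longrightarrow> \<tau> x y (z + z') = \<tau> x y z + \<tau> x y z'"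
  unfolding triS_def linS_def by blast
lemma triS_sc1: "triS scl \<tau> \<Longrightarrow> \<tau> (sc c x) y z = scl c (\<tau> x y z)"
  unfolding triS_def linS_def by blast
lemma triS_sc2: "triS scl \<tau> \<Longrightarrow> \<tau> x (sc c y) z = scl c (\<tau> x y z)"
  unfolding triS_def linS_def by blast
lemma triS_sc3: "triS scl \<tau> \<Longrightarrow> \<tau> x y (sc c z) = scl c (\<tau> x y z)"
  unfolding triS_def linS_def by blast
lemmas triS_rules = triS_add1 triS_add2 triS_add3 triS_sc1 triS_sc2 triS_sc3

lemma linS_add: "linS scl g \<Longrightarrow> g (x + y) = g x + g y" unfolding linS_def by blast
lemma linS_sc: "linS scl g \<Longrightarrow> g (sc c x) = scl c (g x)" unfolding linS_def by blast

lemma sw_add_arg: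
  fixes scl :: "'k \<Rightarrow> 'a::ab_group_add \<Rightarrow> 'a"
  assumes T: "tgt scl" and B: "bilS scl \<beta>"
  shows "sw \<beta> (x + y) = sw \<beta> x + sw \<beta> y"
  unfolding sw_def using transfer2[OF T teq_add B] by simp

lemma sw_sc_arg:
  fixes scl :: "'k \<Rightarrow> 'a::ab_group_add \<Rightarrow> 'a"
  assumes T: "tgt scl" and B: "bilS scl \<beta>"
  shows "sw \<beta> (sc c x) = scl c (sw \<beta> x)"
proof -
  interpret VA: vector_space scl using T unfolding tgt_def by blast
  have "sw \<beta> (sc c x) = (\<Sum>(a,b)\<leftarrow>map (\<lambda>(a,b). (sc c a, b)) (\<Delta> x). \<beta> a b)"
    unfolding sw_def using transfer2[OF T teq_sc B] by simp
  also have "\<dots> = (\<Sum>(a,b)\<leftarrow>\<Delta> x. scl c (\<beta> a b))"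
    by (simp add: comp_def split_def bilS_sc1[OF B])
  also have "\<dots> = scl c (sw \<beta> x)"
    unfolding sw_def by (rule sum_list_scl[OF VA.vector_space_axioms])
  finally show ?thesis .
qed

lemma linS_sw:
  fixes scl :: "'k \<Rightarrow> 'a::ab_group_add \<Rightarrow> 'a"
  assumes T: "tgt scl" and B: "bilS scl \<beta>"
  shows "linS scl (sw \<beta>)"
  unfolding linS_def using sw_add_arg[OF T B] sw_sc_arg[OF T B] by blast

lemma sum_tmul2: "(\<Sum>(x,y)\<leftarrow>tmul2 t u. B x y) = (\<Sum>(a,b)\<leftarrow>t. \<Sum>(c,d)\<leftarrow>u. B (a * c) (b * d))"
  unfolding tmul2_def by (simp add: sum_list_map_concat comp_def split_def)

lemma sw_mult_arg:
  fixes scl :: "'k \<Rightarrow> 'a::ab_group_add \<Rightarrow> 'a"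
  assumes T: "tgt scl" and B: "bilS scl \<beta>"
  shows "sw \<beta> (k * h) = sw (\<lambda>a b. sw (\<lambda>c d. \<beta> (a * c) (b * d)) h) k"
  unfolding sw_def using transfer2[OF T teq_mult B] by (simp add: sum_tmul2)

lemma sum_delta2L: "(\<Sum>(x,y,z)\<leftarrow>delta2L \<Delta> h. \<tau> x y z) = sw (\<lambda>x y. sw (\<lambda>a b. \<tau> a b y) x) h"
  unfolding delta2L_def sw_def by (simp add: sum_list_map_concat comp_def split_def)
lemma sum_delta2R: "(\<Sum>(x,y,z)\<leftarrow>delta2R \<Delta> h. \<tau> x y z) = sw (\<lambda>x y. sw (\<lambda>b c. \<tau> x b c) y) h"
  unfolding delta2R_def sw_def by (simp add: sum_list_map_concat comp_def split_def)

lemma coass: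
  fixes scl :: "'k \<Rightarrow> 'a::ab_group_add \<Rightarrow> 'a"
  assumes T: "tgt scl" and B: "triS scl \<tau>"
  shows "sw (\<lambda>x y. sw (\<lambda>a b. \<tau> a b y) x) h = sw (\<lambda>x y. sw (\<lambda>b c. \<tau> x b c) y) h"
  using transfer3[OF T teq_coass B] by (simp add: sum_delta2L sum_delta2R)

lemma sum_tmul3: "(\<Sum>(x,y,z)\<leftarrow>tmul3 t u. B x y z) = (\<Sum>(a,b,c)\<leftarrow>t. \<Sum>(a',b',c')\<leftarrow>u. B (a * a') (b * b') (c * c'))"
  unfolding tmul3_def by (simp add: sum_list_map_concat comp_def split_def)

lemma sum_U1: "(\<Sum>(x,y,z)\<leftarrow>tmul3 (map (\<lambda>(a,b). (1, a, b)) (\<Delta> 1)) (map (\<lambda>(a,b). (a, b, 1)) (\<Delta> 1)). \<tau> x y z)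
   = sw (\<lambda>a b. sw (\<lambda>p q. \<tau> p (a * q) b) 1) 1"
  unfolding tmul3_def sw_def by (simp add: sum_list_map_concat comp_def split_def)
lemma sum_U2: "(\<Sum>(x,y,z)\<leftarrow>tmul3 (map (\<lambda>(a,b). (a, b, 1)) (\<Delta> 1)) (map (\<lambda>(a,b). (1, a, b)) (\<Delta> 1)). \<tau> x y z)
   = sw (\<lambda>a b. sw (\<lambda>p q. \<tau> a (b * p) q) 1) 1"
  unfolding tmul3_def sw_def by (simp add: sum_list_map_concat comp_def split_def)

lemma U1:
  fixes scl :: "'k \<Rightarrow> 'a::ab_group_add \<Rightarrow> 'a"
  assumes T: "tgt scl" and B: "triS scl \<tau>"
  shows "sw (\<lambda>a b. sw (\<lambda>p q. \<tau> p (a * q) b) 1) 1 = sw (\<lambda>x y. sw (\<lambda>p q. \<tau> p q y) x) 1"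
  using transfer3[OF T teq_U1 B] unfolding sum_U1 sum_delta2L .

lemma U2:
  fixes scl :: "'k \<Rightarrow> 'a::ab_group_add \<Rightarrow> 'a"
  assumes T: "tgt scl" and B: "triS scl \<tau>"
  shows "sw (\<lambda>a b. sw (\<lambda>p q. \<tau> a (b * p) q) 1) 1 = sw (\<lambda>x y. sw (\<lambda>p q. \<tau> p q y) x) 1"
  using transfer3[OF T teq_U2 B] unfolding sum_U2 sum_delta2L .

end

context whopf begin
interpretation V: vector_space sc by (rule vsH)

lemmas lin_unfold = linS_def bilS_def triS_def
lemmas lin_H = distrib_left distrib_right sc_multL sc_multR S_add S_sc sc_add sc_addL V.scale_scale eps_add eps_sc
  sw_addf sw_cmult sw_multc sw_scH sw_zero

lemma "bilS (*) \<beta> \<Longrightarrow> triS (*) (\<lambda>a b c. \<beta> (S a * b) (c * m))"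
  unfolding lin_unfold by (simp add: lin_H bilS_rules)

lemma "triS sc (\<lambda>a b c. S a * b * S c)"
  unfolding lin_unfold by (simp add: lin_H)

lemma "bilS (*) \<beta> \<Longrightarrow> bilS (*) (\<lambda>x y. sw (\<lambda>a b. \<beta> (a * x) (b * y)) h)"
  unfolding lin_unfold by (simp add: lin_H bilS_rules)

lemma assumes B: "bilS (*) \<beta>" shows "bilS (*) (\<lambda>x y. sw \<beta> (x * y))"
  unfolding lin_unfold by (simp add: lin_H bilS_rules[OF B] sw_add_arg[OF tgt_field B] sw_sc_arg[OF tgt_field B])

lemma assumes B: "bilS (*) \<beta>" shows "bilS (*) (\<lambda>x y. sw (\<lambda>a b. \<beta> (S a) (b * y)) (x * m))"
  by (simp add: lin_unfold lin_H bilS_rules[OF B] sw_add_arg[OF tgt_field] sw_sc_arg[OF tgt_field])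


end

context whopf begin
interpretation V: vector_space sc by (rule vsH)

lemma sum_list_swap0: "(\<Sum>x\<leftarrow>xs. \<Sum>y\<leftarrow>ys. (f x y :: 'c::comm_monoid_add)) = (\<Sum>y\<leftarrow>ys. \<Sum>x\<leftarrow>xs. f x y)"
  by (induction xs) (simp_all add: sum_list_addf)

lemma sum_list_swap: "(\<Sum>(a,b)\<leftarrow>t. \<Sum>(p,q)\<leftarrow>u. (F a b p q :: 'c::comm_monoid_add)) = (\<Sum>(p,q)\<leftarrow>u. \<Sum>(a,b)\<leftarrow>t. F a b p q)"
  using sum_list_swap0[where f="\<lambda>x y. F (fst x) (snd x) (fst y) (snd y)" and xs=t and ys=u] by (simp add: split_def)

lemma sw_swap: "sw (\<lambda>a b. sw (\<lambda>p q. F a b p q) k) h = sw (\<lambda>p q. sw (\<lambda>a b. F a b p q) h) k"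
  unfolding sw_def by (rule sum_list_swap)

lemma lin_sw_push:
  fixes L :: "'a::ab_group_add \<Rightarrow> 'b::ab_group_add"
  assumes "\<And>x y. L (x + y) = L x + L y"
  shows "L (sw A h) = sw (\<lambda>x y. L (A x y)) h"
  unfolding sw_def using linS_sum_list[of L] assms by blast

lemma F0a:
  fixes scl :: "'k \<Rightarrow> 'a::ab_group_add \<Rightarrow> 'a"
  assumes T: "tgt scl" and B: "bilS scl \<beta>"
  shows "sw (\<lambda>a b. sw (\<lambda>c d. \<beta> (a * c) (b * d)) h) 1 = sw \<beta> h"
  using sw_mult_arg[OF T B, of 1 h] by simp

lemma F0b:
  fixes scl :: "'k \<Rightarrow> 'a::ab_group_add \<Rightarrow> 'a"
  assumes T: "tgt scl" and B: "bilS scl \<beta>"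
  shows "sw (\<lambda>a b. sw (\<lambda>c d. \<beta> (a * c) (b * d)) 1) h = sw \<beta> h"
  using sw_mult_arg[OF T B, of h 1] by simp

lemma counitL_gen:
  fixes scl :: "'k \<Rightarrow> 'a::ab_group_add \<Rightarrow> 'a"
  assumes L: "linS scl L"
  shows "sw (\<lambda>x y. scl (\<epsilon> x) (L y)) h = L h"
proof -
  have "L h = L (\<Sum>(x,y)\<leftarrow>\<Delta> h. sc (\<epsilon> x) y)" by (simp add: counitL)
  also have "\<dots> = (\<Sum>(x,y)\<leftarrow>\<Delta> h. L (sc (\<epsilon> x) y))"
    by (rule linS_sum_list) (use L in \<open>simp add: linS_def\<close>)
  also have "\<dots> = sw (\<lambda>x y. scl (\<epsilon> x) (L y)) h"
    unfolding sw_def using L by (simp add: linS_def)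
  finally show ?thesis by simp
qed

lemma counitR_gen:
  fixes scl :: "'k \<Rightarrow> 'a::ab_group_add \<Rightarrow> 'a"
  assumes L: "linS scl L"
  shows "sw (\<lambda>x y. scl (\<epsilon> y) (L x)) h = L h"
proof -
  have "L h = L (\<Sum>(x,y)\<leftarrow>\<Delta> h. sc (\<epsilon> y) x)" by (simp add: counitR)
  also have "\<dots> = (\<Sum>(x,y)\<leftarrow>\<Delta> h. L (sc (\<epsilon> y) x))"
    by (rule linS_sum_list) (use L in \<open>simp add: linS_def\<close>)
  also have "\<dots> = sw (\<lambda>x y. scl (\<epsilon> y) (L x)) h"
    unfolding sw_def using L by (simp add: linS_def)
  finally show ?thesis by simp
qed

lemma counitL_k: "linS (*) L \<Longrightarrow> sw (\<lambda>x y. \<epsilon> x * L y) h = L h"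
  using counitL_gen[of "(*)" L] by simp
lemma counitR_k: "linS (*) L \<Longrightarrow> sw (\<lambda>x y. \<epsilon> y * L x) h = L h"
  using counitR_gen[of "(*)" L] by simp

lemma eps_lin: "linS (*) (\<lambda>x. \<epsilon> (a * x * b))"
  by (simp add: lin_unfold lin_H)

lemma eps1_1: "sw (\<lambda>x y. \<epsilon> (k * x) * \<epsilon> (y * g)) 1 = \<epsilon> (k * g)"
  using eps1[where h=1 and k=k and g=g] by (simp add: sw_def)
lemma eps2_1: "sw (\<lambda>x y. \<epsilon> (k * y) * \<epsilon> (x * g)) 1 = \<epsilon> (k * g)"
  using eps2[where h=1 and k=k and g=g] by (simp add: sw_def)

definition et :: "'h \<Rightarrow> 'h" where "et h = sw (\<lambda>a b. sc (\<epsilon> (a * h)) b) 1"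
definition es :: "'h \<Rightarrow> 'h" where "es h = sw (\<lambda>a b. sc (\<epsilon> (h * b)) a) 1"

lemma S1': "sw (\<lambda>x y. x * S y) h = et h" using S1[of h] by (simp add: sw_def et_def)
lemma S2': "sw (\<lambda>x y. S x * y) h = es h" using S2[of h] by (simp add: sw_def es_def)
lemma S3': "S h = sw (\<lambda>x y. sw (\<lambda>a b. S a * b * S y) x) h" using S3[of h] by (simp only: sum_delta2L)

lemma F1a: "\<epsilon> (x * et g) = \<epsilon> (x * g)"
proof -
  have "x * et g = sw (\<lambda>a b. sc (\<epsilon> (a * g)) (x * b)) 1"
    unfolding et_def by (simp add: lin_sw_push[where L="\<lambda>z. x * z"] distrib_left sc_multR)
  hence "\<epsilon> (x * et g) = sw (\<lambda>a b. \<epsilon> (a * g) * \<epsilon> (x * b)) 1"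
    by (simp add: lin_sw_push[where L=\<epsilon>] eps_add eps_sc)
  also have "\<dots> = \<epsilon> (x * g)" using eps2_1[of x g] by (simp add: mult.commute)
  finally show ?thesis .
qed

lemma F1b: "\<epsilon> (es x * g) = \<epsilon> (x * g)"
proof -
  have "es x * g = sw (\<lambda>a b. sc (\<epsilon> (x * b)) (a * g)) 1"
    unfolding es_def by (simp add: lin_sw_push[where L="\<lambda>z. z * g"] distrib_right sc_multL)
  hence "\<epsilon> (es x * g) = sw (\<lambda>a b. \<epsilon> (x * b) * \<epsilon> (a * g)) 1"
    by (simp add: lin_sw_push[where L=\<epsilon>] eps_add eps_sc)
  also have "\<dots> = \<epsilon> (x * g)" by (rule eps2_1)
  finally show ?thesis .
qed

lemma et1: "et 1 = 1" unfolding et_def using counitL[of 1] by (simp add: sw_def)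
lemma es1: "es 1 = 1" unfolding es_def using counitR[of 1] by (simp add: sw_def)

end

context whopf begin
interpretation V: vector_space sc by (rule vsH)

lemma tgt_vs': "tgt scl \<Longrightarrow> vector_space scl" unfolding tgt_def by blast

lemma sw_scl: "vector_space scl \<Longrightarrow> sw (\<lambda>x y. scl c (A x y)) h = scl c (sw A h)"
  unfolding sw_def by (rule sum_list_scl)

definition htel :: "('h \<Rightarrow> 'k) \<Rightarrow> 'h" where "htel \<phi> = sw (\<lambda>a b. sc (\<phi> a) b) 1"
definition hsel :: "('h \<Rightarrow> 'k) \<Rightarrow> 'h" where "hsel \<phi> = sw (\<lambda>a b. sc (\<phi> b) a) 1"

lemma sw_push_sc_arg:
  fixes scl :: "'k \<Rightarrow> 'a::ab_group_add \<Rightarrow> 'a"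
  assumes T: "tgt scl" and B: "bilS scl \<beta>"
  shows "sw \<beta> (sw (\<lambda>a b. sc (\<phi> a b) (g a b)) h) = sw (\<lambda>a b. scl (\<phi> a b) (sw \<beta> (g a b))) h"
  by (simp add: lin_sw_push[where L="sw \<beta>"] sw_add_arg[OF T B] sw_sc_arg[OF T B])

lemma Ht_pz:
  fixes scl :: "'k \<Rightarrow> 'a::ab_group_add \<Rightarrow> 'a"
  assumes T: "tgt scl" and B: "bilS scl \<beta>" and P: "linS (*) \<phi>"
  shows "sw \<beta> (htel \<phi>) = sw (\<lambda>p q. \<beta> (p * htel \<phi>) q) 1"
proof -
  interpret VA: vector_space scl using tgt_vs'[OF T] .
  note R = bilS_rules[OF B] linS_add[OF P] linS_sc[OF P] VA.scale_right_distrib VA.scale_left_distrib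
  define \<tau> where "\<tau> = (\<lambda>x p q. scl (\<phi> x) (\<beta> p q))"
  have tri: "triS scl \<tau>" unfolding \<tau>_def by (simp add: lin_unfold lin_H R)
  have "sw \<beta> (htel \<phi>) = sw (\<lambda>a b. scl (\<phi> a) (sw \<beta> b)) 1"
    unfolding htel_def by (rule sw_push_sc_arg[OF T B])
  also have "\<dots> = sw (\<lambda>x y. sw (\<lambda>b c. \<tau> x b c) y) 1"
    unfolding \<tau>_def by (simp add: sw_scl[OF VA.vector_space_axioms])
  also have "\<dots> = sw (\<lambda>x y. sw (\<lambda>a b. \<tau> a b y) x) 1" by (rule coass[OF T tri, symmetric])
  also have "\<dots> = sw (\<lambda>a b. sw (\<lambda>p q. \<tau> p (a * q) b) 1) 1" by (rule U1[OF T tri, symmetric])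
  also have "\<dots> = sw (\<lambda>p q. \<beta> (p * htel \<phi>) q) 1"
    unfolding \<tau>_def htel_def
    by (simp add: lin_sw_push[where L="\<lambda>z. p * z" for p] distrib_left sc_multR
          lin_sw_push[where L="\<lambda>z. \<beta> z q" for q] R sw_scl[OF VA.vector_space_axioms])
  finally show ?thesis .
qed


lemma Ht_zp:
  fixes scl :: "'k \<Rightarrow> 'a::ab_group_add \<Rightarrow> 'a"
  assumes T: "tgt scl" and B: "bilS scl \<beta>" and P: "linS (*) \<phi>"
  shows "sw \<beta> (htel \<phi>) = sw (\<lambda>p q. \<beta> (htel \<phi> * p) q) 1"
proof -
  interpret VA: vector_space scl using tgt_vs'[OF T] .
  note R = bilS_rules[OF B] linS_add[OF P] linS_sc[OF P] VA.scale_right_distrib VA.scale_left_distrib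
  define \<tau> where "\<tau> = (\<lambda>x p q. scl (\<phi> x) (\<beta> p q))"
  have tri: "triS scl \<tau>" unfolding \<tau>_def by (simp add: lin_unfold lin_H R)
  have "sw \<beta> (htel \<phi>) = sw (\<lambda>a b. scl (\<phi> a) (sw \<beta> b)) 1"
    unfolding htel_def by (rule sw_push_sc_arg[OF T B])
  also have "\<dots> = sw (\<lambda>x y. sw (\<lambda>b c. \<tau> x b c) y) 1"
    unfolding \<tau>_def by (simp add: sw_scl[OF VA.vector_space_axioms])
  also have "\<dots> = sw (\<lambda>x y. sw (\<lambda>a b. \<tau> a b y) x) 1" by (rule coass[OF T tri, symmetric])
  also have "\<dots> = sw (\<lambda>a b. sw (\<lambda>p q. \<tau> a (b * p) q) 1) 1" by (rule U2[OF T tri, symmetric])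
  also have "\<dots> = sw (\<lambda>p q. sw (\<lambda>a b. \<tau> a (b * p) q) 1) 1" by (rule sw_swap)
  also have "\<dots> = sw (\<lambda>p q. \<beta> (htel \<phi> * p) q) 1"
    unfolding \<tau>_def htel_def
    by (simp add: lin_sw_push[where L="\<lambda>z. z * p" for p] distrib_right sc_multL
          lin_sw_push[where L="\<lambda>z. \<beta> z q" for q] R sw_scl[OF VA.vector_space_axioms])
  finally show ?thesis .
qed

lemma Hs_yq:
  fixes scl :: "'k \<Rightarrow> 'a::ab_group_add \<Rightarrow> 'a"
  assumes T: "tgt scl" and B: "bilS scl \<beta>" and P: "linS (*) \<phi>"
  shows "sw \<beta> (hsel \<phi>) = sw (\<lambda>p q. \<beta> p (hsel \<phi> * q)) 1"
proof -
  interpret VA: vector_space scl using tgt_vs'[OF T] .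
  note R = bilS_rules[OF B] linS_add[OF P] linS_sc[OF P] VA.scale_right_distrib VA.scale_left_distrib
  define \<tau> where "\<tau> = (\<lambda>p q x. scl (\<phi> x) (\<beta> p q))"
  have tri: "triS scl \<tau>" unfolding \<tau>_def by (simp add: lin_unfold lin_H R)
  have "sw \<beta> (hsel \<phi>) = sw (\<lambda>a b. scl (\<phi> b) (sw \<beta> a)) 1"
    unfolding hsel_def by (rule sw_push_sc_arg[OF T B])
  also have "\<dots> = sw (\<lambda>x y. sw (\<lambda>a b. \<tau> a b y) x) 1"
    unfolding \<tau>_def by (simp add: sw_scl[OF VA.vector_space_axioms])
  also have "\<dots> = sw (\<lambda>a b. sw (\<lambda>p q. \<tau> p (a * q) b) 1) 1" by (rule U1[OF T tri, symmetric])
  also have "\<dots> = sw (\<lambda>p q. sw (\<lambda>a b. \<tau> p (a * q) b) 1) 1" by (rule sw_swap)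
  also have "\<dots> = sw (\<lambda>p q. \<beta> p (hsel \<phi> * q)) 1"
    unfolding \<tau>_def hsel_def
    by (simp add: lin_sw_push[where L="\<lambda>z. z * q" for q] distrib_right sc_multL
          lin_sw_push[where L="\<lambda>z. \<beta> p z" for p] R sw_scl[OF VA.vector_space_axioms])
  finally show ?thesis .
qed

lemma Hs_qy:
  fixes scl :: "'k \<Rightarrow> 'a::ab_group_add \<Rightarrow> 'a"
  assumes T: "tgt scl" and B: "bilS scl \<beta>" and P: "linS (*) \<phi>"
  shows "sw \<beta> (hsel \<phi>) = sw (\<lambda>p q. \<beta> p (q * hsel \<phi>)) 1"
proof -
  interpret VA: vector_space scl using tgt_vs'[OF T] .
  note R = bilS_rules[OF B] linS_add[OF P] linS_sc[OF P] VA.scale_right_distrib VA.scale_left_distrib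
  define \<tau> where "\<tau> = (\<lambda>p q x. scl (\<phi> x) (\<beta> p q))"
  have tri: "triS scl \<tau>" unfolding \<tau>_def by (simp add: lin_unfold lin_H R)
  have "sw \<beta> (hsel \<phi>) = sw (\<lambda>a b. scl (\<phi> b) (sw \<beta> a)) 1"
    unfolding hsel_def by (rule sw_push_sc_arg[OF T B])
  also have "\<dots> = sw (\<lambda>x y. sw (\<lambda>a b. \<tau> a b y) x) 1"
    unfolding \<tau>_def by (simp add: sw_scl[OF VA.vector_space_axioms])
  also have "\<dots> = sw (\<lambda>a b. sw (\<lambda>p q. \<tau> a (b * p) q) 1) 1" by (rule U2[OF T tri, symmetric])
  also have "\<dots> = sw (\<lambda>p q. \<beta> p (q * hsel \<phi>)) 1"
    unfolding \<tau>_def hsel_def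
    by (simp add: lin_sw_push[where L="\<lambda>z. q * z" for q] distrib_left sc_multR
          lin_sw_push[where L="\<lambda>z. \<beta> p z" for p] R sw_scl[OF VA.vector_space_axioms])
  finally show ?thesis .
qed

lemma et_htel: "et v = htel (\<lambda>a. \<epsilon> (a * v))" unfolding et_def htel_def ..
lemma es_hsel: "es x = hsel (\<lambda>b. \<epsilon> (x * b))" unfolding es_def hsel_def ..
lemma lin_eps_r: "linS (*) (\<lambda>a. \<epsilon> (a * v))" by (simp add: lin_unfold lin_H)
lemma lin_eps_l: "linS (*) (\<lambda>b. \<epsilon> (x * b))" by (simp add: lin_unfold lin_H)

end

context whopf begin
interpretation V: vector_space sc by (rule vsH)

lemma F3a:
  fixes scl :: "'k \<Rightarrow> 'a::ab_group_add \<Rightarrow> 'a"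
  assumes T: "tgt scl" and B: "bilS scl \<beta>"
  shows "sw (\<lambda>x y. \<beta> x (et y)) h = sw (\<lambda>p q. \<beta> (p * h) q) 1"
proof -
  interpret VA: vector_space scl using tgt_vs'[OF T] .
  note R = bilS_rules[OF B] VA.scale_right_distrib VA.scale_left_distrib sw_scl[OF VA.vector_space_axioms, symmetric] VA.scale_scale mult_ac
  define G where "G = (\<lambda>x y. sw (\<lambda>a b. scl (\<epsilon> (a * y)) (\<beta> x b)) 1)"
  have bG: "bilS scl G" unfolding G_def by (simp add: lin_unfold lin_H R)
  define \<tau> where "\<tau> = (\<lambda>X Y Z. sw (\<lambda>c d. scl (\<epsilon> (Y * d)) (\<beta> (X * c) Z)) h)"
  have tri: "triS scl \<tau>" unfolding \<tau>_def by (simp add: lin_unfold lin_H R)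
  have "sw (\<lambda>x y. \<beta> x (et y)) h = sw G h"
    unfolding G_def et_def
    by (simp add: lin_sw_push[where L="\<lambda>z. \<beta> x z" for x] R)
  also have "\<dots> = sw (\<lambda>p' q'. sw (\<lambda>c d. G (p' * c) (q' * d)) h) 1" by (rule F0a[OF T bG, symmetric])
  also have "\<dots> = sw (\<lambda>p' q'. sw (\<lambda>a b. \<tau> p' (a * q') b) 1) 1"
    unfolding G_def \<tau>_def by (rule sw_cong, simp only: mult.assoc, rule sw_swap)
  also have "\<dots> = sw (\<lambda>a b. sw (\<lambda>p' q'. \<tau> p' (a * q') b) 1) 1" by (rule sw_swap)
  also have "\<dots> = sw (\<lambda>x y. sw (\<lambda>X Y. \<tau> X Y y) x) 1" by (rule U1[OF T tri])
  also have "\<dots> = sw (\<lambda>x y. \<beta> (x * h) y) 1"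
  proof (rule sw_cong)
    fix x y
    define \<gamma> where "\<gamma> = (\<lambda>U W. scl (\<epsilon> W) (\<beta> U y))"
    have bg: "bilS scl \<gamma>" unfolding \<gamma>_def by (simp add: lin_unfold lin_H R)
    have "sw (\<lambda>X Y. \<tau> X Y y) x = sw (\<lambda>X Y. sw (\<lambda>c d. \<gamma> (X * c) (Y * d)) h) x"
      unfolding \<tau>_def \<gamma>_def ..
    also have "\<dots> = sw \<gamma> (x * h)" by (rule sw_mult_arg[OF T bg, symmetric])
    also have "\<dots> = \<beta> (x * h) y" unfolding \<gamma>_def
      by (rule counitR_gen) (simp add: lin_unfold R)
    finally show "sw (\<lambda>X Y. \<tau> X Y y) x = \<beta> (x * h) y" .
  qed
  finally show ?thesis .
qed


lemma F3b:
  fixes scl :: "'k \<Rightarrow> 'a::ab_group_add \<Rightarrow> 'a"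
  assumes T: "tgt scl" and B: "bilS scl \<beta>"
  shows "sw (\<lambda>x y. \<beta> (es x) y) h = sw (\<lambda>p q. \<beta> p (h * q)) 1"
proof -
  interpret VA: vector_space scl using tgt_vs'[OF T] .
  note R = bilS_rules[OF B] VA.scale_right_distrib VA.scale_left_distrib sw_scl[OF VA.vector_space_axioms, symmetric] VA.scale_scale mult_ac
  define G where "G = (\<lambda>x y. sw (\<lambda>a b. scl (\<epsilon> (x * b)) (\<beta> a y)) 1)"
  have bG: "bilS scl G" unfolding G_def by (simp add: lin_unfold lin_H R)
  define \<tau> where "\<tau> = (\<lambda>X Y Z. sw (\<lambda>c d. scl (\<epsilon> (c * Y)) (\<beta> X (d * Z))) h)"
  have tri: "triS scl \<tau>" unfolding \<tau>_def by (simp add: lin_unfold lin_H R)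
  have "sw (\<lambda>x y. \<beta> (es x) y) h = sw G h"
    unfolding G_def es_def
    by (simp add: lin_sw_push[where L="\<lambda>z. \<beta> z y" for y] R)
  also have "\<dots> = sw (\<lambda>c d. sw (\<lambda>p' q'. G (c * p') (d * q')) 1) h" by (rule F0b[OF T bG, symmetric])
  also have "\<dots> = sw (\<lambda>p' q'. sw (\<lambda>c d. G (c * p') (d * q')) h) 1" by (rule sw_swap)
  also have "\<dots> = sw (\<lambda>p' q'. sw (\<lambda>a b. \<tau> a (p' * b) q') 1) 1"
    unfolding G_def \<tau>_def by (rule sw_cong, simp only: mult.assoc, rule sw_swap)
  also have "\<dots> = sw (\<lambda>x y. sw (\<lambda>X Y. \<tau> X Y y) x) 1" by (rule U1[OF T tri])
  also have "\<dots> = sw (\<lambda>x y. sw (\<lambda>b c. \<tau> x b c) y) 1" by (rule coass[OF T tri])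
  also have "\<dots> = sw (\<lambda>x y. \<beta> x (h * y)) 1"
  proof (rule sw_cong)
    fix x y
    define \<gamma> where "\<gamma> = (\<lambda>U W. scl (\<epsilon> U) (\<beta> x W))"
    have bg: "bilS scl \<gamma>" unfolding \<gamma>_def by (simp add: lin_unfold lin_H R)
    have "sw (\<lambda>b c. \<tau> x b c) y = sw (\<lambda>c d. sw (\<lambda>Y Z. \<gamma> (c * Y) (d * Z)) y) h"
      unfolding \<tau>_def \<gamma>_def by (rule sw_swap)
    also have "\<dots> = sw \<gamma> (h * y)" by (rule sw_mult_arg[OF T bg, symmetric])
    also have "\<dots> = \<beta> x (h * y)" unfolding \<gamma>_def
      by (rule counitL_gen) (simp add: lin_unfold R)
    finally show "sw (\<lambda>b c. \<tau> x b c) y = \<beta> x (h * y)" .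
  qed
  finally show ?thesis .
qed

lemma F4: "es x * et v = et v * es x"
proof -
  define \<beta> where "\<beta> = (\<lambda>a b. sc (\<epsilon> (x * b)) a)"
  have B: "bilS sc \<beta>" unfolding \<beta>_def by (simp add: lin_unfold lin_H)
  have "sw \<beta> (et v) = es x * et v"
    unfolding et_htel using Ht_pz[OF tgtH B lin_eps_r]
    by (simp add: \<beta>_def es_def sw_multR[symmetric] sc_multL)
  moreover have "sw \<beta> (et v) = et v * es x"
    unfolding et_htel using Ht_zp[OF tgtH B lin_eps_r]
    by (simp add: \<beta>_def es_def sw_multL[symmetric] sc_multR)
  ultimately show ?thesis by simp
qed

lemma F5a: "et (y * et v) = et (y * v)"
  unfolding et_def[of "y * et v"] et_def[of "y * v"]
  by (rule sw_cong) (simp add: mult.assoc[symmetric] F1a)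

lemma F5b: "es (es x * g) = es (x * g)"
  unfolding es_def[of "es x * g"] es_def[of "x * g"]
  by (rule sw_cong) (simp add: mult.assoc F1b)

lemma F6a: "et (y * et v) = sw (\<lambda>a b. a * et v * S b) y"
proof -
  have b1: "bilS sc (\<lambda>a b. a * S b)" by (simp add: lin_unfold lin_H)
  have "et (y * et v) = sw (\<lambda>a b. a * S b) (y * et v)" by (simp add: S1')
  also have "\<dots> = sw (\<lambda>a b. sw (\<lambda>c d. (a * c) * S (b * d)) (et v)) y"
    by (rule sw_mult_arg[OF tgtH b1])
  also have "\<dots> = sw (\<lambda>a b. sw (\<lambda>p q. (a * p) * et v * S (b * q)) 1) y"
  proof (rule sw_cong)
    fix a b
    have bb: "bilS sc (\<lambda>c d. (a * c) * S (b * d))" by (simp add: lin_unfold lin_H)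
    show "sw (\<lambda>c d. (a * c) * S (b * d)) (et v) = sw (\<lambda>p q. (a * p) * et v * S (b * q)) 1"
      unfolding et_htel using Ht_pz[OF tgtH bb lin_eps_r] by (simp add: mult.assoc)
  qed
  also have "\<dots> = sw (\<lambda>a b. a * et v * S b) y"
    by (rule F0b[OF tgtH, of "\<lambda>X W. X * et v * S W"]) (simp add: lin_unfold lin_H)
  finally show ?thesis .
qed

lemma F6b: "es (es x * g) = sw (\<lambda>a b. S a * es x * b) g"
proof -
  have b1: "bilS sc (\<lambda>a b. S a * b)" by (simp add: lin_unfold lin_H)
  have "es (es x * g) = sw (\<lambda>a b. S a * b) (es x * g)" by (simp add: S2')
  also have "\<dots> = sw (\<lambda>a b. sw (\<lambda>c d. S (a * c) * (b * d)) g) (es x)"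
    by (rule sw_mult_arg[OF tgtH b1])
  also have "\<dots> = sw (\<lambda>p q. sw (\<lambda>c d. S (p * c) * (es x * q * d)) g) 1"
  proof -
    have bb: "bilS sc (\<lambda>a b. sw (\<lambda>c d. S (a * c) * (b * d)) g)" by (simp add: lin_unfold lin_H)
    show ?thesis unfolding es_hsel using Hs_yq[OF tgtH bb lin_eps_l] by (simp add: mult.assoc)
  qed
  also have "\<dots> = sw (\<lambda>a b. S a * es x * b) g"
    using F0a[OF tgtH, of "\<lambda>X W. S X * es x * W" g] by (simp add: lin_unfold lin_H mult.assoc)
  finally show ?thesis .
qed

lemma F7a: "sw (\<lambda>a b. S a * et b) x = S x"
proof -
  have tri: "triS sc (\<lambda>a b c. S a * b * S c)" by (simp add: lin_unfold lin_H)
  have "S x = sw (\<lambda>x' y. sw (\<lambda>a b. S a * b * S y) x') x" by (rule S3')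
  also have "\<dots> = sw (\<lambda>a y. sw (\<lambda>b c. S a * b * S c) y) x" by (rule coass[OF tgtH tri])
  also have "\<dots> = sw (\<lambda>a b. S a * et b) x"
    by (simp add: S1'[symmetric] sw_multL[symmetric] mult.assoc)
  finally show ?thesis by simp
qed

lemma F7b: "sw (\<lambda>a b. es a * S b) x = S x"
proof -
  have "S x = sw (\<lambda>x' y. sw (\<lambda>a b. S a * b * S y) x') x" by (rule S3')
  also have "\<dots> = sw (\<lambda>a b. es a * S b) x"
    by (simp add: S2'[symmetric] sw_multR[symmetric])
  finally show ?thesis by simp
qed

end

context whopf begin
interpretation V: vector_space sc by (rule vsH)

lemma F56a: "et (y * v) = sw (\<lambda>a b. a * et v * S b) y"
  using F5a[of y v] F6a[of y v] by simp
lemma F56b: "es (x * g) = sw (\<lambda>a b. S a * es x * b) g"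
  using F5b[of x g] F6b[of x g] by simp

lemma et_add: "et (x + y) = et x + et y"
proof -
  have b: "bilS sc (\<lambda>a b. a * S b)" by (simp add: lin_unfold lin_H)
  show ?thesis using sw_add_arg[OF tgtH b] by (simp add: S1')
qed
lemma et_sc: "et (sc c x) = sc c (et x)"
proof -
  have b: "bilS sc (\<lambda>a b. a * S b)" by (simp add: lin_unfold lin_H)
  show ?thesis using sw_sc_arg[OF tgtH b] by (simp add: S1')
qed
lemma es_add: "es (x + y) = es x + es y"
proof -
  have b: "bilS sc (\<lambda>a b. S a * b)" by (simp add: lin_unfold lin_H)
  show ?thesis using sw_add_arg[OF tgtH b] by (simp add: S2')
qed
lemma es_sc: "es (sc c x) = sc c (es x)"
proof -
  have b: "bilS sc (\<lambda>a b. S a * b)" by (simp add: lin_unfold lin_H)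
  show ?thesis using sw_sc_arg[OF tgtH b] by (simp add: S2')
qed

lemmas lin_HE = lin_H et_add et_sc es_add es_sc

lemma antimult: "S (h * g) = S g * S h"
proof -
  have bX: "bilS sc (\<lambda>X Y. S X * et Y)" by (simp add: lin_unfold lin_HE)
  have "S (h * g) = sw (\<lambda>X Y. S X * et Y) (h * g)" by (simp add: F7a)
  also have "\<dots> = sw (\<lambda>a b. sw (\<lambda>c d. S (a * c) * et (b * d)) g) h"
    by (rule sw_mult_arg[OF tgtH bX])
  also have "\<dots> = sw (\<lambda>a b. sw (\<lambda>c d. S (a * c) * sw (\<lambda>p q. p * et d * S q) b) g) h"
    by (simp only: F56a)
  also have "\<dots> = sw (\<lambda>a b. sw (\<lambda>p q. sw (\<lambda>c d. S (a * c) * (p * et d * S q)) g) b) h"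
    by (rule sw_cong, simp only: sw_multL[symmetric], rule sw_swap)
  also have "\<dots> = sw (\<lambda>x q. sw (\<lambda>a p. sw (\<lambda>c d. S (a * c) * (p * et d * S q)) g) x) h"
    by (rule coass[OF tgtH, symmetric]) (simp add: lin_unfold lin_HE)
  also have "\<dots> = sw (\<lambda>x q. sw (\<lambda>a p. sw (\<lambda>w e. sw (\<lambda>c d1. S (a * c) * (p * d1) * (S e * S q)) w) g) x) h"
  proof (rule sw_cong, rule sw_cong)
    fix x q a p
    have "sw (\<lambda>c d. S (a * c) * (p * et d * S q)) g
        = sw (\<lambda>c d. sw (\<lambda>d1 d2. S (a * c) * (p * d1) * (S d2 * S q)) d) g"
      by (simp add: S1'[symmetric] sw_multL[symmetric] sw_multR[symmetric] mult.assoc)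
    also have "\<dots> = sw (\<lambda>w e. sw (\<lambda>c d1. S (a * c) * (p * d1) * (S e * S q)) w) g"
      by (rule coass[OF tgtH, symmetric]) (simp add: lin_unfold lin_HE)
    finally show "sw (\<lambda>c d. S (a * c) * (p * et d * S q)) g
        = sw (\<lambda>w e. sw (\<lambda>c d1. S (a * c) * (p * d1) * (S e * S q)) w) g" .
  qed
  also have "\<dots> = sw (\<lambda>x q. sw (\<lambda>w e. sw (\<lambda>a p. sw (\<lambda>c d1. S (a * c) * (p * d1) * (S e * S q)) w) x) g) h"
    by (rule sw_cong, rule sw_swap)
  also have "\<dots> = sw (\<lambda>x q. sw (\<lambda>w e. es (x * w) * (S e * S q)) g) h"
  proof (rule sw_cong, rule sw_cong)
    fix x q w e
    have bb: "bilS sc (\<lambda>X Y. S X * Y)" by (simp add: lin_unfold lin_HE)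
    have "sw (\<lambda>a p. sw (\<lambda>c d1. S (a * c) * (p * d1) * (S e * S q)) w) x
        = sw (\<lambda>a p. sw (\<lambda>c d1. S (a * c) * (p * d1)) w) x * (S e * S q)"
      by (simp add: sw_multR)
    also have "\<dots> = sw (\<lambda>X Y. S X * Y) (x * w) * (S e * S q)"
      by (simp add: sw_mult_arg[OF tgtH bb])
    also have "\<dots> = es (x * w) * (S e * S q)" by (simp add: S2')
    finally show "sw (\<lambda>a p. sw (\<lambda>c d1. S (a * c) * (p * d1) * (S e * S q)) w) x
        = es (x * w) * (S e * S q)" .
  qed
  also have "\<dots> = sw (\<lambda>x q. sw (\<lambda>a v. S a * et v * es x * S q) g) h"
  proof (rule sw_cong)
    fix x q
    have "sw (\<lambda>w e. es (x * w) * (S e * S q)) g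
        = sw (\<lambda>w e. sw (\<lambda>a b. S a * es x * b * (S e * S q)) w) g"
      by (simp add: F56b sw_multR)
    also have "\<dots> = sw (\<lambda>a v. sw (\<lambda>b e. S a * es x * b * (S e * S q)) v) g"
      by (rule coass[OF tgtH]) (simp add: lin_unfold lin_HE)
    also have "\<dots> = sw (\<lambda>a v. S a * es x * et v * S q) g"
      by (simp add: S1'[symmetric] sw_multL[symmetric] sw_multR[symmetric] mult.assoc)
    also have "\<dots> = sw (\<lambda>a v. S a * et v * es x * S q) g"
      by (simp add: mult.assoc F4)
    finally show "sw (\<lambda>w e. es (x * w) * (S e * S q)) g = sw (\<lambda>a v. S a * et v * es x * S q) g" .
  qed
  also have "\<dots> = sw (\<lambda>x q. S g * (es x * S q)) h"
    by (rule sw_cong) (simp add: mult.assoc[symmetric] sw_multR F7a)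
  also have "\<dots> = S g * S h" by (simp add: sw_multL F7b)
  finally show ?thesis .
qed

end

context whopf begin
interpretation V: vector_space sc by (rule vsH)

lemma S_sw: "S (sw A h) = sw (\<lambda>x y. S (A x y)) h"
  by (rule lin_sw_push) (simp add: S_add)

lemma F9a: assumes P: "linS (*) \<phi>" shows "S (htel \<phi>) = es (htel \<phi>)"
proof -
  have b: "bilS sc (\<lambda>a b. S a * b)" by (simp add: lin_unfold lin_H)
  have "es (htel \<phi>) = sw (\<lambda>a b. S a * b) (htel \<phi>)" by (simp add: S2')
  also have "\<dots> = sw (\<lambda>p q. S (p * htel \<phi>) * q) 1" by (rule Ht_pz[OF tgtH b P])
  also have "\<dots> = S (htel \<phi>) * es 1" by (simp add: antimult mult.assoc sw_multL S2')
  finally show ?thesis by (simp add: es1)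
qed

lemma F9b: assumes P: "linS (*) \<phi>" shows "S (hsel \<phi>) = et (hsel \<phi>)"
proof -
  have b: "bilS sc (\<lambda>a b. a * S b)" by (simp add: lin_unfold lin_H)
  have "et (hsel \<phi>) = sw (\<lambda>a b. a * S b) (hsel \<phi>)" by (simp add: S1')
  also have "\<dots> = sw (\<lambda>p q. p * S (hsel \<phi> * q)) 1" by (rule Hs_yq[OF tgtH b P])
  also have "\<dots> = et 1 * S (hsel \<phi>)" by (simp add: antimult mult.assoc[symmetric] sw_multR S1')
  finally show ?thesis by (simp add: et1)
qed

lemma ESp: "es h = sw (\<lambda>a b. sc (\<epsilon> (h * a)) (S b)) 1"
proof -
  have P: "linS (*) (\<lambda>a. \<epsilon> (h * a))" by (simp add: lin_unfold lin_H)
  have "sw (\<lambda>a b. sc (\<epsilon> (h * a)) (S b)) 1 = S (htel (\<lambda>a. \<epsilon> (h * a)))"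
    unfolding htel_def by (simp add: S_sw S_sc)
  also have "\<dots> = es (htel (\<lambda>a. \<epsilon> (h * a)))" by (rule F9a[OF P])
  also have "\<dots> = es h"
    unfolding es_def[of "htel _"] es_def[of h]
  proof (rule sw_cong)
    fix a b
    have "\<epsilon> (htel (\<lambda>a. \<epsilon> (h * a)) * b) = sw (\<lambda>p q. \<epsilon> (h * p) * \<epsilon> (q * b)) 1"
      unfolding htel_def
      by (simp add: lin_sw_push[where L="\<lambda>z. z * b"] distrib_right lin_sw_push[where L=\<epsilon>] eps_add
          sc_multL eps_sc)
    also have "\<dots> = \<epsilon> (h * b)" by (rule eps1_1)
    finally show "sc (\<epsilon> (htel (\<lambda>a. \<epsilon> (h * a)) * b)) a = sc (\<epsilon> (h * b)) a" by simp
  qed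
  finally show ?thesis by simp
qed

lemma ETp: "et h = sw (\<lambda>a b. sc (\<epsilon> (b * h)) (S a)) 1"
proof -
  have P: "linS (*) (\<lambda>b. \<epsilon> (b * h))" by (simp add: lin_unfold lin_H)
  have "sw (\<lambda>a b. sc (\<epsilon> (b * h)) (S a)) 1 = S (hsel (\<lambda>b. \<epsilon> (b * h)))"
    unfolding hsel_def by (simp add: S_sw S_sc)
  also have "\<dots> = et (hsel (\<lambda>b. \<epsilon> (b * h)))" by (rule F9b[OF P])
  also have "\<dots> = et h"
    unfolding et_def[of "hsel _"] et_def[of h]
  proof (rule sw_cong)
    fix a b
    have "\<epsilon> (a * hsel (\<lambda>b. \<epsilon> (b * h))) = sw (\<lambda>p q. \<epsilon> (a * p) * \<epsilon> (q * h)) 1"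
      unfolding hsel_def
      by (simp add: lin_sw_push[where L="\<lambda>z. a * z"] distrib_left lin_sw_push[where L=\<epsilon>] eps_add
          sc_multR eps_sc mult.commute)
    also have "\<dots> = \<epsilon> (a * h)" by (rule eps1_1)
    finally show "sc (\<epsilon> (a * hsel (\<lambda>b. \<epsilon> (b * h)))) b = sc (\<epsilon> (a * h)) b" by simp
  qed
  finally show ?thesis by simp
qed

end

context whopf begin
interpretation V: vector_space sc by (rule vsH)

lemma WH3:
  fixes scl :: "'k \<Rightarrow> 'a::ab_group_add \<Rightarrow> 'a"
  assumes T: "tgt scl" and B: "bilS scl \<beta>"
  shows "sw (\<lambda>x y. sw (\<lambda>a b. \<beta> x (S a * b)) y) h = sw (\<lambda>p q. \<beta> (h * p) (S q)) 1"
proof -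
  interpret VA: vector_space scl using tgt_vs'[OF T] .
  note R = bilS_rules[OF B] VA.scale_right_distrib VA.scale_left_distrib sw_scl[OF VA.vector_space_axioms, symmetric] VA.scale_scale mult_ac
  define G where "G = (\<lambda>x y. sw (\<lambda>p q. scl (\<epsilon> (y * p)) (\<beta> x (S q))) 1)"
  have bG: "bilS scl G" unfolding G_def by (simp add: lin_unfold lin_H R)
  define \<tau> where "\<tau> = (\<lambda>A B C. sw (\<lambda>x y. scl (\<epsilon> (y * B)) (\<beta> (x * A) (S C))) h)"
  have tri: "triS scl \<tau>" unfolding \<tau>_def by (simp add: lin_unfold lin_H R)
  have "sw (\<lambda>x y. sw (\<lambda>a b. \<beta> x (S a * b)) y) h = sw (\<lambda>x y. \<beta> x (es y)) h"
    by (simp add: S2'[symmetric] lin_sw_push[where L="\<beta> x" for x] R)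
  also have "\<dots> = sw G h"
    unfolding G_def ESp by (simp add: lin_sw_push[where L="\<beta> x" for x] R)
  also have "\<dots> = sw (\<lambda>x y. sw (\<lambda>p' q'. G (x * p') (y * q')) 1) h" by (rule F0b[OF T bG, symmetric])
  also have "\<dots> = sw (\<lambda>p' q'. sw (\<lambda>x y. G (x * p') (y * q')) h) 1" by (rule sw_swap)
  also have "\<dots> = sw (\<lambda>p' q'. sw (\<lambda>p q. \<tau> p' (q' * p) q) 1) 1"
    unfolding G_def \<tau>_def by (rule sw_cong, simp only: mult.assoc, rule sw_swap)
  also have "\<dots> = sw (\<lambda>w e. sw (\<lambda>A B. \<tau> A B e) w) 1" by (rule U2[OF T tri])
  also have "\<dots> = sw (\<lambda>w e. \<beta> (h * w) (S e)) 1"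
  proof (rule sw_cong)
    fix w e
    define \<gamma> where "\<gamma> = (\<lambda>U W. scl (\<epsilon> W) (\<beta> U (S e)))"
    have bg: "bilS scl \<gamma>" unfolding \<gamma>_def by (simp add: lin_unfold lin_H R)
    have "sw (\<lambda>A B. \<tau> A B e) w = sw (\<lambda>x y. sw (\<lambda>A B. \<gamma> (x * A) (y * B)) w) h"
      unfolding \<tau>_def \<gamma>_def by (rule sw_swap)
    also have "\<dots> = sw \<gamma> (h * w)" by (rule sw_mult_arg[OF T bg, symmetric])
    also have "\<dots> = \<beta> (h * w) (S e)" unfolding \<gamma>_def
      by (rule counitR_gen) (simp add: lin_unfold R)
    finally show "sw (\<lambda>A B. \<tau> A B e) w = \<beta> (h * w) (S e)" .
  qed
  finally show ?thesis .
qed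

lemma WH4:
  fixes scl :: "'k \<Rightarrow> 'a::ab_group_add \<Rightarrow> 'a"
  assumes T: "tgt scl" and B: "bilS scl \<beta>"
  shows "sw (\<lambda>x y. sw (\<lambda>a b. \<beta> (a * S b) y) x) h = sw (\<lambda>p q. \<beta> (S p) (q * h)) 1"
proof -
  interpret VA: vector_space scl using tgt_vs'[OF T] .
  note R = bilS_rules[OF B] VA.scale_right_distrib VA.scale_left_distrib sw_scl[OF VA.vector_space_axioms, symmetric] VA.scale_scale mult_ac
  define G where "G = (\<lambda>x y. sw (\<lambda>p q. scl (\<epsilon> (q * x)) (\<beta> (S p) y)) 1)"
  have bG: "bilS scl G" unfolding G_def by (simp add: lin_unfold lin_H R)
  define \<tau> where "\<tau> = (\<lambda>A B C. sw (\<lambda>x y. scl (\<epsilon> (B * x)) (\<beta> (S A) (C * y))) h)"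
  have tri: "triS scl \<tau>" unfolding \<tau>_def by (simp add: lin_unfold lin_H R)
  have "sw (\<lambda>x y. sw (\<lambda>a b. \<beta> (a * S b) y) x) h = sw (\<lambda>x y. \<beta> (et x) y) h"
    by (simp add: S1'[symmetric] lin_sw_push[where L="\<lambda>z. \<beta> z y" for y] R)
  also have "\<dots> = sw G h"
    unfolding G_def ETp by (simp add: lin_sw_push[where L="\<lambda>z. \<beta> z y" for y] R)
  also have "\<dots> = sw (\<lambda>p' q'. sw (\<lambda>x y. G (p' * x) (q' * y)) h) 1" by (rule F0a[OF T bG, symmetric])
  also have "\<dots> = sw (\<lambda>p q. sw (\<lambda>p' q'. \<tau> p (q * p') q') 1) 1"
  proof -
    have "sw (\<lambda>p' q'. sw (\<lambda>x y. G (p' * x) (q' * y)) h) 1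
        = sw (\<lambda>p' q'. sw (\<lambda>p q. sw (\<lambda>x y. scl (\<epsilon> (q * p' * x)) (\<beta> (S p) (q' * y))) h) 1) 1"
      unfolding G_def by (rule sw_cong, simp only: mult.assoc, rule sw_swap)
    also have "\<dots> = sw (\<lambda>p q. sw (\<lambda>p' q'. sw (\<lambda>x y. scl (\<epsilon> (q * p' * x)) (\<beta> (S p) (q' * y))) h) 1) 1"
      by (rule sw_swap)
    finally show ?thesis unfolding \<tau>_def by (simp only: mult.assoc)
  qed
  also have "\<dots> = sw (\<lambda>w e. sw (\<lambda>A B. \<tau> A B e) w) 1" by (rule U2[OF T tri])
  also have "\<dots> = sw (\<lambda>A v. sw (\<lambda>B C. \<tau> A B C) v) 1" by (rule coass[OF T tri])
  also have "\<dots> = sw (\<lambda>A v. \<beta> (S A) (v * h)) 1"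
  proof (rule sw_cong)
    fix A v
    define \<gamma> where "\<gamma> = (\<lambda>U W. scl (\<epsilon> U) (\<beta> (S A) W))"
    have bg: "bilS scl \<gamma>" unfolding \<gamma>_def by (simp add: lin_unfold lin_H R)
    have "sw (\<lambda>B C. \<tau> A B C) v = sw (\<lambda>B C. sw (\<lambda>x y. \<gamma> (B * x) (C * y)) h) v"
      unfolding \<tau>_def \<gamma>_def ..
    also have "\<dots> = sw \<gamma> (v * h)" by (rule sw_mult_arg[OF T bg, symmetric])
    also have "\<dots> = \<beta> (S A) (v * h)" unfolding \<gamma>_def
      by (rule counitL_gen) (simp add: lin_unfold R)
    finally show "sw (\<lambda>B C. \<tau> A B C) v = \<beta> (S A) (v * h)" .
  qed
  finally show ?thesis .
qed

end

instantiation list :: (type) monoid_add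
begin
definition zero_list_def: "0 = []"
definition plus_list_def: "(xs::'a list) + ys = xs @ ys"
instance by standard (auto simp: zero_list_def plus_list_def)
end

lemma poly_decomp: "(p :: ('a \<Rightarrow>\<^sub>0 'b::comm_monoid_add)) = (\<Sum>u\<in>Poly_Mapping.keys p. Poly_Mapping.single u (Poly_Mapping.lookup p u))"
proof (rule poly_mapping_eqI)
  fix k
  show "Poly_Mapping.lookup p k = Poly_Mapping.lookup (\<Sum>u\<in>Poly_Mapping.keys p. Poly_Mapping.single u (Poly_Mapping.lookup p u)) k"
  proof (cases "k \<in> Poly_Mapping.keys p")
    case True
    have "(\<Sum>u\<in>Poly_Mapping.keys p. (Poly_Mapping.lookup p u when u = k)) = Poly_Mapping.lookup p k"
      using True by (simp add: sum.delta' when_def)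
    thus ?thesis by (simp add: lookup_sum lookup_single)
  next
    case False
    have "(\<Sum>u\<in>Poly_Mapping.keys p. (Poly_Mapping.lookup p u when u = k)) = 0"
      using False by (intro sum.neutral) (auto simp: when_def)
    thus ?thesis using False by (simp add: lookup_sum lookup_single in_keys_iff)
  qed
qed

lemma single_nil_one: "Poly_Mapping.single [] (1::'b::semiring_1) = 1"
proof -
  have "Poly_Mapping.single (0::'c list) (1::'b) = 1" by (rule single_one)
  thus ?thesis by (simp only: zero_list_def)
qed

lemma fmul_eq: "fmul p q = p * q"
proof -
  have "p * q = (\<Sum>u\<in>Poly_Mapping.keys p. Poly_Mapping.single u (Poly_Mapping.lookup p u)) *
                (\<Sum>v\<in>Poly_Mapping.keys q. Poly_Mapping.single v (Poly_Mapping.lookup q v))"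
    using poly_decomp[of p] poly_decomp[of q] by simp
  also have "\<dots> = fmul p q"
    unfolding fmul_def by (simp add: sum_distrib_left sum_distrib_right mult_single plus_list_def sum.swap[of _ "Poly_Mapping.keys q"])
  finally show ?thesis by simp
qed

lemma fsc_eq: "fsc c p = Poly_Mapping.single [] c * p"
  unfolding fsc_def using mult_map_scale_conv_mult[of c p] by (simp add: zero_list_def)

lemma funit_eq: "funit = 1"
  unfolding funit_def by (rule single_nil_one)

lemma single_nil_mult: "Poly_Mapping.single [] (a::'k::field) * Poly_Mapping.single [] b = Poly_Mapping.single [] (a * b)"
  by (simp add: mult_single plus_list_def)

lemma single_nil_comm: "Poly_Mapping.single [] (c::'k::field) * p = p * Poly_Mapping.single [] c"
proof -
  have "\<And>u a. Poly_Mapping.single [] c * Poly_Mapping.single u a = Poly_Mapping.single u a * Poly_Mapping.single [] c"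
    by (simp add: mult_single plus_list_def mult.commute)
  hence "Poly_Mapping.single [] c * (\<Sum>u\<in>Poly_Mapping.keys p. Poly_Mapping.single u (Poly_Mapping.lookup p u))
       = (\<Sum>u\<in>Poly_Mapping.keys p. Poly_Mapping.single u (Poly_Mapping.lookup p u)) * Poly_Mapping.single [] c"
    unfolding sum_distrib_left sum_distrib_right by (intro sum.cong refl) blast
  thus ?thesis using poly_decomp[of p] by simp
qed

lemma vs_fsc: "vector_space (fsc :: 'k::field \<Rightarrow> ('h, 'k) free_alg \<Rightarrow> ('h, 'k) free_alg)"
  by unfold_locales (simp_all add: fsc_eq distrib_left distrib_right single_add mult.assoc[symmetric]
      single_nil_mult single_nil_one)

lemma fideal_add': "p \<in> fideal R \<Longrightarrow> q \<in> fideal R \<Longrightarrow> p + q \<in> fideal R" by (rule fideal.add)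

lemma fideal_sum: "finite X \<Longrightarrow> (\<And>x. x \<in> X \<Longrightarrow> g x \<in> fideal R) \<Longrightarrow> (\<Sum>x\<in>X. g x) \<in> fideal R"
  by (induction X rule: finite_induct) (auto intro: fideal.zero fideal.add)

lemma fideal_mono_single:
  assumes "p \<in> fideal R"
  shows "Poly_Mapping.single u c * p * Poly_Mapping.single v d \<in> fideal R"
  using assms
proof (induction p rule: fideal.induct)
  case zero then show ?case by (simp add: fideal.zero)
next
  case (gen r u' c')
  define su where "su = Poly_Mapping.single u c"
  define su' where "su' = Poly_Mapping.single u' c'"
  have e1: "Poly_Mapping.single v' 1 * Poly_Mapping.single v d = Poly_Mapping.single [] d * Poly_Mapping.single (v' @ v) 1" for v'
    by (simp add: mult_single plus_list_def)
  have e2: "su * su' * Poly_Mapping.single [] d = Poly_Mapping.single (u @ u') (c * c' * d)"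
    unfolding su_def su'_def by (simp add: mult_single plus_list_def)
  have "su * (su' * r * Poly_Mapping.single v' 1) * Poly_Mapping.single v d
      = su * su' * r * (Poly_Mapping.single v' 1 * Poly_Mapping.single v d)" for v'
    by (simp only: mult.assoc)
  also have "\<dots> v' = su * su' * (r * Poly_Mapping.single [] d) * Poly_Mapping.single (v' @ v) 1" for v'
    by (simp only: e1 mult.assoc)
  also have "\<dots> v' = su * su' * (Poly_Mapping.single [] d * r) * Poly_Mapping.single (v' @ v) 1" for v'
    by (simp only: single_nil_comm)
  also have "\<dots> v' = Poly_Mapping.single (u @ u') (c * c' * d) * r * Poly_Mapping.single (v' @ v) 1" for v'
    by (simp only: mult.assoc[symmetric] e2)
  finally have "Poly_Mapping.single u c * (Poly_Mapping.single u' c' * r * Poly_Mapping.single v' 1) * Poly_Mapping.single v d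
      = Poly_Mapping.single (u @ u') (c * c' * d) * r * Poly_Mapping.single (v' @ v) 1" for v'
    unfolding su_def su'_def .
  then show ?case using gen by (metis fideal.gen fmul_eq)
next
  case (add p q)
  then show ?case by (simp add: distrib_left distrib_right fideal.add)
qed

lemma fideal_mult:
  assumes "p \<in> fideal R"
  shows "P * p * Q \<in> fideal R"
proof -
  have "P * p * Q = (\<Sum>u\<in>Poly_Mapping.keys P. Poly_Mapping.single u (Poly_Mapping.lookup P u)) * p *
                (\<Sum>v\<in>Poly_Mapping.keys Q. Poly_Mapping.single v (Poly_Mapping.lookup Q v))"
    using poly_decomp[of P] poly_decomp[of Q] by simp
  also have "\<dots> = (\<Sum>u\<in>Poly_Mapping.keys P. \<Sum>v\<in>Poly_Mapping.keys Q.
      Poly_Mapping.single u (Poly_Mapping.lookup P u) * p * Poly_Mapping.single v (Poly_Mapping.lookup Q v))"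
    by (simp add: sum_distrib_left sum_distrib_right sum.swap[of _ "Poly_Mapping.keys Q"])
  also have "\<dots> \<in> fideal R"
    by (intro fideal_sum fideal_mono_single assms) auto
  finally show ?thesis .
qed


context whopf begin
interpretation V: vector_space sc by (rule vsH)

abbreviation II where "II \<equiv> fideal (par_rels sc \<Delta> S)"
abbreviation sg :: "'k \<Rightarrow> ('h, 'k) free_alg" where "sg c \<equiv> Poly_Mapping.single [] c"

definition adm :: "(('h, 'k) free_alg \<Rightarrow> 'k) \<Rightarrow> bool" where
  "adm f \<longleftrightarrow> (\<forall>p q. f (p + q) = f p + f q) \<and> (\<forall>c p. f (sg c * p) = c * f p) \<and> (\<forall>r\<in>II. f r = 0)"

lemma adm_add: "adm f \<Longrightarrow> f (p + q) = f p + f q" unfolding adm_def by blast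
lemma adm_sg: "adm f \<Longrightarrow> f (sg c * p) = c * f p" unfolding adm_def by blast
lemma adm_kill: "adm f \<Longrightarrow> r \<in> II \<Longrightarrow> f r = 0" unfolding adm_def by blast
lemma adm_zero: "adm f \<Longrightarrow> f 0 = 0"
proof -
  assume A: "adm f"
  have "f 0 + 0 = f 0 + f 0" using adm_add[OF A, of 0 0] by simp
  thus ?thesis by (metis add_left_cancel)
qed
lemma adm_neg: "adm f \<Longrightarrow> f (- p) = - f p"
proof -
  assume A: "adm f"
  have "f p + f (- p) = 0" using adm_add[OF A, of p "- p"] adm_zero[OF A] by simp
  thus ?thesis by (metis add.commute eq_neg_iff_add_eq_0)
qed
lemma adm_diff: "adm f \<Longrightarrow> f (p - q) = f p - f q"
  using adm_add[of f p "- q"] adm_neg[of f q] by simp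
lemma adm_sum_list: "adm f \<Longrightarrow> f (\<Sum>(x,y)\<leftarrow>t. B x y) = (\<Sum>(x,y)\<leftarrow>t. f (B x y))"
  by (rule linS_sum_list) (simp add: adm_add)
lemma adm_sw: "adm f \<Longrightarrow> f (sw A h) = sw (\<lambda>x y. f (A x y)) h"
  unfolding sw_def by (rule adm_sum_list)

lemma sw_multL_gen: "sw (\<lambda>x y. (m::'a::semiring_0) * A x y) h = m * sw A h"
  unfolding sw_def by (simp add: split_def sum_list_const_mult)
lemma sw_multR_gen: "sw (\<lambda>x y. A x y * (m::'a::semiring_0)) h = sw A h * m"
  unfolding sw_def by (simp add: split_def sum_list_mult_const)
lemma sw_diff: "sw (\<lambda>x y. (A x y::'a::ab_group_add) - B x y) h = sw A h - sw B h"
  unfolding sw_def by (simp add: split_def sum_list_subtractf)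

lemma adm_ctx: assumes "adm f" shows "adm (\<lambda>p. f (P * p * Q))"
  unfolding adm_def
proof (intro conjI allI ballI)
  fix p q show "f (P * (p + q) * Q) = f (P * p * Q) + f (P * q * Q)"
    by (simp add: distrib_left distrib_right adm_add[OF assms])
next
  fix c p
  have "P * (sg c * p) * Q = sg c * (P * p * Q)"
    by (simp add: mult.assoc[symmetric] single_nil_comm[of c P])
  thus "f (P * (sg c * p) * Q) = c * f (P * p * Q)" by (simp add: adm_sg[OF assms])
next
  fix r assume "r \<in> II"
  thus "f (P * r * Q) = 0" by (intro adm_kill[OF assms] fideal_mult)
qed

lemma adm_ctxL: "adm f \<Longrightarrow> adm (\<lambda>p. f (P * p))"
  using adm_ctx[of f P 1] by simp
lemma adm_ctxR: "adm f \<Longrightarrow> adm (\<lambda>p. f (p * Q))"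
  using adm_ctx[of f 1 Q] by simp

lemma subspace_II: "module.subspace fsc II"
proof -
  interpret VF: vector_space "fsc :: 'k \<Rightarrow> ('h, 'k) free_alg \<Rightarrow> ('h, 'k) free_alg" by (rule vs_fsc)
  show ?thesis
    unfolding VF.subspace_def
    by (auto intro: fideal.zero fideal.add simp: fsc_eq dest: fideal_mult[where P="sg c" and Q=1 for c])
qed

lemma par_eq_iff: "par_eq sc \<Delta> S p q \<longleftrightarrow> (\<forall>f. adm f \<longrightarrow> f p = f q)"
proof
  assume "par_eq sc \<Delta> S p q"
  hence "p - q \<in> II" unfolding par_eq_def .
  thus "\<forall>f. adm f \<longrightarrow> f p = f q" using adm_kill adm_diff by fastforce
next
  assume H: "\<forall>f. adm f \<longrightarrow> f p = f q"
  show "par_eq sc \<Delta> S p q"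
  proof (rule ccontr)
    assume "\<not> par_eq sc \<Delta> S p q"
    hence "p - q \<notin> II" unfolding par_eq_def .
    then obtain f where f: "\<forall>x y. f (x + y) = f x + f y" "\<forall>c x. f (fsc c x) = c * f x"
        "\<forall>x\<in>II. f x = 0" "f (p - q) = 1"
      using sep_functional[OF vs_fsc subspace_II] by blast
    have "adm f" unfolding adm_def using f(1,2,3) by (simp add: fsc_eq)
    hence "f p = f q" using H by blast
    moreover have "f (p - q) = f p - f q" using adm_diff[OF \<open>adm f\<close>] .
    ultimately show False using f(4) by simp
  qed
qed

lemma rel_in: "r \<in> par_rels sc \<Delta> S \<Longrightarrow> r \<in> II"
  using fideal.gen[of r "par_rels sc \<Delta> S" "[]" 1 "[]"]
  by (simp add: fmul_eq single_nil_one)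

lemma RL_add: "adm f \<Longrightarrow> f (gen (x + y)) = f (gen x) + f (gen y)"
proof -
  assume A: "adm f"
  have "gen (x + y) - gen x - gen y \<in> II" by (rule rel_in) (auto simp: par_rels_def)
  hence "f (gen (x + y) - gen x - gen y) = 0" by (rule adm_kill[OF A])
  thus ?thesis by (simp add: adm_diff[OF A] adm_add[OF A] algebra_simps)
qed

lemma RL_sc: "adm f \<Longrightarrow> f (gen (sc c x)) = c * f (gen x)"
proof -
  assume A: "adm f"
  have "gen (sc c x) - fsc c (gen x) \<in> II" by (rule rel_in) (auto simp: par_rels_def)
  hence "f (gen (sc c x) - fsc c (gen x)) = 0" by (rule adm_kill[OF A])
  thus ?thesis by (simp add: adm_diff[OF A] fsc_eq adm_sg[OF A])
qed

lemma RL_one: "adm f \<Longrightarrow> f (gen 1) = f 1"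
proof -
  assume A: "adm f"
  have "gen 1 - funit \<in> II" by (rule rel_in) (auto simp: par_rels_def)
  hence "f (gen 1 - funit) = 0" by (rule adm_kill[OF A])
  thus ?thesis by (simp add: adm_diff[OF A] funit_eq)
qed

lemma R1: "adm f \<Longrightarrow> sw (\<lambda>x y. f (gen h * gen x * gen (S y))) k = sw (\<lambda>x y. f (gen (h * x) * gen (S y))) k"
proof -
  assume A: "adm f"
  have "(\<Sum>(x,y)\<leftarrow>\<Delta> k. fmul (fmul (gen h) (gen x)) (gen (S y)) - fmul (gen (h * x)) (gen (S y))) \<in> II"
    by (rule rel_in) (unfold par_rels_def, blast)
  hence "f (sw (\<lambda>x y. gen h * gen x * gen (S y) - gen (h * x) * gen (S y)) k) = 0"
    by (simp add: sw_def fmul_eq adm_kill[OF A])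
  thus ?thesis by (simp add: adm_sw[OF A] adm_diff[OF A] sw_diff)
qed

lemma R2: "adm f \<Longrightarrow> sw (\<lambda>x y. f (gen h * gen (S x) * gen y)) k = sw (\<lambda>x y. f (gen (h * S x) * gen y)) k"
proof -
  assume A: "adm f"
  have "(\<Sum>(x,y)\<leftarrow>\<Delta> k. fmul (fmul (gen h) (gen (S x))) (gen y) - fmul (gen (h * S x)) (gen y)) \<in> II"
    by (rule rel_in) (unfold par_rels_def, blast)
  hence "f (sw (\<lambda>x y. gen h * gen (S x) * gen y - gen (h * S x) * gen y) k) = 0"
    by (simp add: sw_def fmul_eq adm_kill[OF A])
  thus ?thesis by (simp add: adm_sw[OF A] adm_diff[OF A] sw_diff)
qed

lemma R3: "adm f \<Longrightarrow> sw (\<lambda>x y. f (gen x * gen (S y) * gen k)) h = sw (\<lambda>x y. f (gen x * gen (S y * k))) h"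
proof -
  assume A: "adm f"
  have "(\<Sum>(x,y)\<leftarrow>\<Delta> h. fmul (fmul (gen x) (gen (S y))) (gen k) - fmul (gen x) (gen (S y * k))) \<in> II"
    by (rule rel_in) (unfold par_rels_def, blast)
  hence "f (sw (\<lambda>x y. gen x * gen (S y) * gen k - gen x * gen (S y * k)) h) = 0"
    by (simp add: sw_def fmul_eq adm_kill[OF A])
  thus ?thesis by (simp add: adm_sw[OF A] adm_diff[OF A] sw_diff)
qed

lemma R4: "adm f \<Longrightarrow> sw (\<lambda>x y. f (gen (S x) * gen y * gen k)) h = sw (\<lambda>x y. f (gen (S x) * gen (y * k))) h"
proof -
  assume A: "adm f"
  have "(\<Sum>(x,y)\<leftarrow>\<Delta> h. fmul (fmul (gen (S x)) (gen y)) (gen k) - fmul (gen (S x)) (gen (y * k))) \<in> II"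
    by (rule rel_in) (unfold par_rels_def, blast)
  hence "f (sw (\<lambda>x y. gen (S x) * gen y * gen k - gen (S x) * gen (y * k)) h) = 0"
    by (simp add: sw_def fmul_eq adm_kill[OF A])
  thus ?thesis by (simp add: adm_sw[OF A] adm_diff[OF A] sw_diff)
qed

lemma R5: "adm f \<Longrightarrow> f (gen h) = sw (\<lambda>x y. sw (\<lambda>a b. f (gen a * gen (S b) * gen y)) x) h"
proof -
  assume A: "adm f"
  have "gen h - (\<Sum>(x,y,z)\<leftarrow>delta2L \<Delta> h. fmul (fmul (gen x) (gen (S y))) (gen z)) \<in> II"
    by (rule rel_in) (unfold par_rels_def, blast)
  hence "f (gen h - sw (\<lambda>x y. sw (\<lambda>a b. gen a * gen (S b) * gen y) x) h) = 0"
    by (simp add: sum_delta2L fmul_eq adm_kill[OF A])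
  thus ?thesis by (simp add: adm_sw[OF A] adm_diff[OF A])
qed

end

context whopf begin
interpretation V: vector_space sc by (rule vsH)

lemma gen_add_ctx: "adm f \<Longrightarrow> f (P * gen (x + y) * Q) = f (P * gen x * Q) + f (P * gen y * Q)"
  using RL_add[OF adm_ctx[of f P Q], of x y] by simp
lemma gen_sc_ctx: "adm f \<Longrightarrow> f (P * gen (sc c x) * Q) = c * f (P * gen x * Q)"
  using RL_sc[OF adm_ctx[of f P Q], of c x] by simp
lemma gen_one_ctx: "adm f \<Longrightarrow> f (P * gen 1 * Q) = f (P * Q)"
  using RL_one[OF adm_ctx[of f P Q]] by simp

lemma gpa_0: "adm f \<Longrightarrow> f (gen (x + y) * Q) = f (gen x * Q) + f (gen y * Q)"
  using gen_add_ctx[of f "1" x y "Q"] by (simp add: mult.assoc)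
lemma gps_0: "adm f \<Longrightarrow> f (gen (sc c x) * Q) = c * f (gen x * Q)"
  using gen_sc_ctx[of f "1" c x "Q"] by (simp add: mult.assoc)
lemma gpa_0l: "adm f \<Longrightarrow> f (gen (x + y)) = f (gen x) + f (gen y)"
  using gen_add_ctx[of f "1" x y "1"] by (simp add: mult.assoc)
lemma gps_0l: "adm f \<Longrightarrow> f (gen (sc c x)) = c * f (gen x)"
  using gen_sc_ctx[of f "1" c x "1"] by (simp add: mult.assoc)
lemma gpa_1: "adm f \<Longrightarrow> f (A1 * (gen (x + y) * Q)) = f (A1 * (gen x * Q)) + f (A1 * (gen y * Q))"
  using gen_add_ctx[of f "A1" x y "Q"] by (simp add: mult.assoc)
lemma gps_1: "adm f \<Longrightarrow> f (A1 * (gen (sc c x) * Q)) = c * f (A1 * (gen x * Q))"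
  using gen_sc_ctx[of f "A1" c x "Q"] by (simp add: mult.assoc)
lemma gpa_1l: "adm f \<Longrightarrow> f (A1 * gen (x + y)) = f (A1 * gen x) + f (A1 * gen y)"
  using gen_add_ctx[of f "A1" x y "1"] by (simp add: mult.assoc)
lemma gps_1l: "adm f \<Longrightarrow> f (A1 * gen (sc c x)) = c * f (A1 * gen x)"
  using gen_sc_ctx[of f "A1" c x "1"] by (simp add: mult.assoc)
lemma gpa_2: "adm f \<Longrightarrow> f (A1 * (A2 * (gen (x + y) * Q))) = f (A1 * (A2 * (gen x * Q))) + f (A1 * (A2 * (gen y * Q)))"
  using gen_add_ctx[of f "A1 * A2" x y "Q"] by (simp add: mult.assoc)
lemma gps_2: "adm f \<Longrightarrow> f (A1 * (A2 * (gen (sc c x) * Q))) = c * f (A1 * (A2 * (gen x * Q)))"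
  using gen_sc_ctx[of f "A1 * A2" c x "Q"] by (simp add: mult.assoc)
lemma gpa_2l: "adm f \<Longrightarrow> f (A1 * (A2 * gen (x + y))) = f (A1 * (A2 * gen x)) + f (A1 * (A2 * gen y))"
  using gen_add_ctx[of f "A1 * A2" x y "1"] by (simp add: mult.assoc)
lemma gps_2l: "adm f \<Longrightarrow> f (A1 * (A2 * gen (sc c x))) = c * f (A1 * (A2 * gen x))"
  using gen_sc_ctx[of f "A1 * A2" c x "1"] by (simp add: mult.assoc)
lemma gpa_3: "adm f \<Longrightarrow> f (A1 * (A2 * (A3 * (gen (x + y) * Q)))) = f (A1 * (A2 * (A3 * (gen x * Q)))) + f (A1 * (A2 * (A3 * (gen y * Q))))"
  using gen_add_ctx[of f "A1 * A2 * A3" x y "Q"] by (simp add: mult.assoc)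
lemma gps_3: "adm f \<Longrightarrow> f (A1 * (A2 * (A3 * (gen (sc c x) * Q)))) = c * f (A1 * (A2 * (A3 * (gen x * Q))))"
  using gen_sc_ctx[of f "A1 * A2 * A3" c x "Q"] by (simp add: mult.assoc)
lemma gpa_3l: "adm f \<Longrightarrow> f (A1 * (A2 * (A3 * gen (x + y)))) = f (A1 * (A2 * (A3 * gen x))) + f (A1 * (A2 * (A3 * gen y)))"
  using gen_add_ctx[of f "A1 * A2 * A3" x y "1"] by (simp add: mult.assoc)
lemma gps_3l: "adm f \<Longrightarrow> f (A1 * (A2 * (A3 * gen (sc c x)))) = c * f (A1 * (A2 * (A3 * gen x)))"
  using gen_sc_ctx[of f "A1 * A2 * A3" c x "1"] by (simp add: mult.assoc)
lemma gpa_4: "adm f \<Longrightarrow> f (A1 * (A2 * (A3 * (A4 * (gen (x + y) * Q))))) = f (A1 * (A2 * (A3 * (A4 * (gen x * Q))))) + f (A1 * (A2 * (A3 * (A4 * (gen y * Q)))))"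
  using gen_add_ctx[of f "A1 * A2 * A3 * A4" x y "Q"] by (simp add: mult.assoc)
lemma gps_4: "adm f \<Longrightarrow> f (A1 * (A2 * (A3 * (A4 * (gen (sc c x) * Q))))) = c * f (A1 * (A2 * (A3 * (A4 * (gen x * Q)))))"
  using gen_sc_ctx[of f "A1 * A2 * A3 * A4" c x "Q"] by (simp add: mult.assoc)
lemma gpa_4l: "adm f \<Longrightarrow> f (A1 * (A2 * (A3 * (A4 * gen (x + y))))) = f (A1 * (A2 * (A3 * (A4 * gen x)))) + f (A1 * (A2 * (A3 * (A4 * gen y))))"
  using gen_add_ctx[of f "A1 * A2 * A3 * A4" x y "1"] by (simp add: mult.assoc)
lemma gps_4l: "adm f \<Longrightarrow> f (A1 * (A2 * (A3 * (A4 * gen (sc c x))))) = c * f (A1 * (A2 * (A3 * (A4 * gen x))))"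
  using gen_sc_ctx[of f "A1 * A2 * A3 * A4" c x "1"] by (simp add: mult.assoc)
lemma gpa_5: "adm f \<Longrightarrow> f (A1 * (A2 * (A3 * (A4 * (A5 * (gen (x + y) * Q)))))) = f (A1 * (A2 * (A3 * (A4 * (A5 * (gen x * Q)))))) + f (A1 * (A2 * (A3 * (A4 * (A5 * (gen y * Q))))))"
  using gen_add_ctx[of f "A1 * A2 * A3 * A4 * A5" x y "Q"] by (simp add: mult.assoc)
lemma gps_5: "adm f \<Longrightarrow> f (A1 * (A2 * (A3 * (A4 * (A5 * (gen (sc c x) * Q)))))) = c * f (A1 * (A2 * (A3 * (A4 * (A5 * (gen x * Q))))))"
  using gen_sc_ctx[of f "A1 * A2 * A3 * A4 * A5" c x "Q"] by (simp add: mult.assoc)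
lemma gpa_5l: "adm f \<Longrightarrow> f (A1 * (A2 * (A3 * (A4 * (A5 * gen (x + y)))))) = f (A1 * (A2 * (A3 * (A4 * (A5 * gen x))))) + f (A1 * (A2 * (A3 * (A4 * (A5 * gen y)))))"
  using gen_add_ctx[of f "A1 * A2 * A3 * A4 * A5" x y "1"] by (simp add: mult.assoc)
lemma gps_5l: "adm f \<Longrightarrow> f (A1 * (A2 * (A3 * (A4 * (A5 * gen (sc c x)))))) = c * f (A1 * (A2 * (A3 * (A4 * (A5 * gen x)))))"
  using gen_sc_ctx[of f "A1 * A2 * A3 * A4 * A5" c x "1"] by (simp add: mult.assoc)
lemma gpa_6: "adm f \<Longrightarrow> f (A1 * (A2 * (A3 * (A4 * (A5 * (A6 * (gen (x + y) * Q))))))) = f (A1 * (A2 * (A3 * (A4 * (A5 * (A6 * (gen x * Q))))))) + f (A1 * (A2 * (A3 * (A4 * (A5 * (A6 * (gen y * Q)))))))"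
  using gen_add_ctx[of f "A1 * A2 * A3 * A4 * A5 * A6" x y "Q"] by (simp add: mult.assoc)
lemma gps_6: "adm f \<Longrightarrow> f (A1 * (A2 * (A3 * (A4 * (A5 * (A6 * (gen (sc c x) * Q))))))) = c * f (A1 * (A2 * (A3 * (A4 * (A5 * (A6 * (gen x * Q)))))))"
  using gen_sc_ctx[of f "A1 * A2 * A3 * A4 * A5 * A6" c x "Q"] by (simp add: mult.assoc)
lemma gpa_6l: "adm f \<Longrightarrow> f (A1 * (A2 * (A3 * (A4 * (A5 * (A6 * gen (x + y))))))) = f (A1 * (A2 * (A3 * (A4 * (A5 * (A6 * gen x)))))) + f (A1 * (A2 * (A3 * (A4 * (A5 * (A6 * gen y))))))"
  using gen_add_ctx[of f "A1 * A2 * A3 * A4 * A5 * A6" x y "1"] by (simp add: mult.assoc)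
lemma gps_6l: "adm f \<Longrightarrow> f (A1 * (A2 * (A3 * (A4 * (A5 * (A6 * gen (sc c x))))))) = c * f (A1 * (A2 * (A3 * (A4 * (A5 * (A6 * gen x))))))"
  using gen_sc_ctx[of f "A1 * A2 * A3 * A4 * A5 * A6" c x "1"] by (simp add: mult.assoc)
lemma gpa_7: "adm f \<Longrightarrow> f (A1 * (A2 * (A3 * (A4 * (A5 * (A6 * (A7 * (gen (x + y) * Q)))))))) = f (A1 * (A2 * (A3 * (A4 * (A5 * (A6 * (A7 * (gen x * Q)))))))) + f (A1 * (A2 * (A3 * (A4 * (A5 * (A6 * (A7 * (gen y * Q))))))))"
  using gen_add_ctx[of f "A1 * A2 * A3 * A4 * A5 * A6 * A7" x y "Q"] by (simp add: mult.assoc)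
lemma gps_7: "adm f \<Longrightarrow> f (A1 * (A2 * (A3 * (A4 * (A5 * (A6 * (A7 * (gen (sc c x) * Q)))))))) = c * f (A1 * (A2 * (A3 * (A4 * (A5 * (A6 * (A7 * (gen x * Q))))))))"
  using gen_sc_ctx[of f "A1 * A2 * A3 * A4 * A5 * A6 * A7" c x "Q"] by (simp add: mult.assoc)
lemma gpa_7l: "adm f \<Longrightarrow> f (A1 * (A2 * (A3 * (A4 * (A5 * (A6 * (A7 * gen (x + y)))))))) = f (A1 * (A2 * (A3 * (A4 * (A5 * (A6 * (A7 * gen x))))))) + f (A1 * (A2 * (A3 * (A4 * (A5 * (A6 * (A7 * gen y)))))))"
  using gen_add_ctx[of f "A1 * A2 * A3 * A4 * A5 * A6 * A7" x y "1"] by (simp add: mult.assoc)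
lemma gps_7l: "adm f \<Longrightarrow> f (A1 * (A2 * (A3 * (A4 * (A5 * (A6 * (A7 * gen (sc c x)))))))) = c * f (A1 * (A2 * (A3 * (A4 * (A5 * (A6 * (A7 * gen x)))))))"
  using gen_sc_ctx[of f "A1 * A2 * A3 * A4 * A5 * A6 * A7" c x "1"] by (simp add: mult.assoc)
lemmas gen_pos_rules = gpa_0 gpa_0l gpa_1 gpa_1l gpa_2 gpa_2l gpa_3 gpa_3l gpa_4 gpa_4l gpa_5 gpa_5l gpa_6 gpa_6l gpa_7 gpa_7l gps_0 gps_0l gps_1 gps_1l gps_2 gps_2l gps_3 gps_3l gps_4 gps_4l gps_5 gps_5l gps_6 gps_6l gps_7 gps_7l

lemmas lin_Q0 = lin_unfold distrib_left distrib_right S_add S_sc sc_multL sc_multR sc_add sc_addL V.scale_scale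
  eps_add eps_sc sw_addf sw_cmult sw_multc sw_zero mult.assoc

end

context whopf begin
interpretation V: vector_space sc by (rule vsH)

definition quadS :: "('h \<Rightarrow> 'h \<Rightarrow> 'h \<Rightarrow> 'h \<Rightarrow> 'k) \<Rightarrow> bool" where
  "quadS T \<longleftrightarrow> (\<forall>b c d. linS (*) (\<lambda>a. T a b c d)) \<and> (\<forall>a c d. linS (*) (\<lambda>b. T a b c d))
     \<and> (\<forall>a b d. linS (*) (\<lambda>c. T a b c d)) \<and> (\<forall>a b c. linS (*) (\<lambda>d. T a b c d))"

lemma quadS_r0: "quadS T \<Longrightarrow> T (a + a') b c d = T a b c d + T a' b c d"
  unfolding quadS_def linS_def by auto
lemma quadS_r1: "quadS T \<Longrightarrow> T (sc k a) b c d = k * T a b c d"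
  unfolding quadS_def linS_def by auto
lemma quadS_r2: "quadS T \<Longrightarrow> T a (b + b') c d = T a b c d + T a b' c d"
  unfolding quadS_def linS_def by auto
lemma quadS_r3: "quadS T \<Longrightarrow> T a (sc k b) c d = k * T a b c d"
  unfolding quadS_def linS_def by auto
lemma quadS_r4: "quadS T \<Longrightarrow> T a b (c + c') d = T a b c d + T a b c' d"
  unfolding quadS_def linS_def by auto
lemma quadS_r5: "quadS T \<Longrightarrow> T a b (sc k c) d = k * T a b c d"
  unfolding quadS_def linS_def by auto
lemma quadS_r6: "quadS T \<Longrightarrow> T a b c (d + d') = T a b c d + T a b c d'"
  unfolding quadS_def linS_def by auto
lemma quadS_r7: "quadS T \<Longrightarrow> T a b c (sc k d) = k * T a b c d"
  unfolding quadS_def linS_def by auto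
lemmas quadS_rules = quadS_r0 quadS_r1 quadS_r2 quadS_r3 quadS_r4 quadS_r5 quadS_r6 quadS_r7
lemma quadS_p0: "quadS T \<Longrightarrow> T (a + a') = (\<lambda>b c d. T a b c d + T a' b c d)"
  by (rule ext)+ (simp add: quadS_rules)
lemma quadS_p1: "quadS T \<Longrightarrow> T (sc k a) = (\<lambda>b c d. k * T a b c d)"
  by (rule ext)+ (simp add: quadS_rules)
lemma quadS_p2: "quadS T \<Longrightarrow> T (a + a') b = (\<lambda>c d. T a b c d + T a' b c d)"
  by (rule ext)+ (simp add: quadS_rules)
lemma quadS_p3: "quadS T \<Longrightarrow> T (sc k a) b = (\<lambda>c d. k * T a b c d)"
  by (rule ext)+ (simp add: quadS_rules)
lemma quadS_p4: "quadS T \<Longrightarrow> T (a + a') b c = (\<lambda>d. T a b c d + T a' b c d)"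
  by (rule ext)+ (simp add: quadS_rules)
lemma quadS_p5: "quadS T \<Longrightarrow> T (sc k a) b c = (\<lambda>d. k * T a b c d)"
  by (rule ext)+ (simp add: quadS_rules)
lemma quadS_p6: "quadS T \<Longrightarrow> T a (b + b') = (\<lambda>c d. T a b c d + T a b' c d)"
  by (rule ext)+ (simp add: quadS_rules)
lemma quadS_p7: "quadS T \<Longrightarrow> T a (sc k b) = (\<lambda>c d. k * T a b c d)"
  by (rule ext)+ (simp add: quadS_rules)
lemma quadS_p8: "quadS T \<Longrightarrow> T a (b + b') c = (\<lambda>d. T a b c d + T a b' c d)"
  by (rule ext)+ (simp add: quadS_rules)
lemma quadS_p9: "quadS T \<Longrightarrow> T a (sc k b) c = (\<lambda>d. k * T a b c d)"
  by (rule ext)+ (simp add: quadS_rules)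
lemma quadS_p10: "quadS T \<Longrightarrow> T a b (c + c') = (\<lambda>d. T a b c d + T a b c' d)"
  by (rule ext)+ (simp add: quadS_rules)
lemma quadS_p11: "quadS T \<Longrightarrow> T a b (sc k c) = (\<lambda>d. k * T a b c d)"
  by (rule ext)+ (simp add: quadS_rules)
lemmas quadS_rulesP = quadS_rules quadS_p0 quadS_p1 quadS_p2 quadS_p3 quadS_p4 quadS_p5 quadS_p6 quadS_p7 quadS_p8 quadS_p9 quadS_p10 quadS_p11

definition RN :: "('h \<Rightarrow> 'h \<Rightarrow> 'h \<Rightarrow> 'h \<Rightarrow> 'k) \<Rightarrow> 'h \<Rightarrow> 'k" where
  "RN T h = sw (\<lambda>x1 w. sw (\<lambda>x2 v. sw (\<lambda>x3 x4. T x1 x2 x3 x4) v) w) h"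

lemmas sw_lin_k = sw_add_arg[OF tgt_field] sw_sc_arg[OF tgt_field]

lemma N_P1: assumes Q: "quadS T"
  shows "sw (\<lambda>x y. sw (\<lambda>x1 x2. sw (\<lambda>y1 y2. T x1 x2 y1 y2) y) x) h = RN T h"
  unfolding RN_def
  by (rule coass[OF tgt_field]) (simp add: lin_Q0 quadS_rulesP[OF Q] sw_lin_k)

lemma N_LL: assumes Q: "quadS T"
  shows "sw (\<lambda>x y4. sw (\<lambda>x' y3. sw (\<lambda>x1 x2. T x1 x2 y3 y4) x') x) h = RN T h"
proof -
  have "sw (\<lambda>x y4. sw (\<lambda>x' y3. sw (\<lambda>x1 x2. T x1 x2 y3 y4) x') x) h
      = sw (\<lambda>x' w. sw (\<lambda>y3 y4. sw (\<lambda>x1 x2. T x1 x2 y3 y4) x') w) h"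
    by (rule coass[OF tgt_field]) (simp add: lin_Q0 quadS_rulesP[OF Q] sw_lin_k)
  also have "\<dots> = sw (\<lambda>x' w. sw (\<lambda>x1 x2. sw (\<lambda>y3 y4. T x1 x2 y3 y4) w) x') h"
    by (rule sw_cong, rule sw_swap)
  also have "\<dots> = RN T h"
    unfolding RN_def
    by (rule coass[OF tgt_field]) (simp add: lin_Q0 quadS_rulesP[OF Q] sw_lin_k)
  finally show ?thesis .
qed

lemma N_PL: assumes Q: "quadS T"
  shows "sw (\<lambda>x y. sw (\<lambda>x1 x2. sw (\<lambda>c d. T x1 c d y) x2) x) h = RN T h"
proof -
  have "sw (\<lambda>x y. sw (\<lambda>x1 x2. sw (\<lambda>c d. T x1 c d y) x2) x) h
      = sw (\<lambda>x y. sw (\<lambda>u d. sw (\<lambda>x1 c. T x1 c d y) u) x) h"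
    by (rule sw_cong, rule coass[OF tgt_field, symmetric]) (simp add: lin_Q0 quadS_rulesP[OF Q] sw_lin_k)
  also have "\<dots> = RN T h" by (rule N_LL[OF Q])
  finally show ?thesis .
qed

lemma N_5: assumes Q: "quadS T"
  shows "sw (\<lambda>z y2. sw (\<lambda>x1 v. sw (\<lambda>x2 y1. T x1 x2 y1 y2) v) z) h = RN T h"
proof -
  have "sw (\<lambda>z y2. sw (\<lambda>x1 v. sw (\<lambda>x2 y1. T x1 x2 y1 y2) v) z) h
      = sw (\<lambda>x1 w. sw (\<lambda>v y2. sw (\<lambda>x2 y1. T x1 x2 y1 y2) v) w) h"
    by (rule coass[OF tgt_field]) (simp add: lin_Q0 quadS_rulesP[OF Q] sw_lin_k)
  also have "\<dots> = RN T h"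
    unfolding RN_def
    by (rule sw_cong, rule coass[OF tgt_field]) (simp add: lin_Q0 quadS_rulesP[OF Q] sw_lin_k)
  finally show ?thesis .
qed

end

context whopf begin
interpretation V: vector_space sc by (rule vsH)

definition EE :: "'h \<Rightarrow> ('h, 'k) free_alg" where "EE h = sw (\<lambda>x y. gen x * gen (S y)) h"
definition FF :: "'h \<Rightarrow> ('h, 'k) free_alg" where "FF h = sw (\<lambda>x y. gen (S x) * gen y) h"
definition act :: "'h \<Rightarrow> ('h, 'k) free_alg \<Rightarrow> ('h, 'k) free_alg" where
  "act h a = sw (\<lambda>x y. gen x * a * gen (S y)) h"

lemma Eh_EE: "Eh \<Delta> S h = EE h" unfolding Eh_def EE_def sw_def by (simp add: fmul_eq)
lemma act_eq: "par_act \<Delta> S h a = act h a" unfolding par_act_def act_def sw_def by (simp add: fmul_eq)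

lemmas push_Q = sw_multL_gen[where 'a="('h,'k) free_alg", symmetric] sw_multR_gen[where 'a="('h,'k) free_alg", symmetric]

lemma R5L: "adm f \<Longrightarrow> f (gen h) = sw (\<lambda>u v. f (EE u * gen v)) h"
  by (simp add: R5 EE_def push_Q adm_sw)

lemma R5R: "adm f \<Longrightarrow> f (gen h) = sw (\<lambda>u v. f (gen u * FF v)) h"
proof -
  assume A: "adm f"
  have "f (gen h) = sw (\<lambda>x y. sw (\<lambda>a b. f (gen a * gen (S b) * gen y)) x) h" by (rule R5[OF A])
  also have "\<dots> = sw (\<lambda>a w. sw (\<lambda>b c. f (gen a * gen (S b) * gen c)) w) h"
    by (rule coass[OF tgt_field]) (simp add: lin_Q0 gen_pos_rules[OF A])
  also have "\<dots> = sw (\<lambda>u v. f (gen u * FF v)) h"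
    by (simp add: FF_def push_Q adm_sw[OF A] mult.assoc)
  finally show ?thesis .
qed

lemma Q1: "adm f \<Longrightarrow> f (EE 1) = f 1"
proof -
  assume A: "adm f"
  note L = lin_Q0 gen_pos_rules[OF A]
  have "f 1 = f (gen 1)" by (simp add: RL_one[OF A])
  also have "\<dots> = sw (\<lambda>x y. sw (\<lambda>a b. f (gen a * gen (S b) * gen y)) x) 1" by (rule R5[OF A])
  also have "\<dots> = sw (\<lambda>x y. sw (\<lambda>a b. f (gen a * gen (S b * y))) x) 1"
    by (rule sw_cong, rule R3[OF A])
  also have "\<dots> = sw (\<lambda>x y. sw (\<lambda>b c. f (gen x * gen (S b * c))) y) 1"
    by (rule coass[OF tgt_field]) (simp add: L)
  also have "\<dots> = sw (\<lambda>p q. f (gen (1 * p) * gen (S q))) 1"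
    by (rule WH3[OF tgt_field, of "\<lambda>u v. f (gen u * gen v)"]) (simp add: L)
  also have "\<dots> = f (EE 1)" by (simp add: EE_def adm_sw[OF A])
  finally show ?thesis by simp
qed

lemma Q2: "adm f \<Longrightarrow> f (FF 1) = f 1"
proof -
  assume A: "adm f"
  note L = lin_Q0 gen_pos_rules[OF A]
  have "f 1 = f (gen 1)" by (simp add: RL_one[OF A])
  also have "\<dots> = sw (\<lambda>x y. sw (\<lambda>a b. f (gen a * gen (S b) * gen y)) x) 1" by (rule R5[OF A])
  also have "\<dots> = sw (\<lambda>a w. sw (\<lambda>b c. f (gen a * gen (S b) * gen c)) w) 1"
    by (rule coass[OF tgt_field]) (simp add: L)
  also have "\<dots> = sw (\<lambda>a w. sw (\<lambda>b c. f (gen (a * S b) * gen c)) w) 1"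
    by (rule sw_cong, rule R2[OF A])
  also have "\<dots> = sw (\<lambda>x y. sw (\<lambda>a b. f (gen (a * S b) * gen y)) x) 1"
    by (rule coass[OF tgt_field, symmetric]) (simp add: L)
  also have "\<dots> = sw (\<lambda>p q. f (gen (S p) * gen (q * 1))) 1"
    by (rule WH4[OF tgt_field, of "\<lambda>u v. f (gen u * gen v)"]) (simp add: L)
  also have "\<dots> = f (FF 1)" by (simp add: FF_def adm_sw[OF A])
  finally show ?thesis by simp
qed

end

context whopf begin
interpretation V: vector_space sc by (rule vsH)

lemmas LQ = lin_Q0 push_Q sw_lin_k

lemma QB: assumes A: "adm f"
  shows "sw (\<lambda>p q. f (gen x * gen p * gen (S q * y))) 1 = sw (\<lambda>p q. f (gen (x * p) * gen (S q * y))) 1"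
proof -
  note L = LQ gen_pos_rules[OF A] adm_sw[OF A] EE_def FF_def
  have "sw (\<lambda>p q. f (gen x * gen p * gen (S q * y))) 1
      = sw (\<lambda>p q. sw (\<lambda>u v. f (gen u * FF v * gen p * gen (S q * y))) x) 1"
  proof (rule sw_cong)
    fix p q
    have "f (gen x * (gen p * gen (S q * y))) = sw (\<lambda>u v. f (gen u * FF v * (gen p * gen (S q * y)))) x"
      using R5R[OF adm_ctxR[OF A, of "gen p * gen (S q * y)"], of x] by simp
    thus "f (gen x * gen p * gen (S q * y)) = sw (\<lambda>u v. f (gen u * FF v * gen p * gen (S q * y))) x"
      by (simp add: mult.assoc)
  qed
  also have "\<dots> = sw (\<lambda>p q. sw (\<lambda>u v. sw (\<lambda>b c. f (gen u * gen (S b) * gen (c * p) * gen (S q * y))) v) x) 1"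
  proof (rule sw_cong, rule sw_cong)
    fix p q u v
    have "f (gen u * FF v * gen p * gen (S q * y)) = sw (\<lambda>b c. f (gen u * (gen (S b) * gen c * gen p) * gen (S q * y))) v"
      by (simp add: L)
    also have "\<dots> = sw (\<lambda>b c. f (gen u * (gen (S b) * gen (c * p)) * gen (S q * y))) v"
      by (rule R4[OF adm_ctx[OF A]])
    finally show "f (gen u * FF v * gen p * gen (S q * y)) = sw (\<lambda>b c. f (gen u * gen (S b) * gen (c * p) * gen (S q * y))) v"
      by (simp add: mult.assoc)
  qed
  also have "\<dots> = sw (\<lambda>p q. sw (\<lambda>w c. sw (\<lambda>u b. f (gen u * gen (S b) * gen (c * p) * gen (S q * y))) w) x) 1"
    by (rule sw_cong, rule coass[OF tgt_field, symmetric]) (simp add: L)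
  also have "\<dots> = sw (\<lambda>p q. sw (\<lambda>w c. f (EE w * gen (c * p) * gen (S q * y))) x) 1"
    by (simp add: L)
  also have "\<dots> = sw (\<lambda>w c. sw (\<lambda>p q. f (EE w * gen (c * p) * gen (S q * y))) 1) x"
    by (rule sw_swap)
  finally have LHS: "sw (\<lambda>p q. f (gen x * gen p * gen (S q * y))) 1 = sw (\<lambda>w c. sw (\<lambda>p q. f (EE w * gen (c * p) * gen (S q * y))) 1) x" .
  define \<tau> where "\<tau> = (\<lambda>w1 c1 A B C. f (EE (w1 * A) * gen (c1 * B) * gen (S C * y)))"
  have "sw (\<lambda>p q. f (gen (x * p) * gen (S q * y))) 1
      = sw (\<lambda>p q. sw (\<lambda>w c. f (EE w * gen c * gen (S q * y))) (x * p)) 1"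
    by (rule sw_cong, rule R5L[OF adm_ctxR[OF A]])
  also have "\<dots> = sw (\<lambda>p q. sw (\<lambda>w1 c1. sw (\<lambda>w2 c2. f (EE (w1 * w2) * gen (c1 * c2) * gen (S q * y))) p) x) 1"
    by (rule sw_cong, rule sw_mult_arg[OF tgt_field]) (simp add: L)
  also have "\<dots> = sw (\<lambda>w1 c1. sw (\<lambda>p q. sw (\<lambda>w2 c2. \<tau> w1 c1 w2 c2 q) p) 1) x"
    unfolding \<tau>_def by (rule sw_swap)
  also have "\<dots> = sw (\<lambda>w1 c1. sw (\<lambda>a b. sw (\<lambda>p' q'. \<tau> w1 c1 a (b * p') q') 1) 1) x"
    by (rule sw_cong, rule U2[OF tgt_field, symmetric]) (simp add: L \<tau>_def)
  also have "\<dots> = sw (\<lambda>w1 c1. sw (\<lambda>a b. (\<lambda>U V. sw (\<lambda>p' q'. f (EE U * gen (V * p') * gen (S q' * y))) 1) (w1 * a) (c1 * b)) 1) x"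
    unfolding \<tau>_def by (simp add: mult.assoc)
  also have "\<dots> = sw (\<lambda>U V. sw (\<lambda>p' q'. f (EE U * gen (V * p') * gen (S q' * y))) 1) x"
    by (rule F0b[OF tgt_field]) (simp add: L)
  finally show ?thesis using LHS by simp
qed

lemma QZ: assumes A: "adm f"
  shows "sw (\<lambda>p q. f (gen (x * p) * gen (S q * y))) 1 = f (gen x * gen y)"
proof -
  have "f (gen x * gen y) = f (gen x * EE 1 * gen y)"
    using Q1[OF adm_ctx[OF A, of "gen x" "gen y"]] by simp
  also have "\<dots> = sw (\<lambda>p q. f (gen x * (gen p * gen (S q) * gen y))) 1"
    by (simp add: EE_def push_Q adm_sw[OF A] mult.assoc)
  also have "\<dots> = sw (\<lambda>p q. f (gen x * (gen p * gen (S q * y)))) 1"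
    by (rule R3[OF adm_ctxL[OF A]])
  also have "\<dots> = sw (\<lambda>p q. f (gen (x * p) * gen (S q * y))) 1"
    using QB[OF A, of x y] by (simp add: mult.assoc)
  finally show ?thesis by simp
qed

end

context whopf begin
interpretation V: vector_space sc by (rule vsH)

lemma adm_gen_sw: assumes A: "adm f"
  shows "f (P * gen (sw B w) * Q) = sw (\<lambda>a c. f (P * gen (B a c) * Q)) w"
  by (rule lin_sw_push[where L="\<lambda>z. f (P * gen z * Q)"]) (simp add: gen_add_ctx[OF A])

lemma QM: assumes A: "adm f"
  shows "f (gen (S m) * gen (S k)) = sw (\<lambda>a b. f (gen (S (a * m)) * EE b)) k"
proof -
  note L = LQ gen_pos_rules[OF A] adm_sw[OF A] EE_def FF_def
  have "sw (\<lambda>a b. f (gen (S (a * m)) * EE b)) k = sw (\<lambda>a b. sw (\<lambda>c d. f (gen (S (a * m)) * gen c * gen (S d))) b) k"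
    by (simp add: L)
  also have "\<dots> = sw (\<lambda>a b. sw (\<lambda>c d. f (gen (S (a * m) * c) * gen (S d))) b) k"
    by (rule sw_cong, rule R1[OF A])
  also have "\<dots> = sw (\<lambda>a b. sw (\<lambda>c d. f (gen (S m * (S a * c)) * gen (S d))) b) k"
    by (simp add: antimult mult.assoc)
  also have "\<dots> = sw (\<lambda>w d. sw (\<lambda>a c. f (gen (S m * (S a * c)) * gen (S d))) w) k"
    by (rule coass[OF tgt_field, symmetric]) (simp add: L)
  also have "\<dots> = sw (\<lambda>w d. f (gen (S m * es w) * gen (S d))) k"
    by (rule sw_cong) (simp add: S2'[symmetric] adm_gen_sw[OF A, where P=1, simplified] sw_multL[symmetric])
  also have "\<dots> = sw (\<lambda>p q. f (gen (S m * p) * gen (S (k * q)))) 1"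
    by (rule F3b[OF tgt_field, of "\<lambda>U V. f (gen (S m * U) * gen (S V))"]) (simp add: L)
  also have "\<dots> = sw (\<lambda>p q. f (gen (S m * p) * gen (S q * S k))) 1"
    by (simp add: antimult)
  also have "\<dots> = f (gen (S m) * gen (S k))" by (rule QZ[OF A])
  finally show ?thesis by simp
qed

end

context whopf begin
interpretation V: vector_space sc by (rule vsH)

lemma PLgen: assumes A: "adm f"
  shows "f (gen h * EE k) = sw (\<lambda>x y. f (EE (x * k) * gen y)) h"
proof -
  note L = LQ gen_pos_rules[OF A] adm_sw[OF A] EE_def FF_def
  define \<beta> where "\<beta> = (\<lambda>X Y. sw (\<lambda>k1 k2. f (gen (X * k1) * gen (S k2 * Y))) k)"
  have b\<beta>: "bilS (*) \<beta>" unfolding \<beta>_def by (simp add: L)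
  have "sw (\<lambda>x y. f (EE (x * k) * gen y)) h = sw (\<lambda>x y. sw (\<lambda>u v. f (gen u * gen (S v) * gen y)) (x * k)) h"
    by (simp add: L)
  also have "\<dots> = sw (\<lambda>x y. sw (\<lambda>u v. f (gen u * gen (S v * y))) (x * k)) h"
    by (rule sw_cong, rule R3[OF A])
  also have "\<dots> = sw (\<lambda>x y. sw (\<lambda>x1 x2. sw (\<lambda>k1 k2. f (gen (x1 * k1) * gen (S (x2 * k2) * y))) k) x) h"
    by (rule sw_cong, rule sw_mult_arg[OF tgt_field]) (simp add: L)
  also have "\<dots> = sw (\<lambda>x y. sw (\<lambda>x1 x2. sw (\<lambda>k1 k2. f (gen (x1 * k1) * gen (S k2 * (S x2 * y)))) k) x) h"
    by (simp add: antimult mult.assoc)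
  also have "\<dots> = sw (\<lambda>x1 w. sw (\<lambda>x2 y. sw (\<lambda>k1 k2. f (gen (x1 * k1) * gen (S k2 * (S x2 * y)))) k) w) h"
    by (rule coass[OF tgt_field]) (simp add: L)
  also have "\<dots> = sw (\<lambda>x1 w. sw (\<lambda>x2 y. \<beta> x1 (S x2 * y)) w) h" unfolding \<beta>_def ..
  also have "\<dots> = sw (\<lambda>p q. \<beta> (h * p) (S q)) 1" by (rule WH3[OF tgt_field b\<beta>])
  also have "\<dots> = sw (\<lambda>p q. sw (\<lambda>k1 k2. (\<lambda>U V. f (gen (h * U) * gen (S V))) (p * k1) (q * k2)) k) 1"
    unfolding \<beta>_def by (simp add: antimult mult.assoc)
  also have "\<dots> = sw (\<lambda>U V. f (gen (h * U) * gen (S V))) k"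
    by (rule F0a[OF tgt_field]) (simp add: L)
  also have "\<dots> = sw (\<lambda>k1 k2. f (gen h * gen k1 * gen (S k2))) k"
    by (rule R1[OF A, symmetric])
  also have "\<dots> = f (gen h * EE k)" by (simp add: L)
  finally show ?thesis by simp
qed

lemma PL_E: assumes A: "adm f"
  shows "f (gen h * EE k) = sw (\<lambda>x y. f (gen x * EE k * FF y)) h"
proof -
  note L = LQ gen_pos_rules[OF A] adm_sw[OF A] EE_def FF_def
  have "sw (\<lambda>x y. f (gen x * EE k * FF y)) h
      = sw (\<lambda>x y. sw (\<lambda>b c. sw (\<lambda>k1 k2. f (gen x * gen k1 * gen (S k2) * (gen (S b) * gen c))) k) y) h"
    by (simp add: L)
  also have "\<dots> = sw (\<lambda>x y. sw (\<lambda>b c. sw (\<lambda>k1 k2. f (gen (x * k1) * gen (S k2) * (gen (S b) * gen c))) k) y) h"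
    by (intro sw_cong R1[OF adm_ctxR[OF A]])
  also have "\<dots> = sw (\<lambda>x y. sw (\<lambda>k1 k2. sw (\<lambda>b c. f (gen (x * k1) * (gen (S k2) * gen (S b) * gen c))) y) k) h"
    by (rule sw_cong, subst sw_swap, simp add: mult.assoc)
  also have "\<dots> = sw (\<lambda>x y. sw (\<lambda>k1 k2. sw (\<lambda>b c. f (gen (x * k1) * (gen (S k2 * S b) * gen c))) y) k) h"
    by (intro sw_cong R2[OF adm_ctxL[OF A]])
  also have "\<dots> = sw (\<lambda>x y. sw (\<lambda>b c. sw (\<lambda>k1 k2. f (gen (x * k1) * gen (S (b * k2)) * gen c)) k) y) h"
    by (rule sw_cong, subst sw_swap, simp add: mult.assoc antimult)
  also have "\<dots> = sw (\<lambda>u c. sw (\<lambda>x b. sw (\<lambda>k1 k2. f (gen (x * k1) * gen (S (b * k2)) * gen c)) k) u) h"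
    by (rule coass[OF tgt_field, symmetric]) (simp add: L)
  also have "\<dots> = sw (\<lambda>u c. sw (\<lambda>U V. f (gen U * gen (S V) * gen c)) (u * k)) h"
    by (rule sw_cong, rule sw_mult_arg[OF tgt_field, symmetric]) (simp add: L)
  also have "\<dots> = sw (\<lambda>x y. f (EE (x * k) * gen y)) h" by (simp add: L)
  also have "\<dots> = f (gen h * EE k)" by (rule PLgen[OF A, symmetric])
  finally show ?thesis by simp
qed

end

context whopf begin
interpretation V: vector_space sc by (rule vsH)

definition PLp :: "('h, 'k) free_alg \<Rightarrow> bool" where
  "PLp a \<longleftrightarrow> (\<forall>f h. adm f \<longrightarrow> f (gen h * a) = sw (\<lambda>x y. f (gen x * a * FF y)) h)"

lemma PLpD: "PLp a \<Longrightarrow> adm f \<Longrightarrow> f (gen h * a) = sw (\<lambda>x y. f (gen x * a * FF y)) h"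
  unfolding PLp_def by blast

lemma par_eqD: "par_eq sc \<Delta> S p q \<Longrightarrow> adm f \<Longrightarrow> f (P * p * Q) = f (P * q * Q)"
  using par_eq_iff adm_ctx by blast

lemma PL_unit: "PLp 1"
  unfolding PLp_def by (auto simp: R5R)

lemma PL_add: "PLp p \<Longrightarrow> PLp q \<Longrightarrow> PLp (p + q)"
  unfolding PLp_def by (auto simp: distrib_left distrib_right adm_add sw_addf)

lemma sg_comm_mid: "P * (sg c * p) * Q = sg c * (P * p * Q)"
  by (simp add: mult.assoc[symmetric] single_nil_comm[of c P])

lemma PL_sg: "PLp p \<Longrightarrow> PLp (sg c * p)"
  unfolding PLp_def
proof (intro allI impI)
  fix f h assume P: "\<forall>f h. adm f \<longrightarrow> f (gen h * p) = sw (\<lambda>x y. f (gen x * p * FF y)) h" and A: "adm f"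
  have e1: "gen h * (sg c * p) = sg c * (gen h * p)" using sg_comm_mid[of "gen h" c p 1] by simp
  have e2: "gen x * (sg c * p) * FF y = sg c * (gen x * p * FF y)" for x y using sg_comm_mid[of "gen x" c p "FF y"] .
  show "f (gen h * (sg c * p)) = sw (\<lambda>x y. f (gen x * (sg c * p) * FF y)) h"
    by (simp add: e1 e2 adm_sg[OF A] P[rule_format, OF A] sw_cmult)
qed

lemma PL_cong: "PLp q \<Longrightarrow> par_eq sc \<Delta> S p q \<Longrightarrow> PLp p"
  unfolding PLp_def
proof (intro allI impI)
  fix f h assume P: "\<forall>f h. adm f \<longrightarrow> f (gen h * q) = sw (\<lambda>x y. f (gen x * q * FF y)) h"
    and E: "par_eq sc \<Delta> S p q" and A: "adm f"
  have "f (gen h * p) = f (gen h * q)" using par_eqD[OF E A, of "gen h" 1] by simp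
  also have "\<dots> = sw (\<lambda>x y. f (gen x * q * FF y)) h" using P A by blast
  also have "\<dots> = sw (\<lambda>x y. f (gen x * p * FF y)) h" by (rule sw_cong) (simp add: par_eqD[OF E A])
  finally show "f (gen h * p) = sw (\<lambda>x y. f (gen x * p * FF y)) h" .
qed

lemma PL_mult: assumes Pa: "PLp a" and Pb: "PLp b" shows "PLp (a * b)"
  unfolding PLp_def
proof (intro allI impI)
  fix f h assume A: "adm f"
  note L = LQ gen_pos_rules[OF A] adm_sw[OF A] EE_def FF_def
  define T where "T = (\<lambda>x c d1 d2. f (gen x * a * gen (S c) * gen d1 * b * FF d2))"
  have Q: "quadS T" unfolding T_def quadS_def by (simp add: L)
  have "f (gen h * (a * b)) = f (gen h * a * b)" by (simp add: mult.assoc)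
  also have "\<dots> = sw (\<lambda>x y. f (gen x * a * FF y * b)) h"
    using PLpD[OF Pa adm_ctxR[OF A, of b], of h] by simp
  also have "\<dots> = sw (\<lambda>x y. sw (\<lambda>c d. f (gen x * a * gen (S c) * (gen d * b))) y) h"
    by (simp add: L)
  also have "\<dots> = sw (\<lambda>x y. sw (\<lambda>c d. sw (\<lambda>d1 d2. T x c d1 d2) d) y) h"
    unfolding T_def
  proof (intro sw_cong)
    fix x y c d
    show "f (gen x * a * gen (S c) * (gen d * b)) = sw (\<lambda>d1 d2. f (gen x * a * gen (S c) * gen d1 * b * FF d2)) d"
      using PLpD[OF Pb adm_ctxL[OF A, of "gen x * a * gen (S c)"], of d] by (simp add: mult.assoc)
  qed
  also have "\<dots> = RN T h" unfolding RN_def ..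
  also have "\<dots> = sw (\<lambda>z d2. sw (\<lambda>x w. sw (\<lambda>c d1. T x c d1 d2) w) z) h" by (rule N_PL[OF Q, symmetric])
  also have "\<dots> = sw (\<lambda>z d2. sw (\<lambda>x w. f (gen x * a * FF w * b * FF d2)) z) h"
    unfolding T_def
  proof (intro sw_cong)
    fix z d2 x w
    show "sw (\<lambda>c d1. f (gen x * a * gen (S c) * gen d1 * b * FF d2)) w = f (gen x * a * FF w * b * FF d2)"
      unfolding FF_def[of w] by (simp add: LQ adm_sw[OF A] mult.assoc)
  qed
  also have "\<dots> = sw (\<lambda>z d2. f (gen z * a * b * FF d2)) h"
  proof (rule sw_cong)
    fix z d2
    show "sw (\<lambda>x w. f (gen x * a * FF w * b * FF d2)) z = f (gen z * a * b * FF d2)"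
      using PLpD[OF Pa adm_ctxR[OF A, of "b * FF d2"], of z] by (simp add: mult.assoc)
  qed
  finally show "f (gen h * (a * b)) = sw (\<lambda>x y. f (gen x * (a * b) * FF y)) h" by (simp add: mult.assoc)
qed

lemma PL_E': "PLp (EE k)" unfolding PLp_def using PL_E by blast

lemma PL_Apar: "a \<in> Apar sc \<Delta> S \<Longrightarrow> PLp a"
proof (induction rule: Apar.induct)
  case (E h) show ?case by (simp add: Eh_EE PL_E')
next
  case unit show ?case by (simp add: funit_eq PL_unit)
next
  case (add p q) thus ?case by (intro PL_add add.IH)
next
  case (smult p c) thus ?case by (simp add: fsc_eq PL_sg smult.IH)
next
  case (mult p q) thus ?case by (simp add: fmul_eq PL_mult mult.IH)
next
  case (cong q p) thus ?case using PL_cong by blast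
qed

end

context whopf begin
interpretation V: vector_space sc by (rule vsH)

lemma act_add: "act h (p + q) = act h p + act h q"
  unfolding act_def by (simp add: distrib_left distrib_right sw_addf)
lemma act_sg: "act h (sg c * p) = sg c * act h p"
  unfolding act_def by (simp add: sg_comm_mid sw_multL_gen)
lemma act_one: "act h 1 = EE h" unfolding act_def EE_def by simp

lemma act_adm: "adm f \<Longrightarrow> f (act h a) = sw (\<lambda>x y. f (gen x * a * gen (S y))) h"
  unfolding act_def by (rule adm_sw)

lemma CF: assumes A: "adm f"
  shows "f (act h (EE k)) = sw (\<lambda>x y. f (EE (x * k) * EE y)) h"
proof -
  note L = LQ gen_pos_rules[OF A] adm_sw[OF A] EE_def FF_def
  have "f (act h (EE k)) = sw (\<lambda>x y. f (gen x * EE k * gen (S y))) h" by (rule act_adm[OF A])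
  also have "\<dots> = sw (\<lambda>x y. sw (\<lambda>x1 x2. f (EE (x1 * k) * gen x2 * gen (S y))) x) h"
  proof (rule sw_cong)
    fix x y
    show "f (gen x * EE k * gen (S y)) = sw (\<lambda>x1 x2. f (EE (x1 * k) * gen x2 * gen (S y))) x"
      using PLgen[OF adm_ctxR[OF A, of "gen (S y)"], of x k] by simp
  qed
  also have "\<dots> = sw (\<lambda>x1 w. sw (\<lambda>x2 y. f (EE (x1 * k) * gen x2 * gen (S y))) w) h"
    by (rule coass[OF tgt_field]) (simp add: L)
  also have "\<dots> = sw (\<lambda>x y. f (EE (x * k) * EE y)) h"
    by (rule sw_cong) (simp add: EE_def[of y for y] push_Q adm_sw[OF A] mult.assoc)
  finally show ?thesis .
qed

lemma P1: assumes Pa: "PLp a" and A: "adm f"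
  shows "f (act h (a * b)) = sw (\<lambda>x y. f (act x a * act y b)) h"
proof -
  note L = LQ gen_pos_rules[OF A] adm_sw[OF A] EE_def FF_def
  define T where "T = (\<lambda>x1 x2 y1 y2. f (gen x1 * a * gen (S x2) * gen y1 * b * gen (S y2)))"
  have Q: "quadS T" unfolding T_def quadS_def by (simp add: L)
  have "sw (\<lambda>x y. f (act x a * act y b)) h = sw (\<lambda>x y. sw (\<lambda>x1 x2. sw (\<lambda>y1 y2. T x1 x2 y1 y2) y) x) h"
    unfolding T_def
  proof (rule sw_cong)
    fix x y
    show "f (act x a * act y b) = sw (\<lambda>x1 x2. sw (\<lambda>y1 y2. f (gen x1 * a * gen (S x2) * gen y1 * b * gen (S y2))) y) x"
      unfolding act_def by (simp add: sw_multR_gen[symmetric] sw_multL_gen[symmetric] adm_sw[OF A] mult.assoc) (rule sw_swap)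
  qed
  also have "\<dots> = RN T h" by (rule N_P1[OF Q])
  also have "\<dots> = sw (\<lambda>z y2. sw (\<lambda>x1 v. sw (\<lambda>x2 y1. T x1 x2 y1 y2) v) z) h" by (rule N_5[OF Q, symmetric])
  also have "\<dots> = sw (\<lambda>z y2. f (gen z * (a * b) * gen (S y2))) h"
    unfolding T_def
  proof (rule sw_cong)
    fix z y2
    have "sw (\<lambda>x1 v. sw (\<lambda>x2 y1. f (gen x1 * a * gen (S x2) * gen y1 * b * gen (S y2))) v) z
        = sw (\<lambda>x1 v. f (gen x1 * a * FF v * b * gen (S y2))) z"
      by (rule sw_cong) (simp add: FF_def[of v for v] push_Q adm_sw[OF A] mult.assoc)
    also have "\<dots> = f (gen z * a * (b * gen (S y2)))"
      using PLpD[OF Pa adm_ctxR[OF A, of "b * gen (S y2)"], of z] by (simp add: mult.assoc)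
    finally show "sw (\<lambda>x1 v. sw (\<lambda>x2 y1. f (gen x1 * a * gen (S x2) * gen y1 * b * gen (S y2))) v) z
        = f (gen z * (a * b) * gen (S y2))" by (simp add: mult.assoc)
  qed
  also have "\<dots> = f (act h (a * b))" by (rule act_adm[OF A, symmetric])
  finally show ?thesis by simp
qed

lemma Apar_zero: "0 \<in> Apar sc \<Delta> S"
proof -
  have "fsc 0 funit \<in> Apar sc \<Delta> S" by (intro Apar.smult Apar.unit)
  thus ?thesis by (simp add: fsc_eq)
qed

lemma Apar_sum_list: "(\<And>x y. P x y \<in> Apar sc \<Delta> S) \<Longrightarrow> (\<Sum>(x,y)\<leftarrow>t. P x y) \<in> Apar sc \<Delta> S"
  by (induction t) (auto intro: Apar_zero Apar.add)

lemma Apar_sw: "(\<And>x y. P x y \<in> Apar sc \<Delta> S) \<Longrightarrow> sw P h \<in> Apar sc \<Delta> S"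
  unfolding sw_def by (rule Apar_sum_list)

lemma Apar_mult: "p \<in> Apar sc \<Delta> S \<Longrightarrow> q \<in> Apar sc \<Delta> S \<Longrightarrow> p * q \<in> Apar sc \<Delta> S"
  using Apar.mult[of p sc \<Delta> S q] by (simp add: fmul_eq)

lemma Apar_EE: "EE h \<in> Apar sc \<Delta> S" using Apar.E[of \<Delta> S h sc] by (simp add: Eh_EE)

lemma Apar_cong': "q \<in> Apar sc \<Delta> S \<Longrightarrow> (\<And>f. adm f \<Longrightarrow> f p = f q) \<Longrightarrow> p \<in> Apar sc \<Delta> S"
  by (rule Apar.cong[of q]) (auto simp: par_eq_iff)

lemma act_Apar: "a \<in> Apar sc \<Delta> S \<Longrightarrow> act h a \<in> Apar sc \<Delta> S"
proof (induction arbitrary: h rule: Apar.induct)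
  case (E k)
  have "sw (\<lambda>x y. EE (x * k) * EE y) h \<in> Apar sc \<Delta> S" by (intro Apar_sw Apar_mult Apar_EE)
  thus ?case by (rule Apar_cong') (simp add: Eh_EE CF adm_sw)
next
  case unit show ?case by (simp add: funit_eq act_one Apar_EE)
next
  case (add p q) thus ?case by (simp add: act_add Apar.add)
next
  case (smult p c)
  have "fsc c (act h p) \<in> Apar sc \<Delta> S" using smult.IH by (rule Apar.smult)
  thus ?case by (simp add: fsc_eq act_sg)
next
  case (mult p q)
  have "sw (\<lambda>x y. act x p * act y q) h \<in> Apar sc \<Delta> S" by (intro Apar_sw Apar_mult mult.IH)
  thus ?case by (rule Apar_cong') (simp add: fmul_eq P1[OF PL_Apar[OF mult.hyps(1)]] adm_sw)
next
  case (cong q p)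
  have "act h q \<in> Apar sc \<Delta> S" by (rule cong.IH)
  thus ?case by (rule Apar_cong') (simp add: act_adm par_eqD[OF cong.hyps(2)])
qed

end

context whopf begin
interpretation V: vector_space sc by (rule vsH)

definition RKp :: "('h, 'k) free_alg \<Rightarrow> bool" where
  "RKp a \<longleftrightarrow> (\<forall>f k n. adm f \<longrightarrow>
     sw (\<lambda>x y. f (gen x * a * gen (S y) * gen n)) k = sw (\<lambda>x y. f (gen x * a * gen (S y * n))) k)"

lemma RKpD: "RKp a \<Longrightarrow> adm f \<Longrightarrow>
     sw (\<lambda>x y. f (gen x * a * gen (S y) * gen n)) k = sw (\<lambda>x y. f (gen x * a * gen (S y * n))) k"
  unfolding RKp_def by blast

lemma par_eqD2: "par_eq sc \<Delta> S p q \<Longrightarrow> adm f \<Longrightarrow> f (P * (p * Q)) = f (P * (q * Q))"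
  using par_eqD[of p q f P Q] by (simp add: mult.assoc)

lemma RK_unit: "RKp 1" unfolding RKp_def by (simp add: R3)

lemma RK_add: "RKp p \<Longrightarrow> RKp q \<Longrightarrow> RKp (p + q)"
  unfolding RKp_def by (auto simp: distrib_left distrib_right adm_add sw_addf)

lemma RK_sg: assumes R: "RKp p" shows "RKp (sg c * p)"
  unfolding RKp_def
proof (intro allI impI)
  fix f k n assume A: "adm f"
  have e1: "gen x * (sg c * (p * (gen (S y) * gen n))) = sg c * (gen x * (p * (gen (S y) * gen n)))" for x y
    using sg_comm_mid[of "gen x" c p "gen (S y) * gen n"] by (simp add: mult.assoc)
  have e2: "gen x * (sg c * (p * gen (S y * n))) = sg c * (gen x * (p * gen (S y * n)))" for x y
    using sg_comm_mid[of "gen x" c p "gen (S y * n)"] by (simp add: mult.assoc)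
  show "sw (\<lambda>x y. f (gen x * (sg c * p) * gen (S y) * gen n)) k = sw (\<lambda>x y. f (gen x * (sg c * p) * gen (S y * n))) k"
    using RKpD[OF R A, of n k] by (simp add: e1 e2 adm_sg[OF A] sw_cmult mult.assoc)
qed

lemma RK_cong: assumes R: "RKp q" and E: "par_eq sc \<Delta> S p q" shows "RKp p"
  unfolding RKp_def
proof (intro allI impI)
  fix f k n assume A: "adm f"
  have "sw (\<lambda>x y. f (gen x * p * gen (S y) * gen n)) k = sw (\<lambda>x y. f (gen x * q * gen (S y) * gen n)) k"
    by (rule sw_cong) (simp add: par_eqD2[OF E A] mult.assoc)
  also have "\<dots> = sw (\<lambda>x y. f (gen x * q * gen (S y * n))) k" by (rule RKpD[OF R A])
  also have "\<dots> = sw (\<lambda>x y. f (gen x * p * gen (S y * n))) k"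
    by (rule sw_cong) (simp add: par_eqD[OF E A])
  finally show "sw (\<lambda>x y. f (gen x * p * gen (S y) * gen n)) k = sw (\<lambda>x y. f (gen x * p * gen (S y * n))) k" .
qed

lemma RK_E: "RKp (EE m)"
  unfolding RKp_def
proof (intro allI impI)
  fix f k n assume A: "adm f"
  note L = LQ gen_pos_rules[OF A] adm_sw[OF A] EE_def FF_def
  have "sw (\<lambda>x y. f (gen x * EE m * gen (S y) * gen n)) k
      = sw (\<lambda>x y. sw (\<lambda>x1 x2. f (EE (x1 * m) * gen x2 * gen (S y) * gen n)) x) k"
  proof (rule sw_cong)
    fix x y show "f (gen x * EE m * gen (S y) * gen n) = sw (\<lambda>x1 x2. f (EE (x1 * m) * gen x2 * gen (S y) * gen n)) x"
      using PLgen[OF adm_ctxR[OF A, of "gen (S y) * gen n"], of x m] by (simp add: mult.assoc)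
  qed
  also have "\<dots> = sw (\<lambda>x1 w. sw (\<lambda>x2 y. f (EE (x1 * m) * gen x2 * gen (S y) * gen n)) w) k"
    by (rule coass[OF tgt_field]) (simp add: L)
  also have "\<dots> = sw (\<lambda>x1 w. sw (\<lambda>x2 y. f (EE (x1 * m) * gen x2 * gen (S y * n))) w) k"
  proof (rule sw_cong)
    fix x1 w
    show "sw (\<lambda>x2 y. f (EE (x1 * m) * gen x2 * gen (S y) * gen n)) w = sw (\<lambda>x2 y. f (EE (x1 * m) * gen x2 * gen (S y * n))) w"
      using R3[OF adm_ctxL[OF A, of "EE (x1 * m)"], where h=w and k=n] by (simp add: mult.assoc)
  qed
  also have "\<dots> = sw (\<lambda>x y. sw (\<lambda>x1 x2. f (EE (x1 * m) * gen x2 * gen (S y * n))) x) k"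
    by (rule coass[OF tgt_field, symmetric]) (simp add: L)
  also have "\<dots> = sw (\<lambda>x y. f (gen x * EE m * gen (S y * n))) k"
  proof (rule sw_cong)
    fix x y show "sw (\<lambda>x1 x2. f (EE (x1 * m) * gen x2 * gen (S y * n))) x = f (gen x * EE m * gen (S y * n))"
      using PLgen[OF adm_ctxR[OF A, of "gen (S y * n)"], of x m] by (simp add: mult.assoc)
  qed
  finally show "sw (\<lambda>x y. f (gen x * EE m * gen (S y) * gen n)) k = sw (\<lambda>x y. f (gen x * EE m * gen (S y * n))) k" .
qed

lemma RK_mult: assumes Pa: "PLp a" and Rb: "RKp b" shows "RKp (a * b)"
  unfolding RKp_def
proof (intro allI impI)
  fix f k n assume A: "adm f"
  note L = LQ gen_pos_rules[OF A] adm_sw[OF A] EE_def FF_def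
  define T where "T = (\<lambda>x1 c d y. f (gen x1 * a * gen (S c) * gen d * b * gen (S y) * gen n))"
  define T' where "T' = (\<lambda>x1 c d y. f (gen x1 * a * gen (S c) * gen d * b * gen (S y * n)))"
  have QT: "quadS T" unfolding T_def quadS_def by (simp add: L)
  have QT': "quadS T'" unfolding T'_def quadS_def by (simp add: L)
  have "sw (\<lambda>x y. f (gen x * (a * b) * gen (S y) * gen n)) k
      = sw (\<lambda>x y. sw (\<lambda>x1 x2. sw (\<lambda>c d. T x1 c d y) x2) x) k"
    unfolding T_def
  proof (rule sw_cong)
    fix x y
    have "f (gen x * (a * b) * gen (S y) * gen n) = sw (\<lambda>x1 x2. f (gen x1 * a * FF x2 * (b * gen (S y) * gen n))) x"
      using PLpD[OF Pa adm_ctxR[OF A, of "b * gen (S y) * gen n"], of x] by (simp add: mult.assoc)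
    also have "\<dots> = sw (\<lambda>x1 x2. sw (\<lambda>c d. f (gen x1 * a * gen (S c) * gen d * b * gen (S y) * gen n)) x2) x"
      by (rule sw_cong) (simp add: FF_def[of x2 for x2] push_Q adm_sw[OF A] mult.assoc)
    finally show "f (gen x * (a * b) * gen (S y) * gen n) = sw (\<lambda>x1 x2. sw (\<lambda>c d. f (gen x1 * a * gen (S c) * gen d * b * gen (S y) * gen n)) x2) x" .
  qed
  also have "\<dots> = RN T k" by (rule N_PL[OF QT])
  also have "\<dots> = RN T' k"
    unfolding RN_def T_def T'_def
  proof (rule sw_cong, rule sw_cong)
    fix x1 w c v
    show "sw (\<lambda>d y. f (gen x1 * a * gen (S c) * gen d * b * gen (S y) * gen n)) v = sw (\<lambda>d y. f (gen x1 * a * gen (S c) * gen d * b * gen (S y * n))) v"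
      using RKpD[OF Rb adm_ctxL[OF A, of "gen x1 * a * gen (S c)"], of n v] by (simp add: mult.assoc)
  qed
  also have "\<dots> = sw (\<lambda>x y. sw (\<lambda>x1 x2. sw (\<lambda>c d. T' x1 c d y) x2) x) k" by (rule N_PL[OF QT', symmetric])
  also have "\<dots> = sw (\<lambda>x y. f (gen x * (a * b) * gen (S y * n))) k"
    unfolding T'_def
  proof (rule sw_cong)
    fix x y
    have "sw (\<lambda>x1 x2. sw (\<lambda>c d. f (gen x1 * a * gen (S c) * gen d * b * gen (S y * n))) x2) x
        = sw (\<lambda>x1 x2. f (gen x1 * a * FF x2 * (b * gen (S y * n)))) x"
      by (rule sw_cong) (simp add: FF_def[of x2 for x2] push_Q adm_sw[OF A] mult.assoc)
    also have "\<dots> = f (gen x * (a * b) * gen (S y * n))"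
      using PLpD[OF Pa adm_ctxR[OF A, of "b * gen (S y * n)"], of x] by (simp add: mult.assoc)
    finally show "sw (\<lambda>x1 x2. sw (\<lambda>c d. f (gen x1 * a * gen (S c) * gen d * b * gen (S y * n))) x2) x
        = f (gen x * (a * b) * gen (S y * n))" .
  qed
  finally show "sw (\<lambda>x y. f (gen x * (a * b) * gen (S y) * gen n)) k = sw (\<lambda>x y. f (gen x * (a * b) * gen (S y * n))) k" .
qed

lemma RK_Apar: "a \<in> Apar sc \<Delta> S \<Longrightarrow> RKp a"
proof (induction rule: Apar.induct)
  case (E h) show ?case by (simp add: Eh_EE RK_E)
next
  case unit show ?case by (simp add: funit_eq RK_unit)
next
  case (add p q) thus ?case by (intro RK_add add.IH)
next
  case (smult p c) thus ?case by (simp add: fsc_eq RK_sg smult.IH)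
next
  case (mult p q) thus ?case by (simp add: fmul_eq RK_mult PL_Apar mult.IH)
next
  case (cong q p) thus ?case using RK_cong by blast
qed

end

context whopf begin
interpretation V: vector_space sc by (rule vsH)

lemma P2: assumes Ap: "a \<in> Apar sc \<Delta> S" and A: "adm f"
  shows "f (act 1 a) = f a"
proof -
  note L = LQ gen_pos_rules[OF A] adm_sw[OF A] EE_def FF_def
  have Pa: "PLp a" by (rule PL_Apar[OF Ap])
  have Ra: "RKp a" by (rule RK_Apar[OF Ap])
  have "f a = f (gen 1 * a)" using gen_one_ctx[OF A, of 1 a] by simp
  also have "\<dots> = sw (\<lambda>x y. f (gen x * a * FF y)) 1" by (rule PLpD[OF Pa A])
  also have "\<dots> = sw (\<lambda>x y. sw (\<lambda>c d. f (gen x * a * gen (S c) * gen d)) y) 1"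
    by (rule sw_cong) (simp add: FF_def[of y for y] push_Q adm_sw[OF A] mult.assoc)
  also have "\<dots> = sw (\<lambda>w d. sw (\<lambda>x c. f (gen x * a * gen (S c) * gen d)) w) 1"
    by (rule coass[OF tgt_field, symmetric]) (simp add: L)
  also have "\<dots> = sw (\<lambda>w d. sw (\<lambda>x c. f (gen x * a * gen (S c * d))) w) 1"
    by (rule sw_cong, rule RKpD[OF Ra A])
  also have "\<dots> = sw (\<lambda>x y. sw (\<lambda>c d. f (gen x * a * gen (S c * d))) y) 1"
    by (rule coass[OF tgt_field]) (simp add: L)
  also have "\<dots> = sw (\<lambda>p q. f (gen (1 * p) * a * gen (S q))) 1"
    by (rule WH3[OF tgt_field, of "\<lambda>X Y. f (gen X * a * gen Y)"]) (simp add: L)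
  also have "\<dots> = f (act 1 a)" by (simp add: act_adm[OF A])
  finally show ?thesis by simp
qed

lemma P3: assumes Ap: "a \<in> Apar sc \<Delta> S" and A: "adm f"
  shows "f (act h (act k a)) = sw (\<lambda>x y. f (act x 1 * act (y * k) a)) h"
proof -
  note L = LQ gen_pos_rules[OF A] adm_sw[OF A] EE_def FF_def
  have Ra: "RKp a" by (rule RK_Apar[OF Ap])
  have "f (act h (act k a)) = sw (\<lambda>x y. f (gen x * act k a * gen (S y))) h" by (rule act_adm[OF A])
  also have "\<dots> = sw (\<lambda>x y. sw (\<lambda>u v. f (gen x * gen u * a * gen (S v) * gen (S y))) k) h"
    by (rule sw_cong) (simp add: act_def push_Q adm_sw[OF A] mult.assoc)
  also have "\<dots> = sw (\<lambda>x y. sw (\<lambda>u v. f (gen x * gen u * a * gen (S (y * v)))) k) h"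
  proof (rule sw_cong)
    fix x y
    show "sw (\<lambda>u v. f (gen x * gen u * a * gen (S v) * gen (S y))) k = sw (\<lambda>u v. f (gen x * gen u * a * gen (S (y * v)))) k"
      using RKpD[OF Ra adm_ctxL[OF A, of "gen x"], of "S y" k] by (simp add: mult.assoc antimult)
  qed
  finally have LHS: "f (act h (act k a)) = sw (\<lambda>x y. sw (\<lambda>u v. f (gen x * gen u * a * gen (S (y * v)))) k) h" .
  define T where "T = (\<lambda>k1 k2 x1 x2 y1 y2. f (gen x1 * gen (S x2 * (y1 * k1)) * a * gen (S (y2 * k2))))"
  have QT: "quadS (T k1 k2)" for k1 k2 unfolding T_def quadS_def by (simp add: L)
  have "sw (\<lambda>x y. f (act x 1 * act (y * k) a)) h
      = sw (\<lambda>x y. sw (\<lambda>w1 w2. sw (\<lambda>x1 x2. f (gen x1 * gen (S x2) * gen w1 * a * gen (S w2))) x) (y * k)) h"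
    apply (rule sw_cong)
    apply (simp add: act_one EE_def act_def push_Q adm_sw[OF A] mult.assoc)
    apply (rule sw_swap)?
    done
  also have "\<dots> = sw (\<lambda>x y. sw (\<lambda>w1 w2. sw (\<lambda>x1 x2. f (gen x1 * gen (S x2 * w1) * a * gen (S w2))) x) (y * k)) h"
  proof (rule sw_cong, rule sw_cong)
    fix x y w1 w2
    show "sw (\<lambda>x1 x2. f (gen x1 * gen (S x2) * gen w1 * a * gen (S w2))) x = sw (\<lambda>x1 x2. f (gen x1 * gen (S x2 * w1) * a * gen (S w2))) x"
      using R3[OF adm_ctxR[OF A, of "a * gen (S w2)"], where h=x and k=w1] by (simp add: mult.assoc)
  qed
  also have "\<dots> = sw (\<lambda>x y. sw (\<lambda>y1 y2. sw (\<lambda>k1 k2. sw (\<lambda>x1 x2. T k1 k2 x1 x2 y1 y2) x) k) y) h"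
    unfolding T_def by (rule sw_cong, rule sw_mult_arg[OF tgt_field]) (simp add: L)
  also have "\<dots> = sw (\<lambda>x y. sw (\<lambda>k1 k2. sw (\<lambda>y1 y2. sw (\<lambda>x1 x2. T k1 k2 x1 x2 y1 y2) x) y) k) h"
    by (rule sw_cong, rule sw_swap)
  also have "\<dots> = sw (\<lambda>x y. sw (\<lambda>k1 k2. sw (\<lambda>x1 x2. sw (\<lambda>y1 y2. T k1 k2 x1 x2 y1 y2) y) x) k) h"
    by (rule sw_cong, rule sw_cong, rule sw_swap)
  also have "\<dots> = sw (\<lambda>k1 k2. sw (\<lambda>x y. sw (\<lambda>x1 x2. sw (\<lambda>y1 y2. T k1 k2 x1 x2 y1 y2) y) x) h) k"
    by (rule sw_swap)
  also have "\<dots> = sw (\<lambda>k1 k2. RN (T k1 k2) h) k"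
    by (rule sw_cong, rule N_P1[OF QT])
  also have "\<dots> = sw (\<lambda>k1 k2. sw (\<lambda>z y2. sw (\<lambda>x1 v. sw (\<lambda>x2 y1. T k1 k2 x1 x2 y1 y2) v) z) h) k"
    by (rule sw_cong, rule N_5[OF QT, symmetric])
  also have "\<dots> = sw (\<lambda>k1 k2. sw (\<lambda>z y2. sw (\<lambda>p q. f (gen (z * p) * gen (S q * k1) * a * gen (S (y2 * k2)))) 1) h) k"
  proof (rule sw_cong, rule sw_cong)
    fix k1 k2 z y2
    show "sw (\<lambda>x1 v. sw (\<lambda>x2 y1. T k1 k2 x1 x2 y1 y2) v) z = sw (\<lambda>p q. f (gen (z * p) * gen (S q * k1) * a * gen (S (y2 * k2)))) 1"
    proof -
      have W: "sw (\<lambda>x y. sw (\<lambda>a' b'. (\<lambda>X Y. f (gen X * gen (Y * k1) * a * gen (S (y2 * k2)))) x (S a' * b')) y) z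
          = sw (\<lambda>p q. (\<lambda>X Y. f (gen X * gen (Y * k1) * a * gen (S (y2 * k2)))) (z * p) (S q)) 1"
        by (rule WH3[OF tgt_field]) (simp add: L)
      show ?thesis using W unfolding T_def by (simp add: mult.assoc)
    qed
  qed
  also have "\<dots> = sw (\<lambda>k1 k2. sw (\<lambda>z y2. f (gen z * gen k1 * a * gen (S (y2 * k2)))) h) k"
  proof (rule sw_cong, rule sw_cong)
    fix k1 k2 z y2
    show "sw (\<lambda>p q. f (gen (z * p) * gen (S q * k1) * a * gen (S (y2 * k2)))) 1 = f (gen z * gen k1 * a * gen (S (y2 * k2)))"
      using QZ[OF adm_ctxR[OF A, of "a * gen (S (y2 * k2))"], of z k1] by (simp add: mult.assoc)
  qed
  also have "\<dots> = sw (\<lambda>x y. sw (\<lambda>u v. f (gen x * gen u * a * gen (S (y * v)))) k) h"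
    by (rule sw_swap)
  finally show ?thesis using LHS by simp
qed

end

context whopf begin
interpretation V: vector_space sc by (rule vsH)

definition Gp :: "('h, 'k) free_alg \<Rightarrow> bool" where
  "Gp a \<longleftrightarrow> (\<forall>f x k. adm f \<longrightarrow> f (gen x * act k a) = sw (\<lambda>p q. f (gen (x * p) * a * gen (S q))) k)"

lemma GpD: "Gp a \<Longrightarrow> adm f \<Longrightarrow> f (gen x * act k a) = sw (\<lambda>p q. f (gen (x * p) * a * gen (S q))) k"
  unfolding Gp_def by blast

lemma KEY: assumes Gb: "Gp b" and A: "adm f"
  shows "sw (\<lambda>c1 v. sw (\<lambda>c2 c3. f (P * FF (w * c1) * gen (S c2) * act c3 b)) v) k
       = sw (\<lambda>c1 c2. f (P * FF (w * c1) * b * gen (S c2))) k"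
proof -
  note L = LQ gen_pos_rules[OF A] adm_sw[OF A] EE_def FF_def act_def
  define T where "T = (\<lambda>e1 e2 c2 c3. sw (\<lambda>w1 w2. f (P * gen (S (w1 * e1)) * gen (w2 * e2 * S c2) * act c3 b)) w)"
  have QT: "quadS T" unfolding T_def quadS_def by (simp add: L)
  have "sw (\<lambda>c1 v. sw (\<lambda>c2 c3. f (P * FF (w * c1) * gen (S c2) * act c3 b)) v) k
      = sw (\<lambda>c1 v. sw (\<lambda>c2 c3. sw (\<lambda>Y1 Y2. f (P * gen (S Y1) * gen (Y2 * S c2) * act c3 b)) (w * c1)) v) k"
  proof (rule sw_cong, rule sw_cong)
    fix c1 v c2 c3
    have "f (P * FF (w * c1) * gen (S c2) * act c3 b) = sw (\<lambda>Y1 Y2. f (P * (gen (S Y1) * gen Y2 * gen (S c2)) * act c3 b)) (w * c1)"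
      unfolding FF_def[of "w * c1"] by (simp add: push_Q adm_sw[OF A] mult.assoc)
    also have "\<dots> = sw (\<lambda>Y1 Y2. f (P * (gen (S Y1) * gen (Y2 * S c2)) * act c3 b)) (w * c1)"
      by (rule R4[OF adm_ctx[OF A]])
    finally show "f (P * FF (w * c1) * gen (S c2) * act c3 b) = sw (\<lambda>Y1 Y2. f (P * gen (S Y1) * gen (Y2 * S c2) * act c3 b)) (w * c1)"
      by (simp add: mult.assoc)
  qed
  also have "\<dots> = sw (\<lambda>c1 v. sw (\<lambda>c2 c3. sw (\<lambda>w1 w2. sw (\<lambda>e1 e2. f (P * gen (S (w1 * e1)) * gen (w2 * e2 * S c2) * act c3 b)) c1) w) v) k"
    by (intro sw_cong sw_mult_arg[OF tgt_field]) (simp add: L)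
  also have "\<dots> = sw (\<lambda>c1 v. sw (\<lambda>c2 c3. sw (\<lambda>e1 e2. T e1 e2 c2 c3) c1) v) k"
    unfolding T_def by (rule sw_cong, rule sw_cong, rule sw_swap)
  also have "\<dots> = sw (\<lambda>c1 v. sw (\<lambda>e1 e2. sw (\<lambda>c2 c3. T e1 e2 c2 c3) v) c1) k"
    by (rule sw_cong, rule sw_swap)
  also have "\<dots> = RN T k" by (rule N_P1[OF QT])
  also have "\<dots> = sw (\<lambda>c' c3. sw (\<lambda>e1 u. sw (\<lambda>e2 c2. T e1 e2 c2 c3) u) c') k" by (rule N_PL[OF QT, symmetric])
  also have "\<dots> = sw (\<lambda>c' c3. sw (\<lambda>w1 w2. f (P * gen (S (w1 * c')) * gen w2 * act c3 b)) w) k"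
  proof (rule sw_cong)
    fix c' c3
    define \<beta> where "\<beta> = (\<lambda>X Y. sw (\<lambda>w1 w2. f (P * gen (S (w1 * X)) * gen (w2 * Y) * act c3 b)) w)"
    have b\<beta>: "bilS (*) \<beta>" unfolding \<beta>_def by (simp add: L)
    have "sw (\<lambda>e1 u. sw (\<lambda>e2 c2. T e1 e2 c2 c3) u) c' = sw (\<lambda>e1 u. \<beta> e1 (et u)) c'"
    proof (rule sw_cong)
      fix e1 u
      have "\<beta> e1 (et u) = sw (\<lambda>w1 w2. sw (\<lambda>e2 c2. f (P * gen (S (w1 * e1)) * gen (w2 * (e2 * S c2)) * act c3 b)) u) w"
        unfolding \<beta>_def S1'[symmetric] by (rule sw_cong) (simp only: sw_multL[symmetric] adm_gen_sw[OF A])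
      also have "\<dots> = sw (\<lambda>e2 c2. sw (\<lambda>w1 w2. f (P * gen (S (w1 * e1)) * gen (w2 * (e2 * S c2)) * act c3 b)) w) u"
        by (rule sw_swap)
      finally show "sw (\<lambda>e2 c2. T e1 e2 c2 c3) u = \<beta> e1 (et u)"
        unfolding T_def by (simp add: mult.assoc)
    qed
    also have "\<dots> = sw (\<lambda>p q. \<beta> (p * c') q) 1" by (rule F3a[OF tgt_field b\<beta>])
    also have "\<dots> = sw (\<lambda>w1 w2. sw (\<lambda>p q. (\<lambda>U V. f (P * gen (S (U * c')) * gen V * act c3 b)) (w1 * p) (w2 * q)) 1) w"
      unfolding \<beta>_def by (subst sw_swap) (simp add: mult.assoc)
    also have "\<dots> = sw (\<lambda>U V. f (P * gen (S (U * c')) * gen V * act c3 b)) w"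
      by (rule F0b[OF tgt_field]) (simp add: L)
    finally show "sw (\<lambda>e1 u. sw (\<lambda>e2 c2. T e1 e2 c2 c3) u) c' = sw (\<lambda>w1 w2. f (P * gen (S (w1 * c')) * gen w2 * act c3 b)) w" .
  qed
  also have "\<dots> = sw (\<lambda>c' c3. sw (\<lambda>w1 w2. sw (\<lambda>r s. f (P * gen (S (w1 * c')) * gen (w2 * r) * b * gen (S s))) c3) w) k"
  proof (rule sw_cong, rule sw_cong)
    fix c' c3 w1 w2
    show "f (P * gen (S (w1 * c')) * gen w2 * act c3 b) = sw (\<lambda>r s. f (P * gen (S (w1 * c')) * gen (w2 * r) * b * gen (S s))) c3"
      using GpD[OF Gb adm_ctxL[OF A, of "P * gen (S (w1 * c'))"], of w2 c3] by (simp add: mult.assoc)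
  qed
  also have "\<dots> = sw (\<lambda>c' c3. sw (\<lambda>r s. sw (\<lambda>w1 w2. f (P * gen (S (w1 * c')) * gen (w2 * r) * b * gen (S s))) w) c3) k"
    by (rule sw_cong, rule sw_swap)
  also have "\<dots> = sw (\<lambda>y s. sw (\<lambda>c' r. sw (\<lambda>w1 w2. f (P * gen (S (w1 * c')) * gen (w2 * r) * b * gen (S s))) w) y) k"
    by (rule coass[OF tgt_field, symmetric]) (simp add: L)
  also have "\<dots> = sw (\<lambda>y s. f (P * FF (w * y) * b * gen (S s))) k"
  proof (rule sw_cong)
    fix y s
    have bb: "bilS (*) (\<lambda>U V. f (P * gen (S U) * gen V * b * gen (S s)))" by (simp add: L)
    show "sw (\<lambda>c' r. sw (\<lambda>w1 w2. f (P * gen (S (w1 * c')) * gen (w2 * r) * b * gen (S s))) w) y = f (P * FF (w * y) * b * gen (S s))"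
      unfolding FF_def[of "w * y"]
      by (simp add: push_Q adm_sw[OF A] mult.assoc sw_mult_arg[OF tgt_field bb, simplified mult.assoc] sw_swap[of _ y w])
  qed
  finally show ?thesis .
qed

end

context whopf begin
interpretation V: vector_space sc by (rule vsH)

lemma G_unit: "Gp 1"
  unfolding Gp_def
proof (intro allI impI)
  fix f x k assume A: "adm f"
  show "f (gen x * act k 1) = sw (\<lambda>p q. f (gen (x * p) * 1 * gen (S q))) k"
    using R1[OF A, of x k] by (simp add: act_one EE_def push_Q adm_sw[OF A] mult.assoc)
qed

lemma G_add: "Gp p \<Longrightarrow> Gp q \<Longrightarrow> Gp (p + q)"
  unfolding Gp_def by (auto simp: act_add distrib_left distrib_right adm_add sw_addf)

lemma G_sg: assumes G: "Gp p" shows "Gp (sg c * p)"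
  unfolding Gp_def
proof (intro allI impI)
  fix f x k assume A: "adm f"
  have e1: "gen x * act k (sg c * p) = sg c * (gen x * act k p)"
    using sg_comm_mid[of "gen x" c "act k p" 1] by (simp add: act_sg)
  have e2: "gen (x * a) * (sg c * p) * gen (S b) = sg c * (gen (x * a) * p * gen (S b))" for a b
    by (rule sg_comm_mid)
  show "f (gen x * act k (sg c * p)) = sw (\<lambda>a b. f (gen (x * a) * (sg c * p) * gen (S b))) k"
    by (simp only: e1 e2 adm_sg[OF A] GpD[OF G A] sw_cmult)
qed

lemma G_cong: assumes G: "Gp q" and E: "par_eq sc \<Delta> S p q" shows "Gp p"
  unfolding Gp_def
proof (intro allI impI)
  fix f x k assume A: "adm f"
  have "f (gen x * act k p) = sw (\<lambda>a b. f (gen x * (gen a * p * gen (S b)))) k"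
    by (simp add: act_def push_Q adm_sw[OF A])
  also have "\<dots> = sw (\<lambda>a b. f (gen x * (gen a * q * gen (S b)))) k"
    by (rule sw_cong) (use par_eqD[OF E A, of "gen x * gen a" "gen (S b)" for a b] in \<open>simp add: mult.assoc\<close>)
  also have "\<dots> = f (gen x * act k q)" by (simp add: act_def push_Q adm_sw[OF A])
  also have "\<dots> = sw (\<lambda>a b. f (gen (x * a) * q * gen (S b))) k" by (rule GpD[OF G A])
  also have "\<dots> = sw (\<lambda>a b. f (gen (x * a) * p * gen (S b))) k"
    by (rule sw_cong) (simp add: par_eqD[OF E A])
  finally show "f (gen x * act k p) = sw (\<lambda>a b. f (gen (x * a) * p * gen (S b))) k" .
qed

lemma G_E: "Gp (EE m)"
  unfolding Gp_def
proof (intro allI impI)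
  fix f x k assume A: "adm f"
  note L = LQ gen_pos_rules[OF A] adm_sw[OF A] EE_def FF_def
  have "f (gen x * act k (EE m)) = sw (\<lambda>k1 k2. f (gen x * (EE (k1 * m) * EE k2))) k"
    using CF[OF adm_ctxL[OF A, of "gen x"], of k m] by simp
  also have "\<dots> = sw (\<lambda>k1 k2. sw (\<lambda>u v. f (gen x * gen u * gen (S v) * EE k2)) (k1 * m)) k"
    by (rule sw_cong) (simp add: EE_def[of "k1 * m" for k1] push_Q adm_sw[OF A] mult.assoc)
  also have "\<dots> = sw (\<lambda>k1 k2. sw (\<lambda>u v. f (gen (x * u) * gen (S v) * EE k2)) (k1 * m)) k"
    by (rule sw_cong, rule R1[OF adm_ctxR[OF A]])
  also have "\<dots> = sw (\<lambda>k1 k2. sw (\<lambda>p q. sw (\<lambda>m1 m2. f (gen (x * (p * m1)) * gen (S (q * m2)) * EE k2)) m) k1) k"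
    by (rule sw_cong, rule sw_mult_arg[OF tgt_field]) (simp add: L)
  finally have LHS: "f (gen x * act k (EE m)) = sw (\<lambda>k1 k2. sw (\<lambda>p q. sw (\<lambda>m1 m2. f (gen (x * (p * m1)) * gen (S (q * m2)) * EE k2)) m) k1) k" .
  have "sw (\<lambda>p q. f (gen (x * p) * EE m * gen (S q))) k
      = sw (\<lambda>p q. sw (\<lambda>m1 m2. f (gen (x * p) * gen m1 * gen (S m2) * gen (S q))) m) k"
    by (rule sw_cong) (simp add: EE_def[of m] push_Q adm_sw[OF A] mult.assoc)
  also have "\<dots> = sw (\<lambda>p q. sw (\<lambda>m1 m2. f (gen (x * p * m1) * gen (S m2) * gen (S q))) m) k"
    by (rule sw_cong, rule R1[OF adm_ctxR[OF A]])
  also have "\<dots> = sw (\<lambda>p q. sw (\<lambda>m1 m2. sw (\<lambda>q1 q2. f (gen (x * p * m1) * gen (S (q1 * m2)) * EE q2)) q) m) k"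
  proof (rule sw_cong, rule sw_cong)
    fix p q m1 m2
    show "f (gen (x * p * m1) * gen (S m2) * gen (S q)) = sw (\<lambda>q1 q2. f (gen (x * p * m1) * gen (S (q1 * m2)) * EE q2)) q"
      using QM[OF adm_ctxL[OF A, of "gen (x * p * m1)"], of m2 q] by (simp add: mult.assoc)
  qed
  also have "\<dots> = sw (\<lambda>p q. sw (\<lambda>q1 q2. sw (\<lambda>m1 m2. f (gen (x * p * m1) * gen (S (q1 * m2)) * EE q2)) m) q) k"
    by (rule sw_cong, rule sw_swap)
  also have "\<dots> = sw (\<lambda>k1 k2. sw (\<lambda>p q1. sw (\<lambda>m1 m2. f (gen (x * p * m1) * gen (S (q1 * m2)) * EE k2)) m) k1) k"
    by (rule coass[OF tgt_field, symmetric]) (simp add: L)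
  finally show "f (gen x * act k (EE m)) = sw (\<lambda>p q. f (gen (x * p) * EE m * gen (S q))) k"
    using LHS by (simp add: mult.assoc)
qed

end

context whopf begin
interpretation V: vector_space sc by (rule vsH)

lemma PL_split: assumes Pa: "PLp a" and A: "adm f"
  shows "f (gen (x * p) * a * Z) = sw (\<lambda>x1 x2. sw (\<lambda>p1 p2. f (gen (x1 * p1) * a * FF (x2 * p2) * Z)) p) x"
proof -
  note L = LQ gen_pos_rules[OF A] adm_sw[OF A] EE_def FF_def
  have "f (gen (x * p) * a * Z) = sw (\<lambda>X Y. f (gen X * a * FF Y * Z)) (x * p)"
    using PLpD[OF Pa adm_ctxR[OF A, of Z], of "x * p"] by simp
  also have "\<dots> = sw (\<lambda>x1 x2. sw (\<lambda>p1 p2. f (gen (x1 * p1) * a * FF (x2 * p2) * Z)) p) x"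
    by (rule sw_mult_arg[OF tgt_field]) (simp add: L)
  finally show ?thesis .
qed

lemma G_mult: assumes Ga: "Gp a" and Gb: "Gp b" and Pa: "PLp a" and Pb: "PLp b" shows "Gp (a * b)"
  unfolding Gp_def
proof (intro allI impI)
  fix f x k assume A: "adm f"
  note L = LQ gen_pos_rules[OF A] adm_sw[OF A] EE_def FF_def act_def
  define T where "T = (\<lambda>x1 x2 p1 p2 q k2. f (gen (x1 * p1) * a * FF (x2 * p2) * gen (S q) * act k2 b))"
  have QT: "quadS (T x1 x2)" for x1 x2 unfolding T_def quadS_def by (simp add: L)
  have "f (gen x * act k (a * b)) = sw (\<lambda>k1 k2. f (gen x * (act k1 a * act k2 b))) k"
    using P1[OF Pa adm_ctxL[OF A, of "gen x"], of k b] by simp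
  also have "\<dots> = sw (\<lambda>k1 k2. sw (\<lambda>p q. f (gen (x * p) * a * gen (S q) * act k2 b)) k1) k"
  proof (rule sw_cong)
    fix k1 k2
    show "f (gen x * (act k1 a * act k2 b)) = sw (\<lambda>p q. f (gen (x * p) * a * gen (S q) * act k2 b)) k1"
      using GpD[OF Ga adm_ctxR[OF A, of "act k2 b"], of x k1] by (simp add: mult.assoc)
  qed
  also have "\<dots> = sw (\<lambda>p v. sw (\<lambda>q k2. f (gen (x * p) * a * gen (S q) * act k2 b)) v) k"
    by (rule coass[OF tgt_field]) (simp add: L)
  also have "\<dots> = sw (\<lambda>p v. sw (\<lambda>q k2. sw (\<lambda>x1 x2. sw (\<lambda>p1 p2. T x1 x2 p1 p2 q k2) p) x) v) k"
  proof (rule sw_cong, rule sw_cong)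
    fix p v q k2
    show "f (gen (x * p) * a * gen (S q) * act k2 b) = sw (\<lambda>x1 x2. sw (\<lambda>p1 p2. T x1 x2 p1 p2 q k2) p) x"
      unfolding T_def using PL_split[OF Pa A, of x p "gen (S q) * act k2 b"] by (simp add: mult.assoc)
  qed
  also have "\<dots> = sw (\<lambda>p v. sw (\<lambda>x1 x2. sw (\<lambda>q k2. sw (\<lambda>p1 p2. T x1 x2 p1 p2 q k2) p) v) x) k"
    by (rule sw_cong, rule sw_swap)
  also have "\<dots> = sw (\<lambda>x1 x2. sw (\<lambda>p v. sw (\<lambda>q k2. sw (\<lambda>p1 p2. T x1 x2 p1 p2 q k2) p) v) k) x"
    by (rule sw_swap)
  also have "\<dots> = sw (\<lambda>x1 x2. sw (\<lambda>p v. sw (\<lambda>p1 p2. sw (\<lambda>q k2. T x1 x2 p1 p2 q k2) v) p) k) x"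
    by (rule sw_cong, rule sw_cong, rule sw_swap)
  also have "\<dots> = sw (\<lambda>x1 x2. RN (T x1 x2) k) x"
    by (rule sw_cong, rule N_P1[OF QT])
  also have "\<dots> = sw (\<lambda>x1 x2. sw (\<lambda>p1 w'. sw (\<lambda>c1 c2. f (gen (x1 * p1) * a * FF (x2 * c1) * b * gen (S c2))) w') k) x"
    unfolding RN_def T_def
  proof (rule sw_cong, rule sw_cong)
    fix x1 x2 p1 w'
    show "sw (\<lambda>x2a v. sw (\<lambda>x3 x4. f (gen (x1 * p1) * a * FF (x2 * x2a) * gen (S x3) * act x4 b)) v) w'
        = sw (\<lambda>c1 c2. f (gen (x1 * p1) * a * FF (x2 * c1) * b * gen (S c2))) w'"
      by (rule KEY[OF Gb A])
  qed
  finally have LHS: "f (gen x * act k (a * b)) = sw (\<lambda>x1 x2. sw (\<lambda>p1 w'. sw (\<lambda>c1 c2. f (gen (x1 * p1) * a * FF (x2 * c1) * b * gen (S c2))) w') k) x" .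
  have "sw (\<lambda>k1 k2. f (gen (x * k1) * (a * b) * gen (S k2))) k
      = sw (\<lambda>k1 k2. sw (\<lambda>x1 x2. sw (\<lambda>p1 p2. f (gen (x1 * p1) * a * FF (x2 * p2) * (b * gen (S k2)))) k1) x) k"
  proof (rule sw_cong)
    fix k1 k2
    show "f (gen (x * k1) * (a * b) * gen (S k2)) = sw (\<lambda>x1 x2. sw (\<lambda>p1 p2. f (gen (x1 * p1) * a * FF (x2 * p2) * (b * gen (S k2)))) k1) x"
      using PL_split[OF Pa A, of x k1 "b * gen (S k2)"] by (simp add: mult.assoc)
  qed
  also have "\<dots> = sw (\<lambda>x1 x2. sw (\<lambda>k1 k2. sw (\<lambda>p1 p2. f (gen (x1 * p1) * a * FF (x2 * p2) * (b * gen (S k2)))) k1) k) x"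
    by (rule sw_swap)
  also have "\<dots> = sw (\<lambda>x1 x2. sw (\<lambda>p1 w'. sw (\<lambda>c1 c2. f (gen (x1 * p1) * a * FF (x2 * c1) * (b * gen (S c2)))) w') k) x"
    by (rule sw_cong, rule coass[OF tgt_field]) (simp add: L)
  finally show "f (gen x * act k (a * b)) = sw (\<lambda>p q. f (gen (x * p) * (a * b) * gen (S q))) k"
    using LHS by (simp add: mult.assoc)
qed

lemma G_Apar: "a \<in> Apar sc \<Delta> S \<Longrightarrow> Gp a"
proof (induction rule: Apar.induct)
  case (E h) show ?case by (simp add: Eh_EE G_E)
next
  case unit show ?case by (simp add: funit_eq G_unit)
next
  case (add p q) thus ?case by (intro G_add add.IH)
next
  case (smult p c) thus ?case by (simp add: fsc_eq G_sg smult.IH)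
next
  case (mult p q) thus ?case by (simp add: fmul_eq G_mult PL_Apar mult.IH)
next
  case (cong q p) thus ?case using G_cong by blast
qed

end

context whopf begin
interpretation V: vector_space sc by (rule vsH)

lemma adm_gen_sw_end: assumes A: "adm f"
  shows "f (P * gen (sw B w)) = sw (\<lambda>a c. f (P * gen (B a c))) w"
  using adm_gen_sw[OF A, of P B w 1] by simp

lemma P4: assumes Ap: "a \<in> Apar sc \<Delta> S" and A: "adm f"
  shows "f (act h (act k a)) = sw (\<lambda>x y. f (act (x * k) a * act y 1)) h"
proof -
  note L = LQ gen_pos_rules[OF A] adm_sw[OF A] EE_def FF_def act_def
  have Ga: "Gp a" by (rule G_Apar[OF Ap])
  have "f (act h (act k a)) = sw (\<lambda>x y. f (gen x * act k a * gen (S y))) h" by (rule act_adm[OF A])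
  also have "\<dots> = sw (\<lambda>x y. sw (\<lambda>p q. f (gen (x * p) * a * gen (S q) * gen (S y))) k) h"
  proof (rule sw_cong)
    fix x y show "f (gen x * act k a * gen (S y)) = sw (\<lambda>p q. f (gen (x * p) * a * gen (S q) * gen (S y))) k"
      using GpD[OF Ga adm_ctxR[OF A, of "gen (S y)"], of x k] by (simp add: mult.assoc)
  qed
  also have "\<dots> = sw (\<lambda>k1 k2. sw (\<lambda>x y. f (gen (x * k1) * a * gen (S k2) * gen (S y))) h) k"
    by (rule sw_swap)
  finally have LHS: "f (act h (act k a)) = sw (\<lambda>k1 k2. sw (\<lambda>x y. f (gen (x * k1) * a * gen (S k2) * gen (S y))) h) k" .
  define T where "T = (\<lambda>k1 k2 x1 x2 y1 y2. f (gen (x1 * k1) * a * gen (S (x2 * k2)) * gen y1 * gen (S y2)))"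
  define T' where "T' = (\<lambda>k1 k2 x1 x2 y1 y2. f (gen (x1 * k1) * a * gen (S k2) * gen (S x2) * gen (y1 * S y2)))"
  have QT: "quadS (T k1 k2)" for k1 k2 unfolding T_def quadS_def by (simp add: L)
  have QT': "quadS (T' k1 k2)" for k1 k2 unfolding T'_def quadS_def by (simp add: L)
  have "sw (\<lambda>x y. f (act (x * k) a * act y 1)) h
      = sw (\<lambda>x y. sw (\<lambda>U V. sw (\<lambda>y1 y2. f (gen U * a * gen (S V) * gen y1 * gen (S y2))) y) (x * k)) h"
    apply (rule sw_cong)
    apply (simp add: act_one EE_def act_def push_Q adm_sw[OF A] mult.assoc)
    apply (rule sw_swap)
    done
  also have "\<dots> = sw (\<lambda>x y. sw (\<lambda>x1 x2. sw (\<lambda>k1 k2. sw (\<lambda>y1 y2. T k1 k2 x1 x2 y1 y2) y) k) x) h"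
    unfolding T_def by (rule sw_cong, rule sw_mult_arg[OF tgt_field]) (simp add: L)
  also have "\<dots> = sw (\<lambda>x y. sw (\<lambda>k1 k2. sw (\<lambda>x1 x2. sw (\<lambda>y1 y2. T k1 k2 x1 x2 y1 y2) y) x) k) h"
    by (rule sw_cong, rule sw_swap)
  also have "\<dots> = sw (\<lambda>k1 k2. sw (\<lambda>x y. sw (\<lambda>x1 x2. sw (\<lambda>y1 y2. T k1 k2 x1 x2 y1 y2) y) x) h) k"
    by (rule sw_swap)
  also have "\<dots> = sw (\<lambda>k1 k2. RN (T k1 k2) h) k" by (rule sw_cong, rule N_P1[OF QT])
  also have "\<dots> = sw (\<lambda>k1 k2. sw (\<lambda>z y2. sw (\<lambda>x1 v. sw (\<lambda>x2 y1. T k1 k2 x1 x2 y1 y2) v) z) h) k"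
    by (rule sw_cong, rule N_5[OF QT, symmetric])
  also have "\<dots> = sw (\<lambda>k1 k2. sw (\<lambda>z y2. sw (\<lambda>x1 v. sw (\<lambda>x2 y1. T' k1 k2 x1 x2 y1 y2) v) z) h) k"
  proof (rule sw_cong, rule sw_cong, rule sw_cong)
    fix k1 k2 z y2 x1 v
    have "sw (\<lambda>x2 y1. T k1 k2 x1 x2 y1 y2) v = sw (\<lambda>x2 y1. f ((gen (x1 * k1) * a) * (gen (S k2 * S x2) * gen y1) * gen (S y2))) v"
      unfolding T_def by (simp add: antimult mult.assoc)
    also have "\<dots> = sw (\<lambda>x2 y1. f ((gen (x1 * k1) * a) * (gen (S k2) * gen (S x2) * gen y1) * gen (S y2))) v"
      by (rule R2[OF adm_ctx[OF A], symmetric])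
    also have "\<dots> = sw (\<lambda>x2 y1. f ((gen (x1 * k1) * a * gen (S k2)) * (gen (S x2) * gen y1 * gen (S y2)) * 1)) v"
      by (simp add: mult.assoc)
    also have "\<dots> = sw (\<lambda>x2 y1. f ((gen (x1 * k1) * a * gen (S k2)) * (gen (S x2) * gen (y1 * S y2)) * 1)) v"
      by (rule R4[OF adm_ctx[OF A]])
    also have "\<dots> = sw (\<lambda>x2 y1. T' k1 k2 x1 x2 y1 y2) v" unfolding T'_def by (simp add: mult.assoc)
    finally show "sw (\<lambda>x2 y1. T k1 k2 x1 x2 y1 y2) v = sw (\<lambda>x2 y1. T' k1 k2 x1 x2 y1 y2) v" .
  qed
  also have "\<dots> = sw (\<lambda>k1 k2. RN (T' k1 k2) h) k" by (rule sw_cong, rule N_5[OF QT'])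
  also have "\<dots> = sw (\<lambda>k1 k2. sw (\<lambda>x1 w. f (gen (x1 * k1) * a * gen (S k2) * gen (S w))) h) k"
    unfolding RN_def
  proof (rule sw_cong, rule sw_cong)
    fix k1 k2 x1 w
    define \<beta> where "\<beta> = (\<lambda>X Y. f (gen (x1 * k1) * a * gen (S k2) * gen (S X) * gen Y))"
    have b\<beta>: "bilS (*) \<beta>" unfolding \<beta>_def by (simp add: L)
    have "sw (\<lambda>x2 v. sw (\<lambda>y1 y2. T' k1 k2 x1 x2 y1 y2) v) w = sw (\<lambda>x2 u. \<beta> x2 (et u)) w"
    proof (rule sw_cong)
      fix x2 u
      show "sw (\<lambda>y1 y2. T' k1 k2 x1 x2 y1 y2) u = \<beta> x2 (et u)"
        unfolding T'_def \<beta>_def S1'[symmetric] by (simp only: adm_gen_sw_end[OF A])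
    qed
    also have "\<dots> = sw (\<lambda>p q. \<beta> (p * w) q) 1" by (rule F3a[OF tgt_field b\<beta>])
    also have "\<dots> = sw (\<lambda>p q. f ((gen (x1 * k1) * a * gen (S k2)) * (gen (S w * S p) * gen q) * 1)) 1"
      unfolding \<beta>_def by (rule sw_cong) (simp add: antimult mult.assoc)
    also have "\<dots> = sw (\<lambda>p q. f ((gen (x1 * k1) * a * gen (S k2)) * (gen (S w) * gen (S p) * gen q) * 1)) 1"
      by (rule R2[OF adm_ctx[OF A], symmetric])
    also have "\<dots> = sw (\<lambda>p q. f ((gen (x1 * k1) * a * gen (S k2) * gen (S w)) * (gen (S p) * gen q) * 1)) 1"
      by (simp add: mult.assoc)
    also have "\<dots> = f (gen (x1 * k1) * a * gen (S k2) * gen (S w))"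
      using Q2[OF adm_ctx[OF A, of "gen (x1 * k1) * a * gen (S k2) * gen (S w)" 1]]
      by (simp add: FF_def push_Q adm_sw[OF A])
    finally show "sw (\<lambda>x2 v. sw (\<lambda>y1 y2. T' k1 k2 x1 x2 y1 y2) v) w = f (gen (x1 * k1) * a * gen (S k2) * gen (S w))" .
  qed
  finally show ?thesis using LHS by simp
qed

end

context whopf begin
interpretation V: vector_space sc by (rule vsH)

lemma par_eq_I: "(\<And>f. adm f \<Longrightarrow> f p = f q) \<Longrightarrow> par_eq sc \<Delta> S p q"
  by (simp add: par_eq_iff)

lemma main: "sym_partial_module_algebra sc \<Delta> (Apar sc \<Delta> S) (par_eq sc \<Delta> S) fsc fmul funit (par_act \<Delta> S)"
  unfolding sym_partial_module_algebra_def act_eq fmul_eq funit_eq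
proof (intro conjI allI impI)
  fix h a assume "a \<in> Apar sc \<Delta> S"
  thus "act h a \<in> Apar sc \<Delta> S" by (rule act_Apar)
next
  fix h a a' assume "a \<in> Apar sc \<Delta> S" "a' \<in> Apar sc \<Delta> S" and E: "par_eq sc \<Delta> S a a'"
  show "par_eq sc \<Delta> S (act h a) (act h a')"
    by (rule par_eq_I) (simp add: act_adm par_eqD[OF E])
next
  fix h h' a assume "a \<in> Apar sc \<Delta> S"
  show "par_eq sc \<Delta> S (act (h + h') a) (act h a + act h' a)"
  proof (rule par_eq_I)
    fix f assume A: "adm f"
    have b: "bilS (*) (\<lambda>x y. f (gen x * a * gen (S y)))" by (simp add: LQ gen_pos_rules[OF A])
    show "f (act (h + h') a) = f (act h a + act h' a)"
      by (simp add: act_adm[OF A] adm_add[OF A] sw_add_arg[OF tgt_field b])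
  qed
next
  fix c h a assume "a \<in> Apar sc \<Delta> S"
  show "par_eq sc \<Delta> S (act (sc c h) a) (fsc c (act h a))"
  proof (rule par_eq_I)
    fix f assume A: "adm f"
    have b: "bilS (*) (\<lambda>x y. f (gen x * a * gen (S y)))" by (simp add: LQ gen_pos_rules[OF A])
    show "f (act (sc c h) a) = f (fsc c (act h a))"
      by (simp add: act_adm[OF A] fsc_eq adm_sg[OF A] sw_sc_arg[OF tgt_field b])
  qed
next
  fix h a b assume "a \<in> Apar sc \<Delta> S" "b \<in> Apar sc \<Delta> S"
  show "par_eq sc \<Delta> S (act h (a + b)) (act h a + act h b)"
    by (rule par_eq_I) (simp add: act_add)
next
  fix c h a assume "a \<in> Apar sc \<Delta> S"
  show "par_eq sc \<Delta> S (act h (fsc c a)) (fsc c (act h a))"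
    by (rule par_eq_I) (simp add: fsc_eq act_sg)
next
  fix h a b assume Aa: "a \<in> Apar sc \<Delta> S" and "b \<in> Apar sc \<Delta> S"
  show "par_eq sc \<Delta> S (act h (a * b)) (\<Sum>(x, y)\<leftarrow>\<Delta> h. act x a * act y b)"
    by (rule par_eq_I) (simp add: P1[OF PL_Apar[OF Aa]] adm_sum_list sw_def)
next
  fix a assume Aa: "a \<in> Apar sc \<Delta> S"
  show "par_eq sc \<Delta> S (act 1 a) a"
    by (rule par_eq_I) (simp add: P2[OF Aa])
next
  fix h k a assume Aa: "a \<in> Apar sc \<Delta> S"
  show "par_eq sc \<Delta> S (act h (act k a)) (\<Sum>(x, y)\<leftarrow>\<Delta> h. act x 1 * act (y * k) a)"
    by (rule par_eq_I) (simp add: P3[OF Aa] adm_sum_list sw_def)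
next
  fix h k a assume Aa: "a \<in> Apar sc \<Delta> S"
  show "par_eq sc \<Delta> S (act h (act k a)) (\<Sum>(x, y)\<leftarrow>\<Delta> h. act (x * k) a * act y 1)"
    by (rule par_eq_I) (simp add: P4[OF Aa] adm_sum_list sw_def)
qed

end

theorem proposition4p6:
  fixes sc :: "'k::field \<Rightarrow> 'h::{ring,monoid_mult} \<Rightarrow> 'h"
    and \<Delta> :: "'h \<Rightarrow> ('h \<times> 'h) list"
    and \<epsilon> :: "'h \<Rightarrow> 'k"
    and S :: "'h \<Rightarrow> 'h"
  assumes "weak_hopf_algebra sc \<Delta> \<epsilon> S"
  shows "sym_partial_module_algebra sc \<Delta> (Apar sc \<Delta> S) (par_eq sc \<Delta> S) fsc fmul funit (par_act \<Delta> S)"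
proof -
  interpret W: whopf sc \<Delta> \<epsilon> S by unfold_locales (rule assms)
  show ?thesis by (rule W.main)
qed


end
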